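(* Assume (A1) and (A2). For a connected multigraph $H$ let $Y_H$ be the number of components of $G^*(n,\mathbf d)$ isomorphic to $H$. Then: (i) if $H$ is a tree, $E Y_H=n\lambda_H+o(n)$; (ii) if $H_1,H_2$ are trees, $\mathrm{Cov}(Y_{H_1},Y_{H_2})=n\sigma_{H_1,H_2}+o(n)$; (iii) if $H$ is a connected unicyclic multigraph, $E Y_H\to\lambda_H$; moreover, for any distinct such multigraphs $H_1,\dots,H_k$ and integers $r_1,\dots,r_k\ge0$, $E\prod_{i=1}^k(Y_{H_i})_{r_i}\to\prod_{i=1}^k\lambda_{H_i}^{r_i}$; (iv) if $H$ is connected with $e(H)>v(H)$, then $E Y_H\to0$.
   Context: For each $n\ge1$ a degree sequence $\mathbf d=(d_1,\dots,d_n)$ of non-negative integers is given (depending on $n$), with even sum. $G^*(n,\mathbf d)$ is the configuration-model multigraph on $v_1,\dots,v_n$: $v_i$ receives $d_i$ half-edges and a uniformly random perfect matching of all half-edges is formed, each pair giving an edge (loops and multiple edges allowed; a loop contributes 2 to the degree). $n_k:=|\{i:d_i=k\}|$, $D_n$ with $P(D_n=k)=n_k/n$; limits as $n\to\infty$. (A1) there is a probability distribution $(p_k)_{k\ge0}$ with $n_k/n\to p_k$ for all $k$ and $\mu:=\sum_kkp_k\in(0,\infty)$. (A2) $E D_n\to\mu$. $(x)_r:=x(x-1)\cdots(x-r+1)$. For a multigraph $H$: $v(H)$, $e(H)$, $d_H(u)$, $n_k(H)$ (number of vertices of degree $k$), $\mathrm{aut}(H)$ (number of automorphisms). $\lambda_H:=\frac{\mu^{-e(H)}}{\mathrm{aut}(H)}\prod_{u\in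 V(H)}p_{d_H(u)}d_H(u)!$; $\sigma_{H_1,H_2}:=\delta_{H_1,H_2}\lambda_{H_1}+\lambda_{H_1}\lambda_{H_2}\big(\frac{2e(H_1)e(H_2)}\mu-\sum_{k\ge0}\frac{n_k(H_1)n_k(H_2)}{p_k}\big)$, $\delta_{H_1,H_2}=1$ iff $H_1\cong H_2$; conventions $0/0=0$, $0\cdot\infty=0$. *)

theory Defs
  imports "HOL-Probability.Probability" "HOL-Library.Landau_Symbols"
begin

text \<open>A loop is an edge whose two half-edges have the same owner (so it contributes 2 to
the degree).\<close>

record ('v, 'h) mgraph =
  verts :: "'v set"
  halfs :: "'h set"
  owner :: "'h \<Rightarrow> 'v"
  mate  :: "'h \<Rightarrow> 'h"

definition mg_wf :: "('v, 'h) mgraph \<Rightarrow> bool" where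
  "mg_wf H \<longleftrightarrow> finite (verts H) \<and> finite (halfs H) \<and> owner H ` halfs H \<subseteq> verts H \<and>
     (\<forall>h\<in>halfs H. mate H h \<in> halfs H \<and> mate H h \<noteq> h \<and> mate H (mate H h) = h)"

definition mg_v :: "('v, 'h) mgraph \<Rightarrow> nat" where
  "mg_v H = card (verts H)"

definition mg_e :: "('v, 'h) mgraph \<Rightarrow> nat" where
  "mg_e H = card (halfs H) div 2"

definition mg_deg :: "('v, 'h) mgraph \<Rightarrow> 'v \<Rightarrow> nat" where
  "mg_deg H u = card {h \<in> halfs H. owner H h = u}"

definition mg_nk :: "('v, 'h) mgraph \<Rightarrow> nat \<Rightarrow> nat" where
  "mg_nk H k = card {u \<in> verts H. mg_deg H u = k}"

definition mg_adj :: "('v, 'h) mgraph \<Rightarrow> ('v \<times> 'v) set" where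
  "mg_adj H = {(owner H h, owner H (mate H h)) | h. h \<in> halfs H}"

definition mg_connected :: "('v, 'h) mgraph \<Rightarrow> bool" where
  "mg_connected H \<longleftrightarrow> verts H \<noteq> {} \<and> (\<forall>u\<in>verts H. \<forall>w\<in>verts H. (u, w) \<in> (mg_adj H)\<^sup>*)"

definition mg_components :: "('v, 'h) mgraph \<Rightarrow> 'v set set" where
  "mg_components H = {{w \<in> verts H. (u, w) \<in> (mg_adj H)\<^sup>*} | u. u \<in> verts H}"

definition mg_restrict :: "('v, 'h) mgraph \<Rightarrow> 'v set \<Rightarrow> ('v, 'h) mgraph" where
  "mg_restrict H C = \<lparr>verts = C, halfs = {h \<in> halfs H. owner H h \<in> C},
                      owner = owner H, mate = mate H\<rparr>"

definition mg_iso :: "('v, 'h) mgraph \<Rightarrow> ('w, 'g) mgraph \<Rightarrow> bool" where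
  "mg_iso H1 H2 \<longleftrightarrow> (\<exists>\<phi> \<sigma>. bij_betw \<phi> (verts H1) (verts H2) \<and> bij_betw \<sigma> (halfs H1) (halfs H2) \<and>
     (\<forall>h\<in>halfs H1. owner H2 (\<sigma> h) = \<phi> (owner H1 h) \<and> mate H2 (\<sigma> h) = \<sigma> (mate H1 h)))"

text \<open>Automorphisms of a multigraph (acting on vertices and half-edges; thus e.g. a
loop can be flipped and parallel edges permuted).\<close>
definition mg_aut :: "('v, 'h) mgraph \<Rightarrow> nat" where
  "mg_aut H = card {(\<phi>, \<sigma>). \<phi> \<in> extensional (verts H) \<and> \<sigma> \<in> extensional (halfs H) \<and>
     bij_betw \<phi> (verts H) (verts H) \<and> bij_betw \<sigma> (halfs H) (halfs H) \<and>
     (\<forall>h\<in>halfs H. owner H (\<sigma> h) = \<phi> (owner H h) \<and> mate H (\<sigma> h) = \<sigma> (mate H h))}"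

definition mg_tree :: "('v, 'h) mgraph \<Rightarrow> bool" where
  "mg_tree H \<longleftrightarrow> mg_wf H \<and> mg_connected H \<and> mg_e H + 1 = mg_v H"

definition mg_unicyclic :: "('v, 'h) mgraph \<Rightarrow> bool" where
  "mg_unicyclic H \<longleftrightarrow> mg_wf H \<and> mg_connected H \<and> mg_e H = mg_v H"

text \<open>\<open>d n i\<close> is the degree \<open>d_i\<close> of vertex \<open>v_i\<close> (\<open>i < n\<close>) in the \<open>n\<close>-th degree sequence.\<close>

definition half_edges :: "(nat \<Rightarrow> nat \<Rightarrow> nat) \<Rightarrow> nat \<Rightarrow> (nat \<times> nat) set" where
  "half_edges d n = {(i, j). i < n \<and> j < d n i}"

definition matchings :: "(nat \<Rightarrow> nat \<Rightarrow> nat) \<Rightarrow> nat \<Rightarrow> ((nat \<times> nat) \<Rightarrow> (nat \<times> nat)) set" where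
  "matchings d n = {m. (\<forall>x\<in>half_edges d n. m x \<in> half_edges d n \<and> m x \<noteq> x \<and> m (m x) = x) \<and>
                       (\<forall>x. x \<notin> half_edges d n \<longrightarrow> m x = x)}"

definition Gstar :: "(nat \<Rightarrow> nat \<Rightarrow> nat) \<Rightarrow> nat \<Rightarrow> ((nat \<times> nat) \<Rightarrow> (nat \<times> nat)) \<Rightarrow> (nat, nat \<times> nat) mgraph" where
  "Gstar d n m = \<lparr>verts = {..<n}, halfs = half_edges d n, owner = fst, mate = m\<rparr>"

definition CM :: "(nat \<Rightarrow> nat \<Rightarrow> nat) \<Rightarrow> nat \<Rightarrow> ((nat \<times> nat) \<Rightarrow> (nat \<times> nat)) pmf" where
  "CM d n = pmf_of_set (matchings d n)"

definition Exp :: "(nat \<Rightarrow> nat \<Rightarrow> nat) \<Rightarrow> nat \<Rightarrow> (((nat \<times> nat) \<Rightarrow> (nat \<times> nat)) \<Rightarrow> real) \<Rightarrow> real" where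
  "Exp d n X = measure_pmf.expectation (CM d n) X"

definition Cov :: "(nat \<Rightarrow> nat \<Rightarrow> nat) \<Rightarrow> nat \<Rightarrow> (((nat \<times> nat) \<Rightarrow> (nat \<times> nat)) \<Rightarrow> real)
                    \<Rightarrow> (((nat \<times> nat) \<Rightarrow> (nat \<times> nat)) \<Rightarrow> real) \<Rightarrow> real" where
  "Cov d n X Y = Exp d n (\<lambda>m. X m * Y m) - Exp d n X * Exp d n Y"

definition Ycount :: "('v, 'h) mgraph \<Rightarrow> (nat \<Rightarrow> nat \<Rightarrow> nat) \<Rightarrow> nat \<Rightarrow> ((nat \<times> nat) \<Rightarrow> (nat \<times> nat)) \<Rightarrow> nat" where
  "Ycount H d n m = card {C \<in> mg_components (Gstar d n m). mg_iso (mg_restrict (Gstar d n m) C) H}"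

definition nk :: "(nat \<Rightarrow> nat \<Rightarrow> nat) \<Rightarrow> nat \<Rightarrow> nat \<Rightarrow> nat" where
  "nk d n k = card {i. i < n \<and> d n i = k}"

definition ffall :: "real \<Rightarrow> nat \<Rightarrow> real" where
  "ffall x r = (\<Prod>i<r. x - real i)"

definition lam :: "(nat \<Rightarrow> real) \<Rightarrow> real \<Rightarrow> ('v, 'h) mgraph \<Rightarrow> real" where
  "lam p \<mu> H = \<mu> powi (- int (mg_e H)) / real (mg_aut H) *
     (\<Prod>u\<in>verts H. p (mg_deg H u) * fact (mg_deg H u))"

text \<open>\<open>\<delta>\<close> is isomorphism; the sum over \<open>k\<close> only has nonzero terms for degrees of \<open>H1\<close>;
division by zero is 0 in HOL, which matches the conventions 0/0 = 0 and 0\<cdot>\<infinity> = 0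
(if \<open>p_k = 0\<close> while \<open>n_k(H1) > 0\<close> then \<open>\<lambda>_{H1} = 0\<close>).\<close>
definition sigma :: "(nat \<Rightarrow> real) \<Rightarrow> real \<Rightarrow> ('v, 'h) mgraph \<Rightarrow> ('w, 'g) mgraph \<Rightarrow> real" where
  "sigma p \<mu> H1 H2 = (if mg_iso H1 H2 then lam p \<mu> H1 else 0) +
     lam p \<mu> H1 * lam p \<mu> H2 * (2 * real (mg_e H1) * real (mg_e H2) / \<mu> -
       (\<Sum>k\<in>mg_deg H1 ` verts H1. real (mg_nk H1 k) * real (mg_nk H2 k) / p k))"

end

theory Submission
  imports Defs
begin

definition invs :: "'a set \<Rightarrow> ('a \<Rightarrow> 'a) set" where
  "invs A = {m. (\<forall>x\<in>A. m x \<in> A \<and> m x \<noteq> x \<and> m (m x) = x) \<and> (\<forall>x. x \<notin> A \<longrightarrow> m x = x)}"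

lemma matchings_invs: "matchings d n = invs (half_edges d n)"
  unfolding matchings_def invs_def by simp

lemma finite_invs:
  assumes "finite A" shows "finite (invs A)"
proof -
  have "inj_on (\<lambda>m. restrict m A) (invs A)"
  proof (rule inj_onI)
    fix m m' assume m: "m \<in> invs A" and m': "m' \<in> invs A" and eq: "restrict m A = restrict m' A"
    show "m = m'"
    proof
      fix x show "m x = m' x"
        using m m' fun_cong[OF eq, of x] by (cases "x \<in> A") (auto simp: invs_def)
    qed
  qed
  moreover have "(\<lambda>m. restrict m A) ` invs A \<subseteq> A \<rightarrow>\<^sub>E A"
    by (auto simp: invs_def)
  moreover have "finite (A \<rightarrow>\<^sub>E A)" using assms by (simp add: finite_PiE)
  ultimately show ?thesis using inj_on_finite by blast
qed

fun FF :: "nat \<Rightarrow> nat" where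
  "FF 0 = 1"
| "FF (Suc 0) = 0"
| "FF (Suc (Suc k)) = Suc k * FF k"

lemma card_invs_extend:
  assumes fin: "finite A" and SA: "S \<subseteq> A" and pi: "\<pi> \<in> invs S"
  shows "card {m \<in> invs A. \<forall>x\<in>S. m x = \<pi> x} = card (invs (A - S))"
proof (rule card_bij_eq[where f = "\<lambda>m x. if x \<in> S then x else m x"
                         and g = "\<lambda>m x. if x \<in> S then \<pi> x else m x"])
  show "inj_on (\<lambda>m x. if x \<in> S then x else m x) {m \<in> invs A. \<forall>x\<in>S. m x = \<pi> x}"
  proof (rule inj_onI)
    fix m m' assume m: "m \<in> {m \<in> invs A. \<forall>x\<in>S. m x = \<pi> x}"
      and m': "m' \<in> {m \<in> invs A. \<forall>x\<in>S. m x = \<pi> x}"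
      and eq: "(\<lambda>x. if x \<in> S then x else m x) = (\<lambda>x. if x \<in> S then x else m' x)"
    show "m = m'"
    proof
      fix x show "m x = m' x"
        using m m' fun_cong[OF eq, of x] by (cases "x \<in> S") auto
    qed
  qed
  show "(\<lambda>m x. if x \<in> S then x else m x) ` {m \<in> invs A. \<forall>x\<in>S. m x = \<pi> x} \<subseteq> invs (A - S)"
  proof safe
    fix m assume m: "m \<in> invs A" and mS: "\<forall>x\<in>S. m x = \<pi> x"
    have piS: "\<forall>x\<in>S. \<pi> x \<in> S" using pi by (auto simp: invs_def)
    show "(\<lambda>x. if x \<in> S then x else m x) \<in> invs (A - S)"
      unfolding invs_def
    proof (intro CollectI conjI ballI allI impI)
      fix x assume x: "x \<in> A - S"
      have mx: "m x \<in> A" "m x \<noteq> x" "m (m x) = x" using m x by (auto simp: invs_def)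
      have "m x \<notin> S"
      proof
        assume "m x \<in> S"
        then have "m (m x) = \<pi> (m x)" using mS by auto
        then have "x = \<pi> (m x)" using mx by simp
        then show False using piS \<open>m x \<in> S\<close> x by auto
      qed
      then show "(if (if x \<in> S then x else m x) \<in> S then (if x \<in> S then x else m x)
          else m (if x \<in> S then x else m x)) = x" using x mx by auto
      show "(if x \<in> S then x else m x) \<in> A - S" using x mx \<open>m x \<notin> S\<close> by auto
      show "(if x \<in> S then x else m x) \<noteq> x" using x mx by auto
    next
      fix x assume "x \<notin> A - S"
      then show "(if x \<in> S then x else m x) = x" using m by (auto simp: invs_def)
    qed
  qed
  show "inj_on (\<lambda>m x. if x \<in> S then \<pi> x else m x) (invs (A - S))"
  proof (rule inj_onI)
    fix m m' assume m: "m \<in> invs (A - S)" and m': "m' \<in> invs (A - S)"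
      and eq: "(\<lambda>x. if x \<in> S then \<pi> x else m x) = (\<lambda>x. if x \<in> S then \<pi> x else m' x)"
    show "m = m'"
    proof
      fix x show "m x = m' x"
        using m m' fun_cong[OF eq, of x] by (cases "x \<in> S") (auto simp: invs_def)
    qed
  qed
  show "(\<lambda>m x. if x \<in> S then \<pi> x else m x) ` invs (A - S) \<subseteq> {m \<in> invs A. \<forall>x\<in>S. m x = \<pi> x}"
  proof safe
    fix m assume m: "m \<in> invs (A - S)"
    have piS: "\<forall>x\<in>S. \<pi> x \<in> S \<and> \<pi> x \<noteq> x \<and> \<pi> (\<pi> x) = x" using pi by (auto simp: invs_def)
    have mA: "\<forall>x\<in>A - S. m x \<in> A - S \<and> m x \<noteq> x \<and> m (m x) = x" "\<forall>x. x \<notin> A - S \<longrightarrow> m x = x"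
      using m by (auto simp: invs_def)
    show "(\<lambda>x. if x \<in> S then \<pi> x else m x) \<in> invs A"
      unfolding invs_def
    proof (intro CollectI conjI ballI allI impI)
      fix x assume x: "x \<in> A"
      show "(if x \<in> S then \<pi> x else m x) \<in> A"
        using x piS mA(1) SA by (cases "x \<in> S") auto
      show "(if x \<in> S then \<pi> x else m x) \<noteq> x"
        using x piS mA(1) by (cases "x \<in> S") auto
      show "(if (if x \<in> S then \<pi> x else m x) \<in> S then \<pi> (if x \<in> S then \<pi> x else m x)
             else m (if x \<in> S then \<pi> x else m x)) = x"
      proof (cases "x \<in> S")
        case True then show ?thesis using piS by auto
      next
        case False
        then have "m x \<in> A - S" "m (m x) = x" using x mA(1) by auto
        then show ?thesis using False by auto
      qed
    next
      fix x assume "x \<notin> A"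
      then show "(if x \<in> S then \<pi> x else m x) = x" using mA(2) SA by auto
    qed
  qed simp
  show "finite {m \<in> invs A. \<forall>x\<in>S. m x = \<pi> x}" using finite_invs[OF fin] by simp
  show "finite (invs (A - S))" using fin by (simp add: finite_invs)
qed

lemma swap_in_invs: "x \<noteq> y \<Longrightarrow> (\<lambda>z. if z = x then y else if z = y then x else z) \<in> invs {x, y}"
  by (auto simp: invs_def)

lemma card_invs: "finite A \<Longrightarrow> card (invs A) = FF (card A)"
proof (induction "card A" arbitrary: A rule: less_induct)
  case less
  show ?case
  proof (cases "A = {}")
    case True
    have "invs A = {id}" using True by (auto simp: invs_def)
    then show ?thesis using True by simp
  next
    case False
    then obtain x where x: "x \<in> A" by auto
    define sw where "sw y = (\<lambda>z. if z = x then y else if z = y then x else z)" for y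
    have split: "invs A = (\<Union>y\<in>A - {x}. {m \<in> invs A. \<forall>z\<in>{x, y}. m z = sw y z})"
    proof safe
      fix m assume m: "m \<in> invs A"
      then have "m x \<in> A - {x}" "m (m x) = x" using x by (auto simp: invs_def)
      then show "m \<in> (\<Union>y\<in>A - {x}. {m \<in> invs A. \<forall>z\<in>{x, y}. m z = sw y z})"
        using m by (auto simp: sw_def intro!: bexI[of _ "m x"])
    qed
    have "card (invs A) = (\<Sum>y\<in>A - {x}. card {m \<in> invs A. \<forall>z\<in>{x, y}. m z = sw y z})"
      unfolding arg_cong[OF split, of card]
      by (rule card_UN_disjoint) (use less.prems finite_invs[OF less.prems] in \<open>auto simp: sw_def\<close>)
    also have "\<dots> = (\<Sum>y\<in>A - {x}. FF (card A - 2))"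
    proof (rule sum.cong)
      fix y assume y: "y \<in> A - {x}"
      have "card {m \<in> invs A. \<forall>z\<in>{x, y}. m z = sw y z} = card (invs (A - {x, y}))"
        by (rule card_invs_extend) (use less.prems x y swap_in_invs[of x y] in \<open>auto simp: sw_def\<close>)
      also have "\<dots> = FF (card (A - {x, y}))"
      proof (rule less.hyps)
        have c2: "card {x, y} = 2" using y by (auto simp: card_2_iff)
        have "card (A - {x, y}) = card A - 2"
          using less.prems x y c2 by (subst card_Diff_subset) auto
        moreover have "card {x, y} \<le> card A" using less.prems x y by (intro card_mono) auto
        ultimately show "card (A - {x, y}) < card A" using c2 by simp
        show "finite (A - {x, y})" using less.prems by simp
      qed
      also have "card (A - {x, y}) = card A - 2"
        using less.prems x y card_2_iff[of "{x, y}"] by (subst card_Diff_subset) (auto simp: card_2_iff)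
      finally show "card {m \<in> invs A. \<forall>z\<in>{x, y}. m z = sw y z} = FF (card A - 2)" .
    qed simp
    also have "\<dots> = (card A - 1) * FF (card A - 2)"
      using less.prems x by simp
    also have "\<dots> = FF (card A)"
    proof -
      obtain k where k: "card A = Suc k" using x less.prems by (metis card_0_eq emptyE not0_implies_Suc)
      show ?thesis
      proof (cases k)
        case 0 then show ?thesis using k by simp
      next
        case (Suc j) then show ?thesis using k by simp
      qed
    qed
    finally show ?thesis .
  qed
qed

lemma FF_odd: "odd k \<Longrightarrow> FF k = 0"
  by (induction k rule: FF.induct) auto

lemma FF_even_pos: "even k \<Longrightarrow> FF k > 0"
  by (induction k rule: FF.induct) auto

lemma invs_nonempty_even: "finite A \<Longrightarrow> invs A \<noteq> {} \<Longrightarrow> even (card A)"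
  using card_invs[of A] FF_odd[of "card A"] finite_invs[of A] by (metis card_0_eq)

lemma FF_step: "even M \<Longrightarrow> 2 * E \<le> M \<Longrightarrow> real (FF M) = real (FF (M - 2 * E)) * (\<Prod>i<E. real M - 1 - 2 * real i)"
proof (induction E)
  case 0 then show ?case by simp
next
  case (Suc E)
  have "M - 2 * E \<ge> 2" using Suc.prems by simp
  then obtain j where j: "M - 2 * E = Suc (Suc j)"
    by (metis add_2_eq_Suc le_Suc_ex)
  have j2: "M - 2 * Suc E = j" using j by simp
  have "real (FF (M - 2 * E)) = real (Suc j) * real (FF j)" using j by (simp only: FF.simps of_nat_mult)
  moreover have "real (Suc j) = real M - 1 - 2 * real E"
    using j Suc.prems by (simp add: of_nat_diff)
  ultimately have "real (FF (M - 2 * E)) = real (FF (M - 2 * Suc E)) * (real M - 1 - 2 * real E)"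
    using j2 by simp
  moreover have "real (FF M) = real (FF (M - 2 * E)) * (\<Prod>i<E. real M - 1 - 2 * real i)"
    using Suc by simp
  ultimately show ?case by (simp add: mult_ac)
qed

lemma ffall_0[simp]: "ffall x 0 = 1" by (simp add: ffall_def)
lemma ffall_Suc: "ffall x (Suc r) = ffall x r * (x - real r)"
  by (simp add: ffall_def)
lemma ffall_same: "ffall (real k) k = fact k"
  unfolding ffall_def fact_prod_rev[of k] by (simp add: of_nat_prod of_nat_diff atLeast0LessThan)

definition colinj :: "'j set \<Rightarrow> 'a set \<Rightarrow> ('a \<Rightarrow> 'k) \<Rightarrow> ('j \<Rightarrow> 'k) \<Rightarrow> ('j \<Rightarrow> 'a) set" where
  "colinj J A col c = {f \<in> J \<rightarrow>\<^sub>E A. inj_on f J \<and> (\<forall>j\<in>J. col (f j) = c j)}"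

lemma colinj_finite: "finite J \<Longrightarrow> finite A \<Longrightarrow> finite (colinj J A col c)"
  unfolding colinj_def by (rule finite_subset[of _ "J \<rightarrow>\<^sub>E A"]) (auto intro: finite_PiE)

lemma card_colinj_gen:
  assumes "finite J" "finite A" "finite Col" "c ` J \<subseteq> Col"
  shows "real (card (colinj J A col c)) =
    (\<Prod>k\<in>Col. ffall (real (card {a\<in>A. col a = k})) (card {j\<in>J. c j = k}))"
  using assms(1,4)
proof (induction J rule: finite_induct)
  case empty
  have "colinj {} A col c = {\<lambda>_. undefined}" by (auto simp: colinj_def)
  then show ?case by simp
next
  case (insert j J)
  define N where "N = card {a\<in>A. col a = c j}"
  define m where "m = card {j'\<in>J. c j' = c j}"
  define T where "T g = {a\<in>A. col a = c j} - g ` J" for g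
  have IH: "real (card (colinj J A col c)) =
    (\<Prod>k\<in>Col. ffall (real (card {a\<in>A. col a = k})) (card {j\<in>J. c j = k}))"
    using insert by auto
  have eqS: "colinj (insert j J) A col c = (\<lambda>(g, a). g(j := a)) ` (SIGMA g:colinj J A col c. T g)"
  proof safe
    fix f assume f: "f \<in> colinj (insert j J) A col c"
    have "restrict f J \<in> colinj J A col c"
      using f by (auto simp: colinj_def inj_on_def)
    moreover have "f j \<in> T (restrict f J)"
      using f insert.hyps by (auto simp: colinj_def T_def inj_on_def)
    moreover have "f = (restrict f J)(j := f j)"
      using f insert.hyps by (auto simp: colinj_def fun_eq_iff)
    ultimately show "f \<in> (\<lambda>(g, a). g(j := a)) ` (SIGMA g:colinj J A col c. T g)"
      by (intro image_eqI[of _ _ "(restrict f J, f j)"]) auto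
  next
    fix g a assume g: "g \<in> colinj J A col c" and a: "a \<in> T g"
    show "g(j := a) \<in> colinj (insert j J) A col c"
      using g a insert.hyps unfolding colinj_def T_def
      by (auto simp: inj_on_def PiE_def extensional_def)
  qed
  have inj: "inj_on (\<lambda>(g, a). g(j := a)) (SIGMA g:colinj J A col c. T g)"
  proof (rule inj_onI, clarify)
    fix g a g' a' assume g: "g \<in> colinj J A col c" and g': "g' \<in> colinj J A col c"
      and eq: "g(j := a) = g'(j := a')"
    have "a = a'" using fun_cong[OF eq, of j] by simp
    moreover have "g = g'"
    proof
      fix x show "g x = g' x"
      proof (cases "x = j")
        case True
        then have "x \<notin> J" using insert.hyps by simp
        then show ?thesis using g g' by (auto simp: colinj_def PiE_def extensional_def)
      next
        case False then show ?thesis using fun_cong[OF eq, of x] by simp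
      qed
    qed
    ultimately show "g = g' \<and> a = a'" by simp
  qed
  have cardT: "card (T g) = N - m" and mN: "m \<le> N" if g: "g \<in> colinj J A col c" for g
  proof -
    have sub: "g ` {j'\<in>J. c j' = c j} \<subseteq> {a\<in>A. col a = c j}"
      using g by (auto simp: colinj_def)
    have eqI: "{a\<in>A. col a = c j} \<inter> g ` J = g ` {j'\<in>J. c j' = c j}"
      using g by (auto simp: colinj_def)
    have injg: "inj_on g {j'\<in>J. c j' = c j}" using g by (auto simp: colinj_def inj_on_def)
    have cm: "card (g ` {j'\<in>J. c j' = c j}) = m" unfolding m_def using injg by (simp add: card_image)
    have "card (T g) = N - card ({a\<in>A. col a = c j} \<inter> g ` J)"
      unfolding T_def N_def using \<open>finite A\<close> by (simp add: card_Diff_subset_Int Diff_Int2 card_Diff_subset)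
    then show "card (T g) = N - m" using eqI cm by simp
    show "m \<le> N" unfolding N_def using card_mono[OF _ sub] \<open>finite A\<close> cm by simp
  qed
  have "card (colinj (insert j J) A col c) = (\<Sum>g\<in>colinj J A col c. card (T g))"
    unfolding eqS card_image[OF inj]
    by (rule card_SigmaI) (use colinj_finite[OF insert.hyps(1) \<open>finite A\<close>] \<open>finite A\<close> in \<open>auto simp: T_def\<close>)
  also have "\<dots> = card (colinj J A col c) * (N - m)"
    using cardT by simp
  finally have L: "real (card (colinj (insert j J) A col c)) = real (card (colinj J A col c)) * real (N - m)"
    by simp
  have cnt: "card {j'\<in>insert j J. c j' = k} = (if k = c j then Suc (card {j'\<in>J. c j' = k}) else card {j'\<in>J. c j' = k})" for k
  proof -
    have "{j'\<in>insert j J. c j' = k} = (if k = c j then insert j {j'\<in>J. c j' = k} else {j'\<in>J. c j' = k})"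
      by auto
    then show ?thesis using insert.hyps by (simp split: if_splits)
  qed
  have cjC: "c j \<in> Col" using insert.prems by simp
  have R: "(\<Prod>k\<in>Col. ffall (real (card {a\<in>A. col a = k})) (card {j'\<in>insert j J. c j' = k}))
    = (\<Prod>k\<in>Col. ffall (real (card {a\<in>A. col a = k})) (card {j'\<in>J. c j' = k})) * (real N - real m)"
  proof -
    have "(\<Prod>k\<in>Col. ffall (real (card {a\<in>A. col a = k})) (card {j'\<in>insert j J. c j' = k}))
      = ffall (real N) (Suc m) * (\<Prod>k\<in>Col - {c j}. ffall (real (card {a\<in>A. col a = k})) (card {j'\<in>J. c j' = k}))"
    proof -
      have "(\<Prod>k\<in>Col. ffall (real (card {a\<in>A. col a = k})) (card {j'\<in>insert j J. c j' = k}))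
        = ffall (real (card {a\<in>A. col a = c j})) (card {j'\<in>insert j J. c j' = c j}) *
          (\<Prod>k\<in>Col - {c j}. ffall (real (card {a\<in>A. col a = k})) (card {j'\<in>insert j J. c j' = k}))"
        by (rule prod.remove[OF \<open>finite Col\<close> cjC])
      also have "(\<Prod>k\<in>Col - {c j}. ffall (real (card {a\<in>A. col a = k})) (card {j'\<in>insert j J. c j' = k}))
        = (\<Prod>k\<in>Col - {c j}. ffall (real (card {a\<in>A. col a = k})) (card {j'\<in>J. c j' = k}))"
        by (rule prod.cong) (simp_all only: cnt, auto)
      also have "card {j'\<in>insert j J. c j' = c j} = Suc m"
        by (simp only: cnt m_def) simp
      finally show ?thesis by (simp only: N_def)
    qed
    also have "\<dots> = (\<Prod>k\<in>Col. ffall (real (card {a\<in>A. col a = k})) (card {j'\<in>J. c j' = k})) * (real N - real m)"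
      using cjC \<open>finite Col\<close> by (simp add: prod.remove N_def m_def ffall_Suc)
    finally show ?thesis .
  qed
  show ?case
  proof (cases "colinj J A col c = {}")
    case True
    then show ?thesis using L IH R by simp
  next
    case False
    then obtain g where "g \<in> colinj J A col c" by auto
    then have "m \<le> N" by (rule mN)
    then show ?thesis using L IH R by (simp add: of_nat_diff)
  qed
qed

lemma card_colinj:
  assumes "finite J" "finite A"
  shows "real (card (colinj J A col c)) =
    (\<Prod>k\<in>c ` J. ffall (real (card {a\<in>A. col a = k})) (card {j\<in>J. c j = k}))"
  using card_colinj_gen[OF assms, of "c ` J" c col] assms by simp

definition place :: "('v, 'h) mgraph \<Rightarrow> (nat \<Rightarrow> nat \<Rightarrow> nat) \<Rightarrow> nat \<Rightarrow> (('v \<Rightarrow> nat) \<times> ('h \<Rightarrow> nat \<times> nat)) set" where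
  "place K d n = {(\<phi>, \<sigma>). \<phi> \<in> colinj (verts K) {..<n} (d n) (mg_deg K) \<and>
      \<sigma> \<in> colinj (halfs K) (half_edges d n) fst (\<lambda>h. \<phi> (owner K h))}"

definition emb :: "('v, 'h) mgraph \<Rightarrow> (nat \<Rightarrow> nat \<Rightarrow> nat) \<Rightarrow> nat \<Rightarrow> ((nat \<times> nat) \<Rightarrow> (nat \<times> nat))
    \<Rightarrow> (('v \<Rightarrow> nat) \<times> ('h \<Rightarrow> nat \<times> nat)) set" where
  "emb K d n m = {(\<phi>, \<sigma>) \<in> place K d n. \<forall>h\<in>halfs K. m (\<sigma> h) = \<sigma> (mate K h)}"

lemma half_edges_Sigma: "half_edges d n = Sigma {..<n} (\<lambda>i. {..<d n i})"
  by (auto simp: half_edges_def)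

lemma finite_half_edges[simp]: "finite (half_edges d n)"
  by (simp add: half_edges_Sigma)

lemma card_half_edges: "card (half_edges d n) = (\<Sum>i<n. d n i)"
  by (simp add: half_edges_Sigma card_SigmaI)

lemma card_half_edges_at: "i < n \<Longrightarrow> card {g \<in> half_edges d n. fst g = i} = d n i"
proof -
  assume "i < n"
  then have "{g \<in> half_edges d n. fst g = i} = {i} \<times> {..<d n i}" by (auto simp: half_edges_def)
  then show ?thesis by simp
qed

lemma finite_place: "finite (verts K) \<Longrightarrow> finite (halfs K) \<Longrightarrow> finite (place K d n)"
proof -
  assume f: "finite (verts K)" "finite (halfs K)"
  have "place K d n \<subseteq> colinj (verts K) {..<n} (d n) (mg_deg K) \<times> (halfs K \<rightarrow>\<^sub>E half_edges d n)"
    by (auto simp: place_def colinj_def)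
  moreover have "finite (colinj (verts K) {..<n} (d n) (mg_deg K) \<times> (halfs K \<rightarrow>\<^sub>E half_edges d n))"
    using f by (intro finite_cartesian_product colinj_finite finite_PiE) auto
  ultimately show ?thesis by (rule finite_subset)
qed

lemma mg_deg_zero: "finite (halfs K) \<Longrightarrow> u \<notin> owner K ` halfs K \<Longrightarrow> mg_deg K u = 0"
  by (auto simp: mg_deg_def)

lemma card_sigma_part:
  assumes wf: "mg_wf K" and phi: "\<phi> \<in> colinj (verts K) {..<n} (d n) (mg_deg K)"
  shows "real (card (colinj (halfs K) (half_edges d n) fst (\<lambda>h. \<phi> (owner K h))))
       = (\<Prod>u\<in>verts K. fact (mg_deg K u))"
proof -
  have fV: "finite (verts K)" and fH: "finite (halfs K)" and oV: "owner K ` halfs K \<subseteq> verts K"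
    using wf by (auto simp: mg_wf_def)
  have injphi: "inj_on \<phi> (verts K)" and phin: "\<forall>u\<in>verts K. \<phi> u < n"
    and phid: "\<forall>u\<in>verts K. d n (\<phi> u) = mg_deg K u"
    using phi by (auto simp: colinj_def)
  have "real (card (colinj (halfs K) (half_edges d n) fst (\<lambda>h. \<phi> (owner K h))))
     = (\<Prod>k\<in>(\<lambda>h. \<phi> (owner K h)) ` halfs K. ffall (real (card {a \<in> half_edges d n. fst a = k}))
          (card {h \<in> halfs K. \<phi> (owner K h) = k}))"
    by (rule card_colinj) (use fH in auto)
  also have "(\<lambda>h. \<phi> (owner K h)) ` halfs K = \<phi> ` (owner K ` halfs K)" by auto
  also have "(\<Prod>k\<in>\<phi> ` (owner K ` halfs K). ffall (real (card {a \<in> half_edges d n. fst a = k}))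
          (card {h \<in> halfs K. \<phi> (owner K h) = k}))
     = (\<Prod>u\<in>owner K ` halfs K. ffall (real (card {a \<in> half_edges d n. fst a = \<phi> u}))
          (card {h \<in> halfs K. \<phi> (owner K h) = \<phi> u}))"
    by (rule prod.reindex_cong[where l = \<phi>]) (use injphi oV inj_on_subset in auto)
  also have "\<dots> = (\<Prod>u\<in>owner K ` halfs K. fact (mg_deg K u))"
  proof (rule prod.cong[OF refl])
    fix u assume u: "u \<in> owner K ` halfs K"
    then have uV: "u \<in> verts K" using oV by auto
    have "card {a \<in> half_edges d n. fst a = \<phi> u} = mg_deg K u"
      using card_half_edges_at[of "\<phi> u" n d] phin phid uV by simp
    moreover have "{h \<in> halfs K. \<phi> (owner K h) = \<phi> u} = {h \<in> halfs K. owner K h = u}"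
      using injphi uV oV by (auto simp: inj_on_def)
    ultimately show "ffall (real (card {a \<in> half_edges d n. fst a = \<phi> u}))
          (card {h \<in> halfs K. \<phi> (owner K h) = \<phi> u}) = fact (mg_deg K u)"
      by (simp add: mg_deg_def ffall_same)
  qed
  also have "\<dots> = (\<Prod>u\<in>verts K. fact (mg_deg K u))"
    using fV oV mg_deg_zero[OF fH] by (intro prod.mono_neutral_left) auto
  finally show ?thesis .
qed

lemma card_place:
  assumes wf: "mg_wf K"
  shows "real (card (place K d n)) =
     (\<Prod>k\<in>mg_deg K ` verts K. ffall (real (nk d n k)) (mg_nk K k)) * (\<Prod>u\<in>verts K. fact (mg_deg K u))"
proof -
  have fV: "finite (verts K)" and fH: "finite (halfs K)"
    using wf by (auto simp: mg_wf_def)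
  have P: "place K d n = Sigma (colinj (verts K) {..<n} (d n) (mg_deg K))
      (\<lambda>\<phi>. colinj (halfs K) (half_edges d n) fst (\<lambda>h. \<phi> (owner K h)))"
    by (auto simp: place_def)
  have "card (place K d n) = (\<Sum>\<phi>\<in>colinj (verts K) {..<n} (d n) (mg_deg K).
      card (colinj (halfs K) (half_edges d n) fst (\<lambda>h. \<phi> (owner K h))))"
    unfolding P by (rule card_SigmaI) (auto intro!: colinj_finite fV fH)
  then have "real (card (place K d n)) = (\<Sum>\<phi>\<in>colinj (verts K) {..<n} (d n) (mg_deg K).
      real (card (colinj (halfs K) (half_edges d n) fst (\<lambda>h. \<phi> (owner K h)))))"
    by simp
  also have "\<dots> = (\<Sum>\<phi>\<in>colinj (verts K) {..<n} (d n) (mg_deg K). (\<Prod>u\<in>verts K. fact (mg_deg K u)))"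
    by (rule sum.cong[OF refl]) (rule card_sigma_part[OF wf])
  also have "\<dots> = real (card (colinj (verts K) {..<n} (d n) (mg_deg K))) * (\<Prod>u\<in>verts K. fact (mg_deg K u))"
    by simp
  also have "real (card (colinj (verts K) {..<n} (d n) (mg_deg K)))
     = (\<Prod>k\<in>mg_deg K ` verts K. ffall (real (card {a\<in>{..<n}. d n a = k})) (card {j\<in>verts K. mg_deg K j = k}))"
    by (rule card_colinj) (use fV in auto)
  also have "\<dots> = (\<Prod>k\<in>mg_deg K ` verts K. ffall (real (nk d n k)) (mg_nk K k))"
    by (rule prod.cong[OF refl]) (simp add: nk_def mg_nk_def lessThan_def conj_commute)
  finally show ?thesis .
qed

lemma wf_mate_invs:
  assumes wf: "mg_wf K"
  shows "(\<lambda>h. if h \<in> halfs K then mate K h else h) \<in> invs (halfs K)"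
  using wf by (auto simp: mg_wf_def invs_def)

lemma wf_card_halfs: "mg_wf K \<Longrightarrow> card (halfs K) = 2 * mg_e K"
proof -
  assume wf: "mg_wf K"
  have "even (card (halfs K))"
    using invs_nonempty_even[of "halfs K"] wf_mate_invs[OF wf] wf by (auto simp: mg_wf_def)
  then show ?thesis by (simp add: mg_e_def)
qed

lemma card_compatible:
  assumes wf: "mg_wf K" and e: "(\<phi>, \<sigma>) \<in> place K d n"
  shows "card {m \<in> invs (half_edges d n). \<forall>h\<in>halfs K. m (\<sigma> h) = \<sigma> (mate K h)}
       = FF (card (half_edges d n) - card (halfs K))"
proof -
  let ?X = "half_edges d n"
  define S where "S = \<sigma> ` halfs K"
  define \<pi> where "\<pi> x = (if x \<in> S then \<sigma> (mate K (inv_into (halfs K) \<sigma> x)) else x)" for x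
  have fH: "finite (halfs K)" and mH: "\<forall>h\<in>halfs K. mate K h \<in> halfs K \<and> mate K h \<noteq> h \<and> mate K (mate K h) = h"
    using wf by (auto simp: mg_wf_def)
  have injs: "inj_on \<sigma> (halfs K)" and sX: "\<sigma> ` halfs K \<subseteq> ?X"
    using e by (auto simp: place_def colinj_def)
  have pis: "\<pi> (\<sigma> h) = \<sigma> (mate K h)" if "h \<in> halfs K" for h
    using that injs by (simp add: \<pi>_def S_def)
  have "\<pi> \<in> invs S"
    unfolding invs_def
  proof (intro CollectI conjI ballI allI impI)
    fix x assume "x \<in> S"
    then obtain h where h: "h \<in> halfs K" "x = \<sigma> h" by (auto simp: S_def)
    show "\<pi> x \<in> S" using h pis mH by (auto simp: S_def)
    show "\<pi> x \<noteq> x" using h pis mH injs by (metis inj_onD)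
    show "\<pi> (\<pi> x) = x" using h pis mH by simp
  next
    fix x assume "x \<notin> S" then show "\<pi> x = x" by (simp add: \<pi>_def)
  qed
  have eq: "{m \<in> invs ?X. \<forall>h\<in>halfs K. m (\<sigma> h) = \<sigma> (mate K h)} = {m \<in> invs ?X. \<forall>x\<in>S. m x = \<pi> x}"
    using pis by (auto simp: S_def)
  have "card {m \<in> invs ?X. \<forall>x\<in>S. m x = \<pi> x} = card (invs (?X - S))"
    by (rule card_invs_extend) (use sX \<open>\<pi> \<in> invs S\<close> in \<open>auto simp: S_def\<close>)
  also have "\<dots> = FF (card (?X - S))" by (simp add: card_invs)
  also have "card (?X - S) = card ?X - card (halfs K)"
    using sX injs fH by (simp add: card_Diff_subset S_def card_image)
  finally show ?thesis using eq by simp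
qed

lemma sum_card_emb:
  fixes K :: "('v, 'h) mgraph"
  assumes wf: "mg_wf K"
  shows "(\<Sum>m\<in>invs (half_edges d n). card (emb K d n m))
       = card (place K d n) * FF (card (half_edges d n) - card (halfs K))"
proof -
  let ?X = "half_edges d n"
  define Q where "Q \<sigma> m \<longleftrightarrow> (\<forall>h\<in>halfs K. m (\<sigma> h) = \<sigma> (mate K h))" for \<sigma> :: "_ \<Rightarrow> nat \<times> nat" and m :: "nat \<times> nat \<Rightarrow> nat \<times> nat"
  define P where "P e m \<longleftrightarrow> Q (snd e) m" for e :: "('v \<Rightarrow> nat) \<times> ('h \<Rightarrow> nat \<times> nat)" and m
  have fP: "finite (place K d n)" using wf by (intro finite_place) (auto simp: mg_wf_def)
  have fI: "finite (invs ?X)" by (simp add: finite_invs)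
  have "emb K d n m = {e \<in> place K d n. P e m}" for m
    by (auto simp: emb_def P_def Q_def)
  then have "(\<Sum>m\<in>invs ?X. card (emb K d n m)) = (\<Sum>m\<in>invs ?X. \<Sum>e\<in>place K d n. if P e m then 1 else 0)"
    using fP by (simp add: sum.inter_filter[symmetric])
  also have "\<dots> = (\<Sum>e\<in>place K d n. \<Sum>m\<in>invs ?X. if P e m then 1 else 0)"
    by (rule sum.swap)
  also have "\<dots> = (\<Sum>e\<in>place K d n. card {m \<in> invs ?X. P e m})"
    using fI by (simp add: sum.inter_filter[symmetric])
  also have "\<dots> = (\<Sum>e\<in>place K d n. FF (card ?X - card (halfs K)))"
  proof (rule sum.cong[OF refl])
    fix e assume e: "e \<in> place K d n"
    obtain \<phi> \<sigma> where [simp]: "e = (\<phi>, \<sigma>)" by (cases e)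
    show "card {m \<in> invs ?X. P e m} = FF (card ?X - card (halfs K))"
      using card_compatible[OF wf, of \<phi> \<sigma>] e by (simp add: P_def Q_def)
  qed
  finally show ?thesis by simp
qed

lemma Exp_emb:
  assumes wf: "mg_wf K" and ev: "even (\<Sum>i<n. d n i)"
  shows "Exp d n (\<lambda>m. real (card (emb K d n m)))
       = real (card (place K d n)) * real (FF ((\<Sum>i<n. d n i) - 2 * mg_e K)) / real (FF (\<Sum>i<n. d n i))"
proof -
  let ?X = "half_edges d n"
  have ne: "invs ?X \<noteq> {}"
    using card_invs[of ?X] FF_even_pos[OF ev] card_half_edges[of d n] by auto
  have "Exp d n (\<lambda>m. real (card (emb K d n m))) = (\<Sum>m\<in>invs ?X. real (card (emb K d n m))) / real (card (invs ?X))"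
    unfolding Exp_def CM_def matchings_invs
    by (rule integral_pmf_of_set[OF ne finite_invs[OF finite_half_edges]])
  also have "(\<Sum>m\<in>invs ?X. real (card (emb K d n m))) = real (card (place K d n) * FF (card ?X - card (halfs K)))"
    using sum_card_emb[OF wf, of d n] by (simp flip: of_nat_sum)
  finally show ?thesis
    by (simp add: card_invs card_half_edges wf_card_halfs[OF wf])
qed

definition isoset :: "('v, 'h) mgraph \<Rightarrow> ('w, 'g) mgraph \<Rightarrow> (('v \<Rightarrow> 'w) \<times> ('h \<Rightarrow> 'g)) set" where
  "isoset A B = {(\<phi>, \<sigma>). \<phi> \<in> extensional (verts A) \<and> \<sigma> \<in> extensional (halfs A) \<and>
     bij_betw \<phi> (verts A) (verts B) \<and> bij_betw \<sigma> (halfs A) (halfs B) \<and>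
     (\<forall>h\<in>halfs A. owner B (\<sigma> h) = \<phi> (owner A h) \<and> mate B (\<sigma> h) = \<sigma> (mate A h))}"

lemma mg_aut_isoset: "mg_aut A = card (isoset A A)"
  unfolding mg_aut_def isoset_def by simp

lemma wfD:
  assumes "mg_wf A"
  shows "finite (verts A)" "finite (halfs A)" "\<And>h. h \<in> halfs A \<Longrightarrow> owner A h \<in> verts A"
    "\<And>h. h \<in> halfs A \<Longrightarrow> mate A h \<in> halfs A" "\<And>h. h \<in> halfs A \<Longrightarrow> mate A h \<noteq> h"
    "\<And>h. h \<in> halfs A \<Longrightarrow> mate A (mate A h) = h"
  using assms by (auto simp: mg_wf_def)

lemma mg_iso_isoset:
  assumes wf: "mg_wf A"
  shows "mg_iso A B \<longleftrightarrow> isoset A B \<noteq> {}"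
proof
  assume "mg_iso A B"
  then obtain \<phi> \<sigma> where *: "bij_betw \<phi> (verts A) (verts B)" "bij_betw \<sigma> (halfs A) (halfs B)"
     "\<forall>h\<in>halfs A. owner B (\<sigma> h) = \<phi> (owner A h) \<and> mate B (\<sigma> h) = \<sigma> (mate A h)"
    unfolding mg_iso_def by blast
  have "(restrict \<phi> (verts A), restrict \<sigma> (halfs A)) \<in> isoset A B"
    unfolding isoset_def using * wfD[OF wf] by (auto cong: bij_betw_cong)
  then show "isoset A B \<noteq> {}" by blast
next
  assume "isoset A B \<noteq> {}"
  then obtain \<phi> \<sigma> where "(\<phi>, \<sigma>) \<in> isoset A B" by auto
  then show "mg_iso A B" unfolding isoset_def mg_iso_def by blast
qed

lemma isoset_finite:
  assumes "finite (verts A)" "finite (halfs A)" "finite (verts B)" "finite (halfs B)"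
  shows "finite (isoset A B)"
proof -
  have "isoset A B \<subseteq> (verts A \<rightarrow>\<^sub>E verts B) \<times> (halfs A \<rightarrow>\<^sub>E halfs B)"
    by (auto simp: isoset_def bij_betw_def PiE_def extensional_def)
  moreover have "finite ((verts A \<rightarrow>\<^sub>E verts B) \<times> (halfs A \<rightarrow>\<^sub>E halfs B))"
    using assms by (intro finite_cartesian_product finite_PiE) auto
  ultimately show ?thesis by (rule finite_subset)
qed

lemma isoset_comp:
  assumes wfA: "mg_wf A" and i1: "(\<phi>1, \<sigma>1) \<in> isoset A B" and i2: "(\<phi>2, \<sigma>2) \<in> isoset B C"
  shows "(restrict (\<phi>2 \<circ> \<phi>1) (verts A), restrict (\<sigma>2 \<circ> \<sigma>1) (halfs A)) \<in> isoset A C"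
proof -
  have b1: "bij_betw \<phi>1 (verts A) (verts B)" "bij_betw \<sigma>1 (halfs A) (halfs B)"
    and c1: "\<forall>h\<in>halfs A. owner B (\<sigma>1 h) = \<phi>1 (owner A h) \<and> mate B (\<sigma>1 h) = \<sigma>1 (mate A h)"
    using i1 by (auto simp: isoset_def)
  have b2: "bij_betw \<phi>2 (verts B) (verts C)" "bij_betw \<sigma>2 (halfs B) (halfs C)"
    and c2: "\<forall>h\<in>halfs B. owner C (\<sigma>2 h) = \<phi>2 (owner B h) \<and> mate C (\<sigma>2 h) = \<sigma>2 (mate B h)"
    using i2 by (auto simp: isoset_def)
  have "bij_betw (\<phi>2 \<circ> \<phi>1) (verts A) (verts C)" by (rule bij_betw_trans[OF b1(1) b2(1)])
  then have bv: "bij_betw (restrict (\<phi>2 \<circ> \<phi>1) (verts A)) (verts A) (verts C)"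
    by (rule bij_betw_cong[THEN iffD1, rotated]) simp
  have "bij_betw (\<sigma>2 \<circ> \<sigma>1) (halfs A) (halfs C)" by (rule bij_betw_trans[OF b1(2) b2(2)])
  then have bh: "bij_betw (restrict (\<sigma>2 \<circ> \<sigma>1) (halfs A)) (halfs A) (halfs C)"
    by (rule bij_betw_cong[THEN iffD1, rotated]) simp
  have "\<forall>h\<in>halfs A. owner C (restrict (\<sigma>2 \<circ> \<sigma>1) (halfs A) h) = restrict (\<phi>2 \<circ> \<phi>1) (verts A) (owner A h)
       \<and> mate C (restrict (\<sigma>2 \<circ> \<sigma>1) (halfs A) h) = restrict (\<sigma>2 \<circ> \<sigma>1) (halfs A) (mate A h)"
  proof
    fix h assume h: "h \<in> halfs A"
    have s1: "\<sigma>1 h \<in> halfs B" using b1 h by (auto simp: bij_betw_def)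
    show "owner C (restrict (\<sigma>2 \<circ> \<sigma>1) (halfs A) h) = restrict (\<phi>2 \<circ> \<phi>1) (verts A) (owner A h)
       \<and> mate C (restrict (\<sigma>2 \<circ> \<sigma>1) (halfs A) h) = restrict (\<sigma>2 \<circ> \<sigma>1) (halfs A) (mate A h)"
      using h s1 c1 c2 wfD[OF wfA] by auto
  qed
  then show ?thesis using bv bh unfolding isoset_def by auto
qed

lemma isoset_inv:
  assumes wfA: "mg_wf A" and wfB: "mg_wf B" and i: "(\<phi>, \<sigma>) \<in> isoset A B"
  shows "(restrict (inv_into (verts A) \<phi>) (verts B), restrict (inv_into (halfs A) \<sigma>) (halfs B)) \<in> isoset B A"
proof -
  have b: "bij_betw \<phi> (verts A) (verts B)" "bij_betw \<sigma> (halfs A) (halfs B)"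
    and c: "\<forall>h\<in>halfs A. owner B (\<sigma> h) = \<phi> (owner A h) \<and> mate B (\<sigma> h) = \<sigma> (mate A h)"
    using i by (auto simp: isoset_def)
  have bv: "bij_betw (restrict (inv_into (verts A) \<phi>) (verts B)) (verts B) (verts A)"
    using bij_betw_inv_into[OF b(1)] by (rule bij_betw_cong[THEN iffD1, rotated]) simp
  have bh: "bij_betw (restrict (inv_into (halfs A) \<sigma>) (halfs B)) (halfs B) (halfs A)"
    using bij_betw_inv_into[OF b(2)] by (rule bij_betw_cong[THEN iffD1, rotated]) simp
  have "owner A (inv_into (halfs A) \<sigma> g) = inv_into (verts A) \<phi> (owner B g) \<and>
        mate A (inv_into (halfs A) \<sigma> g) = inv_into (halfs A) \<sigma> (mate B g)" if g: "g \<in> halfs B" for g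
  proof -
    obtain h where h: "h \<in> halfs A" "g = \<sigma> h" using g b(2) by (auto simp: bij_betw_def)
    have ih: "inv_into (halfs A) \<sigma> g = h" using h b(2) by (auto simp: bij_betw_def)
    have "inv_into (verts A) \<phi> (owner B g) = owner A h"
      using c h wfD(3)[OF wfA h(1)] b(1) by (auto simp: bij_betw_def)
    moreover have "inv_into (halfs A) \<sigma> (mate B g) = mate A h"
      using c h wfD(4)[OF wfA h(1)] b(2) by (auto simp: bij_betw_def)
    ultimately show ?thesis using ih by simp
  qed
  then show ?thesis using bv bh wfD[OF wfB] unfolding isoset_def by auto
qed

lemma mg_iso_sym: "mg_wf A \<Longrightarrow> mg_wf B \<Longrightarrow> mg_iso A B \<Longrightarrow> mg_iso B A"
  using isoset_inv mg_iso_isoset by (metis all_not_in_conv prod.exhaust)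

lemma mg_iso_trans: "mg_wf A \<Longrightarrow> mg_iso A B \<Longrightarrow> mg_iso B C \<Longrightarrow> mg_iso A C"
  unfolding mg_iso_def
proof (elim exE conjE)
  fix \<phi>1 \<sigma>1 \<phi>2 \<sigma>2
  assume wf: "mg_wf A" and b1: "bij_betw \<phi>1 (verts A) (verts B)" "bij_betw \<sigma>1 (halfs A) (halfs B)"
    and c1: "\<forall>h\<in>halfs A. owner B (\<sigma>1 h) = \<phi>1 (owner A h) \<and> mate B (\<sigma>1 h) = \<sigma>1 (mate A h)"
    and b2: "bij_betw \<phi>2 (verts B) (verts C)" "bij_betw \<sigma>2 (halfs B) (halfs C)"
    and c2: "\<forall>h\<in>halfs B. owner C (\<sigma>2 h) = \<phi>2 (owner B h) \<and> mate C (\<sigma>2 h) = \<sigma>2 (mate B h)"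
  have "\<forall>h\<in>halfs A. owner C ((\<sigma>2 \<circ> \<sigma>1) h) = (\<phi>2 \<circ> \<phi>1) (owner A h) \<and> mate C ((\<sigma>2 \<circ> \<sigma>1) h) = (\<sigma>2 \<circ> \<sigma>1) (mate A h)"
  proof
    fix h assume h: "h \<in> halfs A"
    have "\<sigma>1 h \<in> halfs B" using b1(2) h by (auto simp: bij_betw_def)
    then show "owner C ((\<sigma>2 \<circ> \<sigma>1) h) = (\<phi>2 \<circ> \<phi>1) (owner A h) \<and> mate C ((\<sigma>2 \<circ> \<sigma>1) h) = (\<sigma>2 \<circ> \<sigma>1) (mate A h)"
      using c1 c2 h by simp
  qed
  then show "\<exists>\<phi> \<sigma>. bij_betw \<phi> (verts A) (verts C) \<and> bij_betw \<sigma> (halfs A) (halfs C) \<and>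
       (\<forall>h\<in>halfs A. owner C (\<sigma> h) = \<phi> (owner A h) \<and> mate C (\<sigma> h) = \<sigma> (mate A h))"
    using b1 b2 by (meson bij_betw_trans)
qed

lemma card_isoset_post_le:
  assumes wfA: "mg_wf A" and wfC: "mg_wf C" and i: "(\<psi>, \<tau>) \<in> isoset B C"
  shows "card (isoset A B) \<le> card (isoset A C)"
proof (rule card_inj_on_le[where f = "\<lambda>(\<phi>, \<sigma>). (restrict (\<psi> \<circ> \<phi>) (verts A), restrict (\<tau> \<circ> \<sigma>) (halfs A))"])
  have b: "bij_betw \<psi> (verts B) (verts C)" "bij_betw \<tau> (halfs B) (halfs C)"
    using i by (auto simp: isoset_def)
  show "inj_on (\<lambda>(\<phi>, \<sigma>). (restrict (\<psi> \<circ> \<phi>) (verts A), restrict (\<tau> \<circ> \<sigma>) (halfs A))) (isoset A B)"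
  proof (rule inj_onI, clarify)
    fix \<phi> \<sigma> \<phi>' \<sigma>' assume i1: "(\<phi>, \<sigma>) \<in> isoset A B" and i2: "(\<phi>', \<sigma>') \<in> isoset A B"
      and e1: "restrict (\<psi> \<circ> \<phi>) (verts A) = restrict (\<psi> \<circ> \<phi>') (verts A)"
      and e2: "restrict (\<tau> \<circ> \<sigma>) (halfs A) = restrict (\<tau> \<circ> \<sigma>') (halfs A)"
    show "\<phi> = \<phi>' \<and> \<sigma> = \<sigma>'"
    proof
      show "\<phi> = \<phi>'"
      proof
        fix x show "\<phi> x = \<phi>' x"
        proof (cases "x \<in> verts A")
          case True
          then have "\<psi> (\<phi> x) = \<psi> (\<phi>' x)" using fun_cong[OF e1, of x] by simp
          moreover have "\<phi> x \<in> verts B" "\<phi>' x \<in> verts B" using i1 i2 True by (auto simp: isoset_def bij_betw_def)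
          ultimately show ?thesis using b(1) by (auto simp: bij_betw_def inj_on_def)
        next
          case False then show ?thesis using i1 i2 by (auto simp: isoset_def extensional_def)
        qed
      qed
      show "\<sigma> = \<sigma>'"
      proof
        fix x show "\<sigma> x = \<sigma>' x"
        proof (cases "x \<in> halfs A")
          case True
          then have "\<tau> (\<sigma> x) = \<tau> (\<sigma>' x)" using fun_cong[OF e2, of x] by simp
          moreover have "\<sigma> x \<in> halfs B" "\<sigma>' x \<in> halfs B" using i1 i2 True by (auto simp: isoset_def bij_betw_def)
          ultimately show ?thesis using b(2) by (auto simp: bij_betw_def inj_on_def)
        next
          case False then show ?thesis using i1 i2 by (auto simp: isoset_def extensional_def)
        qed
      qed
    qed
  qed
  show "(\<lambda>(\<phi>, \<sigma>). (restrict (\<psi> \<circ> \<phi>) (verts A), restrict (\<tau> \<circ> \<sigma>) (halfs A))) ` isoset A B \<subseteq> isoset A C"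
    using isoset_comp[OF wfA _ i] by auto
  show "finite (isoset A C)" using wfD[OF wfA] wfD[OF wfC] by (intro isoset_finite) auto
qed

lemma card_isoset_pre_le:
  assumes wfA: "mg_wf A" and wfB: "mg_wf B" and wfC: "mg_wf C" and i: "(\<psi>, \<tau>) \<in> isoset A B"
  shows "card (isoset B C) \<le> card (isoset A C)"
proof (rule card_inj_on_le[where f = "\<lambda>(\<phi>, \<sigma>). (restrict (\<phi> \<circ> \<psi>) (verts A), restrict (\<sigma> \<circ> \<tau>) (halfs A))"])
  have b: "bij_betw \<psi> (verts A) (verts B)" "bij_betw \<tau> (halfs A) (halfs B)"
    using i by (auto simp: isoset_def)
  show "inj_on (\<lambda>(\<phi>, \<sigma>). (restrict (\<phi> \<circ> \<psi>) (verts A), restrict (\<sigma> \<circ> \<tau>) (halfs A))) (isoset B C)"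
  proof (rule inj_onI, clarify)
    fix \<phi> \<sigma> \<phi>' \<sigma>' assume i1: "(\<phi>, \<sigma>) \<in> isoset B C" and i2: "(\<phi>', \<sigma>') \<in> isoset B C"
      and e1: "restrict (\<phi> \<circ> \<psi>) (verts A) = restrict (\<phi>' \<circ> \<psi>) (verts A)"
      and e2: "restrict (\<sigma> \<circ> \<tau>) (halfs A) = restrict (\<sigma>' \<circ> \<tau>) (halfs A)"
    show "\<phi> = \<phi>' \<and> \<sigma> = \<sigma>'"
    proof
      show "\<phi> = \<phi>'"
      proof
        fix x show "\<phi> x = \<phi>' x"
        proof (cases "x \<in> verts B")
          case True
          then obtain y where "y \<in> verts A" "x = \<psi> y" using b(1) by (auto simp: bij_betw_def)
          then show ?thesis using fun_cong[OF e1, of y] by simp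
        next
          case False then show ?thesis using i1 i2 by (auto simp: isoset_def extensional_def)
        qed
      qed
      show "\<sigma> = \<sigma>'"
      proof
        fix x show "\<sigma> x = \<sigma>' x"
        proof (cases "x \<in> halfs B")
          case True
          then obtain y where "y \<in> halfs A" "x = \<tau> y" using b(2) by (auto simp: bij_betw_def)
          then show ?thesis using fun_cong[OF e2, of y] by simp
        next
          case False then show ?thesis using i1 i2 by (auto simp: isoset_def extensional_def)
        qed
      qed
    qed
  qed
  show "(\<lambda>(\<phi>, \<sigma>). (restrict (\<phi> \<circ> \<psi>) (verts A), restrict (\<sigma> \<circ> \<tau>) (halfs A))) ` isoset B C \<subseteq> isoset A C"
    using isoset_comp[OF wfA i] by auto
  show "finite (isoset A C)" using wfD[OF wfA] wfD[OF wfC] by (intro isoset_finite) auto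
qed

lemma card_isoset_eq_aut:
  assumes wfA: "mg_wf A" and wfB: "mg_wf B" and iso: "mg_iso A B"
  shows "card (isoset A B) = mg_aut A"
proof -
  have "isoset A B \<noteq> {}" using iso mg_iso_isoset[OF wfA, of B] by blast
  then obtain p where "p \<in> isoset A B" by blast
  then obtain \<psi> \<tau> where i: "(\<psi>, \<tau>) \<in> isoset A B" by (cases p) auto
  have j: "(restrict (inv_into (verts A) \<psi>) (verts B), restrict (inv_into (halfs A) \<tau>) (halfs B)) \<in> isoset B A"
    by (rule isoset_inv[OF wfA wfB i])
  show ?thesis unfolding mg_aut_isoset
    using card_isoset_post_le[OF wfA wfB i] card_isoset_post_le[OF wfA wfA j]
    by simp
qed

lemma mg_aut_iso:
  assumes wfA: "mg_wf A" and wfB: "mg_wf B" and iso: "mg_iso A B"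
  shows "mg_aut A = mg_aut B"
proof -
  have "isoset A B \<noteq> {}" using iso mg_iso_isoset[OF wfA, of B] by blast
  then obtain p where "p \<in> isoset A B" by blast
  then obtain \<psi> \<tau> where i: "(\<psi>, \<tau>) \<in> isoset A B" by (cases p) auto
  have j: "(restrict (inv_into (verts A) \<psi>) (verts B), restrict (inv_into (halfs A) \<tau>) (halfs B)) \<in> isoset B A"
    by (rule isoset_inv[OF wfA wfB i])
  have "card (isoset B B) \<le> card (isoset A B)" by (rule card_isoset_pre_le[OF wfA wfB wfB i])
  moreover have "card (isoset A B) \<le> card (isoset B B)" by (rule card_isoset_pre_le[OF wfB wfA wfB j])
  ultimately have "card (isoset B B) = card (isoset A B)" by simp
  then show ?thesis using card_isoset_eq_aut[OF wfA wfB iso] by (simp add: mg_aut_isoset)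
qed

abbreviation "GG d n m \<equiv> Gstar d n m"

lemma Gstar_simps[simp]: "verts (Gstar d n m) = {..<n}" "halfs (Gstar d n m) = half_edges d n"
  "owner (Gstar d n m) = fst" "mate (Gstar d n m) = m"
  by (simp_all add: Gstar_def)

lemma half_edges_fst: "g \<in> half_edges d n \<Longrightarrow> fst g < n"
  by (auto simp: half_edges_def)

lemma invsD: "m \<in> invs A \<Longrightarrow> x \<in> A \<Longrightarrow> m x \<in> A \<and> m x \<noteq> x \<and> m (m x) = x"
  by (auto simp: invs_def)

lemma adj_G: "mg_adj (Gstar d n m) = {(fst g, fst (m g)) | g. g \<in> half_edges d n}"
  by (simp add: mg_adj_def)

lemma adj_GI: "g \<in> half_edges d n \<Longrightarrow> (fst g, fst (m g)) \<in> mg_adj (Gstar d n m)"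
  unfolding adj_G by blast

lemma adj_GE: "(x, y) \<in> mg_adj (Gstar d n m) \<Longrightarrow> \<exists>g\<in>half_edges d n. x = fst g \<and> y = fst (m g)"
  unfolding adj_G by blast

lemma adj_G_sym:
  assumes m: "m \<in> invs (half_edges d n)"
  shows "sym (mg_adj (Gstar d n m))"
proof (rule symI)
  fix x y assume "(x, y) \<in> mg_adj (Gstar d n m)"
  then obtain g where g: "g \<in> half_edges d n" "x = fst g" "y = fst (m g)" by (blast dest: adj_GE)
  then have "m g \<in> half_edges d n" "m (m g) = g" using invsD[OF m g(1)] by auto
  then show "(y, x) \<in> mg_adj (Gstar d n m)" using g adj_GI[of "m g" d n m] by simp
qed

lemma adj_G_lt:
  assumes m: "m \<in> invs (half_edges d n)" and xy: "(x, y) \<in> mg_adj (Gstar d n m)"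
  shows "x < n" "y < n"
proof -
  obtain g where g: "g \<in> half_edges d n" "x = fst g" "y = fst (m g)" using xy by (blast dest: adj_GE)
  then show "x < n" "y < n" using half_edges_fst[OF g(1)] half_edges_fst[of "m g"] invsD[OF m g(1)] by auto
qed

definition comp :: "(nat \<Rightarrow> nat \<Rightarrow> nat) \<Rightarrow> nat \<Rightarrow> ((nat \<times> nat) \<Rightarrow> (nat \<times> nat)) \<Rightarrow> nat \<Rightarrow> nat set" where
  "comp d n m u = {w \<in> {..<n}. (u, w) \<in> (mg_adj (Gstar d n m))\<^sup>*}"

lemma components_G: "mg_components (Gstar d n m) = {comp d n m u | u. u < n}"
  by (auto simp: mg_components_def comp_def)

lemma rtrancl_sym_G:
  assumes m: "m \<in> invs (half_edges d n)" and "(x, y) \<in> (mg_adj (Gstar d n m))\<^sup>*"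
  shows "(y, x) \<in> (mg_adj (Gstar d n m))\<^sup>*"
  using sym_rtrancl[OF adj_G_sym[OF m]] assms(2) by (auto simp: sym_def)

lemma comp_eq:
  assumes m: "m \<in> invs (half_edges d n)" and w: "w \<in> comp d n m u"
  shows "comp d n m w = comp d n m u"
proof -
  have uw: "(u, w) \<in> (mg_adj (Gstar d n m))\<^sup>*" using w by (simp add: comp_def)
  have wu: "(w, u) \<in> (mg_adj (Gstar d n m))\<^sup>*" by (rule rtrancl_sym_G[OF m uw])
  show ?thesis unfolding comp_def using uw wu by (auto intro: rtrancl_trans)
qed

lemma comps_disjoint:
  assumes m: "m \<in> invs (half_edges d n)" and C: "C \<in> mg_components (Gstar d n m)"
    and C': "C' \<in> mg_components (Gstar d n m)" and ne: "C \<inter> C' \<noteq> {}"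
  shows "C = C'"
proof -
  obtain u u' where u: "C = comp d n m u" and u': "C' = comp d n m u'"
    using C C' by (auto simp: components_G)
  obtain w where "w \<in> C" "w \<in> C'" using ne by auto
  then show ?thesis using comp_eq[OF m, of w u] comp_eq[OF m, of w u'] u u' by simp
qed

lemma comp_sub: "C \<in> mg_components (Gstar d n m) \<Longrightarrow> C \<subseteq> {..<n}"
  by (auto simp: components_G comp_def)

lemma comp_self: "u < n \<Longrightarrow> u \<in> comp d n m u"
  by (simp add: comp_def)

lemma comp_closed:
  assumes m: "m \<in> invs (half_edges d n)" and C: "C \<in> mg_components (Gstar d n m)"
    and g: "g \<in> half_edges d n" and gC: "fst g \<in> C"
  shows "fst (m g) \<in> C"
proof -
  obtain u where u: "C = comp d n m u" using C by (auto simp: components_G)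
  have "(fst g, fst (m g)) \<in> mg_adj (Gstar d n m)" using g by (rule adj_GI)
  moreover have "(u, fst g) \<in> (mg_adj (Gstar d n m))\<^sup>*" using gC u by (simp add: comp_def)
  moreover have "fst (m g) < n" using invsD[OF m g] half_edges_fst[of "m g"] by auto
  ultimately show ?thesis using u by (auto simp: comp_def)
qed

lemma finite_components: "finite (mg_components (Gstar d n m))"
  unfolding components_G by simp

lemma restrict_G_simps[simp]:
  "verts (mg_restrict (Gstar d n m) C) = C"
  "halfs (mg_restrict (Gstar d n m) C) = {g \<in> half_edges d n. fst g \<in> C}"
  "owner (mg_restrict (Gstar d n m) C) = fst"
  "mate (mg_restrict (Gstar d n m) C) = m"
  by (simp_all add: mg_restrict_def)

lemma wf_restrict_G:
  assumes m: "m \<in> invs (half_edges d n)" and C: "C \<in> mg_components (Gstar d n m)"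
  shows "mg_wf (mg_restrict (Gstar d n m) C)"
  unfolding mg_wf_def using comp_sub[OF C] comp_closed[OF m C] invsD[OF m]
  by (auto intro: finite_subset)

lemma emb_props:
  assumes e: "(\<phi>, \<sigma>) \<in> emb H d n m"
  shows "\<phi> \<in> verts H \<rightarrow>\<^sub>E {..<n}" "inj_on \<phi> (verts H)" "\<And>u. u \<in> verts H \<Longrightarrow> d n (\<phi> u) = mg_deg H u"
    "\<sigma> \<in> halfs H \<rightarrow>\<^sub>E half_edges d n" "inj_on \<sigma> (halfs H)" "\<And>h. h \<in> halfs H \<Longrightarrow> fst (\<sigma> h) = \<phi> (owner H h)"
    "\<And>h. h \<in> halfs H \<Longrightarrow> m (\<sigma> h) = \<sigma> (mate H h)"
  using e by (auto simp: emb_def place_def colinj_def)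

lemma emb_sigma_fibre:
  assumes wf: "mg_wf H" and e: "(\<phi>, \<sigma>) \<in> emb H d n m" and u: "u \<in> verts H"
  shows "\<sigma> ` {h \<in> halfs H. owner H h = u} = {g \<in> half_edges d n. fst g = \<phi> u}"
proof (rule card_subset_eq)
  show "finite {g \<in> half_edges d n. fst g = \<phi> u}" by simp
  show "\<sigma> ` {h \<in> halfs H. owner H h = u} \<subseteq> {g \<in> half_edges d n. fst g = \<phi> u}"
    using emb_props[OF e] by auto
  have "card (\<sigma> ` {h \<in> halfs H. owner H h = u}) = card {h \<in> halfs H. owner H h = u}"
    using emb_props(5)[OF e] by (intro card_image) (auto intro: inj_on_subset)
  also have "\<dots> = d n (\<phi> u)" using emb_props(3)[OF e u] by (simp add: mg_deg_def)
  also have "\<dots> = card {g \<in> half_edges d n. fst g = \<phi> u}"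
  proof -
    have "\<phi> u < n" using emb_props(1)[OF e] u by (auto simp: PiE_iff)
    then show ?thesis using card_half_edges_at[of "\<phi> u" n d] by simp
  qed
  finally show "card (\<sigma> ` {h \<in> halfs H. owner H h = u}) = card {g \<in> half_edges d n. fst g = \<phi> u}" .
qed

lemma emb_sigma_image:
  assumes wf: "mg_wf H" and e: "(\<phi>, \<sigma>) \<in> emb H d n m"
  shows "\<sigma> ` halfs H = {g \<in> half_edges d n. fst g \<in> \<phi> ` verts H}"
proof
  show "\<sigma> ` halfs H \<subseteq> {g \<in> half_edges d n. fst g \<in> \<phi> ` verts H}"
    using emb_props[OF e] wfD(3)[OF wf] by auto
  show "{g \<in> half_edges d n. fst g \<in> \<phi> ` verts H} \<subseteq> \<sigma> ` halfs H"
  proof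
    fix g assume "g \<in> {g \<in> half_edges d n. fst g \<in> \<phi> ` verts H}"
    then obtain u where u: "u \<in> verts H" "g \<in> half_edges d n" "fst g = \<phi> u" by auto
    then have "g \<in> \<sigma> ` {h \<in> halfs H. owner H h = u}" using emb_sigma_fibre[OF wf e u(1)] by auto
    then show "g \<in> \<sigma> ` halfs H" by auto
  qed
qed

lemma emb_component:
  assumes wf: "mg_wf H" and conn: "mg_connected H" and m: "m \<in> invs (half_edges d n)"
    and e: "(\<phi>, \<sigma>) \<in> emb H d n m"
  shows "\<phi> ` verts H \<in> mg_components (Gstar d n m)"
    and "(\<phi>, \<sigma>) \<in> isoset H (mg_restrict (Gstar d n m) (\<phi> ` verts H))"
proof -
  let ?C = "\<phi> ` verts H"
  let ?A = "mg_adj (Gstar d n m)"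
  obtain u0 where u0: "u0 \<in> verts H" using conn by (auto simp: mg_connected_def)
  have pn: "\<phi> u < n" if "u \<in> verts H" for u using emb_props(1)[OF e] that by auto
  have adjmap: "(\<phi> u, \<phi> w) \<in> ?A" if uw: "(u, w) \<in> mg_adj H" for u w
  proof -
    obtain h where h: "h \<in> halfs H" "u = owner H h" "w = owner H (mate H h)"
      using uw unfolding mg_adj_def by blast
    have "\<sigma> h \<in> half_edges d n" using emb_props(4)[OF e] h by auto
    moreover have "fst (\<sigma> h) = \<phi> u" using emb_props(6)[OF e h(1)] h by simp
    moreover have "fst (m (\<sigma> h)) = \<phi> w"
      using emb_props(7)[OF e h(1)] emb_props(6)[OF e wfD(4)[OF wf h(1)]] h by simp
    ultimately show ?thesis using adj_GI[of "\<sigma> h" d n m] by simp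
  qed
  have rtmap: "(\<phi> u, \<phi> w) \<in> ?A\<^sup>*" if "(u, w) \<in> (mg_adj H)\<^sup>*" for u w
    using that
  proof (induction rule: rtrancl_induct)
    case base then show ?case by simp
  next
    case (step y z) then show ?case using adjmap by (meson rtrancl.rtrancl_into_rtrancl)
  qed
  have simg: "\<sigma> ` halfs H = {g \<in> half_edges d n. fst g \<in> ?C}" by (rule emb_sigma_image[OF wf e])
  have closed: "y \<in> ?C" if xy: "x \<in> ?C" "(x, y) \<in> ?A" for x y
  proof -
    obtain g where g: "g \<in> half_edges d n" "x = fst g" "y = fst (m g)" using xy(2) by (blast dest: adj_GE)
    then have "g \<in> \<sigma> ` halfs H" using simg xy(1) by auto
    then obtain h where h: "h \<in> halfs H" "g = \<sigma> h" by auto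
    have "m g = \<sigma> (mate H h)" using emb_props(7)[OF e h(1)] h by simp
    then have "y = \<phi> (owner H (mate H h))" using g emb_props(6)[OF e wfD(4)[OF wf h(1)]] by simp
    then show ?thesis using wfD(3)[OF wf wfD(4)[OF wf h(1)]] by auto
  qed
  have "?C = comp d n m (\<phi> u0)"
  proof
    show "?C \<subseteq> comp d n m (\<phi> u0)"
    proof
      fix x assume "x \<in> ?C"
      then obtain u where u: "u \<in> verts H" "x = \<phi> u" by auto
      have "(u0, u) \<in> (mg_adj H)\<^sup>*" using conn u0 u by (auto simp: mg_connected_def)
      then show "x \<in> comp d n m (\<phi> u0)" using rtmap u pn by (auto simp: comp_def)
    qed
    show "comp d n m (\<phi> u0) \<subseteq> ?C"
    proof
      fix y assume "y \<in> comp d n m (\<phi> u0)"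
      then have "(\<phi> u0, y) \<in> ?A\<^sup>*" by (simp add: comp_def)
      then show "y \<in> ?C"
      proof (induction rule: rtrancl_induct)
        case base then show ?case using u0 by simp
      next
        case (step y z) then show ?case using closed by blast
      qed
    qed
  qed
  then show C: "?C \<in> mg_components (Gstar d n m)"
    unfolding components_G using pn u0 by blast
  show "(\<phi>, \<sigma>) \<in> isoset H (mg_restrict (Gstar d n m) ?C)"
    unfolding isoset_def
  proof (intro CollectI case_prodI conjI)
    show "\<phi> \<in> extensional (verts H)" using emb_props(1)[OF e] by (simp add: PiE_def)
    show "\<sigma> \<in> extensional (halfs H)" using emb_props(4)[OF e] by (simp add: PiE_def)
    show "bij_betw \<phi> (verts H) (verts (mg_restrict (Gstar d n m) ?C))"
      using emb_props(2)[OF e] by (simp add: bij_betw_def)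
    show "bij_betw \<sigma> (halfs H) (halfs (mg_restrict (Gstar d n m) ?C))"
      using emb_props(5)[OF e] simg by (simp add: bij_betw_def)
    show "\<forall>h\<in>halfs H. owner (mg_restrict (Gstar d n m) ?C) (\<sigma> h) = \<phi> (owner H h) \<and>
        mate (mg_restrict (Gstar d n m) ?C) (\<sigma> h) = \<sigma> (mate H h)"
      using emb_props(6,7)[OF e] by simp
  qed
qed

lemma isoset_emb:
  assumes wf: "mg_wf H" and Cn: "C \<subseteq> {..<n}"
    and i: "(\<phi>, \<sigma>) \<in> isoset H (mg_restrict (Gstar d n m) C)"
  shows "(\<phi>, \<sigma>) \<in> emb H d n m" "\<phi> ` verts H = C"
proof -
  have ext: "\<phi> \<in> extensional (verts H)" "\<sigma> \<in> extensional (halfs H)"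
    and bv: "bij_betw \<phi> (verts H) C" and bh: "bij_betw \<sigma> (halfs H) {g \<in> half_edges d n. fst g \<in> C}"
    and c: "\<forall>h\<in>halfs H. fst (\<sigma> h) = \<phi> (owner H h) \<and> m (\<sigma> h) = \<sigma> (mate H h)"
    using i by (auto simp: isoset_def)
  show "\<phi> ` verts H = C" using bv by (simp add: bij_betw_def)
  have deg: "d n (\<phi> u) = mg_deg H u" if u: "u \<in> verts H" for u
  proof -
    have pu: "\<phi> u \<in> C" using bv u by (auto simp: bij_betw_def)
    have "\<sigma> ` {h \<in> halfs H. owner H h = u} = {g \<in> half_edges d n. fst g = \<phi> u}"
    proof
      show "\<sigma> ` {h \<in> halfs H. owner H h = u} \<subseteq> {g \<in> half_edges d n. fst g = \<phi> u}"
        using bh c by (auto simp: bij_betw_def)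
      show "{g \<in> half_edges d n. fst g = \<phi> u} \<subseteq> \<sigma> ` {h \<in> halfs H. owner H h = u}"
      proof
        fix g assume g: "g \<in> {g \<in> half_edges d n. fst g = \<phi> u}"
        then have "g \<in> \<sigma> ` halfs H" using bh pu by (auto simp: bij_betw_def)
        then obtain h where h: "h \<in> halfs H" "g = \<sigma> h" by auto
        then have "\<phi> (owner H h) = \<phi> u" using c g by auto
        then have "owner H h = u" using bv wfD(3)[OF wf h(1)] u by (auto simp: bij_betw_def inj_on_def)
        then show "g \<in> \<sigma> ` {h \<in> halfs H. owner H h = u}" using h by auto
      qed
    qed
    then have "card {g \<in> half_edges d n. fst g = \<phi> u} = card {h \<in> halfs H. owner H h = u}"
      using bh by (metis (no_types, lifting) bij_betw_def card_image inj_on_subset mem_Collect_eq subsetI)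
    then show ?thesis using card_half_edges_at[of "\<phi> u" n d] pu Cn by (auto simp: mg_deg_def)
  qed
  show "(\<phi>, \<sigma>) \<in> emb H d n m"
    unfolding emb_def place_def colinj_def
    using ext bv bh c deg Cn by (auto simp: bij_betw_def PiE_def Pi_def)
qed

definition Kfam :: "'j set \<Rightarrow> ('j \<Rightarrow> ('v, 'h) mgraph) \<Rightarrow> ('j \<times> 'v, 'j \<times> 'h) mgraph" where
  "Kfam J Hf = \<lparr>verts = SIGMA j:J. verts (Hf j), halfs = SIGMA j:J. halfs (Hf j),
     owner = (\<lambda>(j, h). (j, owner (Hf j) h)), mate = (\<lambda>(j, h). (j, mate (Hf j) h))\<rparr>"

lemma Kfam_simps[simp]:
  "verts (Kfam J Hf) = (SIGMA j:J. verts (Hf j))"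
  "halfs (Kfam J Hf) = (SIGMA j:J. halfs (Hf j))"
  "owner (Kfam J Hf) (j, h) = (j, owner (Hf j) h)"
  "mate (Kfam J Hf) (j, h) = (j, mate (Hf j) h)"
  by (simp_all add: Kfam_def)

lemma Kfam_wf:
  assumes "finite J" "\<forall>j\<in>J. mg_wf (Hf j)"
  shows "mg_wf (Kfam J Hf)"
  using assms unfolding mg_wf_def by (auto simp: Kfam_def)

lemma Kfam_deg:
  assumes "j \<in> J"
  shows "mg_deg (Kfam J Hf) (j, u) = mg_deg (Hf j) u"
proof -
  have "{x \<in> halfs (Kfam J Hf). owner (Kfam J Hf) x = (j, u)} = {j} \<times> {h \<in> halfs (Hf j). owner (Hf j) h = u}"
    using assms by auto
  then show ?thesis by (simp add: mg_deg_def card_cartesian_product_singleton)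
qed

definition joinE :: "'j set \<Rightarrow> ('j \<Rightarrow> ('v, 'h) mgraph) \<Rightarrow> ('j \<Rightarrow> ('v \<Rightarrow> nat) \<times> ('h \<Rightarrow> nat \<times> nat))
    \<Rightarrow> (('j \<times> 'v \<Rightarrow> nat) \<times> ('j \<times> 'h \<Rightarrow> nat \<times> nat))" where
  "joinE J Hf E = (restrict (\<lambda>(j, u). fst (E j) u) (SIGMA j:J. verts (Hf j)),
                   restrict (\<lambda>(j, h). snd (E j) h) (SIGMA j:J. halfs (Hf j)))"

definition CTset :: "'j set \<Rightarrow> ('j \<Rightarrow> ('v, 'h) mgraph) \<Rightarrow> (nat \<Rightarrow> nat \<Rightarrow> nat) \<Rightarrow> nat
    \<Rightarrow> ((nat \<times> nat) \<Rightarrow> (nat \<times> nat)) \<Rightarrow> ('j \<Rightarrow> nat set) set" where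
  "CTset J Hf d n m = {Ct \<in> J \<rightarrow>\<^sub>E mg_components (Gstar d n m). inj_on Ct J \<and>
      (\<forall>j\<in>J. mg_iso (mg_restrict (Gstar d n m) (Ct j)) (Hf j))}"

definition Blk where
  "Blk J Hf d n m Ct = joinE J Hf ` (PiE J (\<lambda>j. isoset (Hf j) (mg_restrict (Gstar d n m) (Ct j))))"

lemma emb_props2:
  assumes e: "e \<in> emb H d n m"
  shows "fst e \<in> verts H \<rightarrow>\<^sub>E {..<n}" "inj_on (fst e) (verts H)" "\<And>u. u \<in> verts H \<Longrightarrow> d n (fst e u) = mg_deg H u"
    "snd e \<in> halfs H \<rightarrow>\<^sub>E half_edges d n" "inj_on (snd e) (halfs H)" "\<And>h. h \<in> halfs H \<Longrightarrow> fst (snd e h) = fst e (owner H h)"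
    "\<And>h. h \<in> halfs H \<Longrightarrow> m (snd e h) = snd e (mate H h)"
  using emb_props[of "fst e" "snd e" H d n m] e by auto

context
  fixes J :: "'j set" and Hf :: "'j \<Rightarrow> ('v, 'h) mgraph" and d n m
  assumes finJ: "finite J" and wfH: "\<And>j. j \<in> J \<Longrightarrow> mg_wf (Hf j)"
    and connH: "\<And>j. j \<in> J \<Longrightarrow> mg_connected (Hf j)"
    and m: "m \<in> invs (half_edges d n)"
begin

lemma emb_Kfam_split:
  assumes e: "(\<phi>, \<sigma>) \<in> emb (Kfam J Hf) d n m" and j: "j \<in> J"
  shows "(restrict (\<lambda>u. \<phi> (j, u)) (verts (Hf j)), restrict (\<lambda>h. \<sigma> (j, h)) (halfs (Hf j))) \<in> emb (Hf j) d n m"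
proof -
  note ep = emb_props[OF e]
  note w = wfD[OF wfH[OF j]]
  have "restrict (\<lambda>u. \<phi> (j, u)) (verts (Hf j)) \<in> colinj (verts (Hf j)) {..<n} (d n) (mg_deg (Hf j))"
    unfolding colinj_def using ep(1,2,3) j Kfam_deg[OF j, of Hf]
    by (auto simp: PiE_iff inj_on_def)
  moreover have "restrict (\<lambda>h. \<sigma> (j, h)) (halfs (Hf j)) \<in> colinj (halfs (Hf j)) (half_edges d n) fst
      (\<lambda>h. restrict (\<lambda>u. \<phi> (j, u)) (verts (Hf j)) (owner (Hf j) h))"
    unfolding colinj_def using ep(4,5,6) j w(3)
    by (auto simp: PiE_iff inj_on_def)
  moreover have "\<forall>h\<in>halfs (Hf j). m (restrict (\<lambda>h. \<sigma> (j, h)) (halfs (Hf j)) h) =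
      restrict (\<lambda>h. \<sigma> (j, h)) (halfs (Hf j)) (mate (Hf j) h)"
    using ep(7) j w(4) by auto
  ultimately show ?thesis unfolding emb_def place_def by auto
qed

lemma joinE_emb:
  assumes Ct: "Ct \<in> CTset J Hf d n m"
    and E: "E \<in> PiE J (\<lambda>j. isoset (Hf j) (mg_restrict (Gstar d n m) (Ct j)))"
  shows "joinE J Hf E \<in> emb (Kfam J Hf) d n m"
proof -
  have CtC: "Ct j \<in> mg_components (Gstar d n m)" if "j \<in> J" for j using Ct that by (auto simp: CTset_def)
  have Ctinj: "inj_on Ct J" using Ct by (auto simp: CTset_def)
  have Ej: "E j \<in> emb (Hf j) d n m" "fst (E j) ` verts (Hf j) = Ct j" if j: "j \<in> J" for j
  proof -
    obtain \<phi> \<sigma> where pe: "E j = (\<phi>, \<sigma>)" by (cases "E j")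
    have "(\<phi>, \<sigma>) \<in> isoset (Hf j) (mg_restrict (Gstar d n m) (Ct j))" using PiE_mem[OF E j] pe by simp
    from isoset_emb[OF wfH[OF j] comp_sub[OF CtC[OF j]] this]
    show "E j \<in> emb (Hf j) d n m" "fst (E j) ` verts (Hf j) = Ct j" using pe by auto
  qed
  have disj: "j = j'" if "j \<in> J" "j' \<in> J" "x \<in> Ct j" "x \<in> Ct j'" for j j' x
  proof (rule ccontr)
    assume "j \<noteq> j'"
    then have "Ct j \<noteq> Ct j'" using Ctinj that by (auto simp: inj_on_def)
    then show False using comps_disjoint[OF m CtC[OF that(1)] CtC[OF that(2)]] that by auto
  qed
  define \<phi> where "\<phi> = restrict (\<lambda>(j, u). fst (E j) u) (SIGMA j:J. verts (Hf j))"
  define \<sigma> where "\<sigma> = restrict (\<lambda>(j, h). snd (E j) h) (SIGMA j:J. halfs (Hf j))"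
  have jE: "joinE J Hf E = (\<phi>, \<sigma>)" by (simp add: joinE_def \<phi>_def \<sigma>_def)
  have phiv: "\<phi> (j, u) = fst (E j) u" if "j \<in> J" "u \<in> verts (Hf j)" for j u
    using that by (simp add: \<phi>_def)
  have sigv: "\<sigma> (j, h) = snd (E j) h" if "j \<in> J" "h \<in> halfs (Hf j)" for j h
    using that by (simp add: \<sigma>_def)
  have phiC: "\<phi> (j, u) \<in> Ct j" if "j \<in> J" "u \<in> verts (Hf j)" for j u
    using Ej(2)[OF that(1)] phiv[OF that] that by auto
  have inphi: "inj_on \<phi> (verts (Kfam J Hf))"
  proof (rule inj_onI, clarsimp)
    fix j u j' u' assume a: "j \<in> J" "u \<in> verts (Hf j)" "j' \<in> J" "u' \<in> verts (Hf j')" "\<phi> (j, u) = \<phi> (j', u')"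
    have "j = j'" using disj[OF a(1,3) phiC[OF a(1,2)]] phiC[OF a(3,4)] a(5) by simp
    moreover have "inj_on (fst (E j)) (verts (Hf j))" using emb_props2(2)[OF Ej(1)[OF a(1)]] by simp
    ultimately show "j = j' \<and> u = u'" using a phiv by (auto simp: inj_on_def)
  qed
  have phiP: "\<phi> \<in> colinj (verts (Kfam J Hf)) {..<n} (d n) (mg_deg (Kfam J Hf))"
    unfolding colinj_def
  proof (intro CollectI conjI ballI)
    show "\<phi> \<in> verts (Kfam J Hf) \<rightarrow>\<^sub>E {..<n}"
      using phiC comp_sub[OF CtC] by (auto simp: \<phi>_def PiE_iff)
    show "inj_on \<phi> (verts (Kfam J Hf))" by (rule inphi)
    fix x assume "x \<in> verts (Kfam J Hf)"
    then obtain j u where x: "x = (j, u)" "j \<in> J" "u \<in> verts (Hf j)" by auto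
    show "d n (\<phi> x) = mg_deg (Kfam J Hf) x"
      using emb_props2(3)[OF Ej(1)[OF x(2)]] x phiv Kfam_deg[OF x(2), of Hf u] by simp
  qed
  have sigP: "\<sigma> \<in> colinj (halfs (Kfam J Hf)) (half_edges d n) fst (\<lambda>h. \<phi> (owner (Kfam J Hf) h))"
    unfolding colinj_def
  proof (intro CollectI conjI ballI)
    show "\<sigma> \<in> halfs (Kfam J Hf) \<rightarrow>\<^sub>E half_edges d n"
      using emb_props2(4)[OF Ej(1)] by (force simp: \<sigma>_def PiE_iff)
    have fstsig: "fst (\<sigma> (j, h)) = \<phi> (j, owner (Hf j) h)" if "j \<in> J" "h \<in> halfs (Hf j)" for j h
      using emb_props2(6)[OF Ej(1)[OF that(1)]] that sigv phiv wfD(3)[OF wfH[OF that(1)]]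
      by simp
    show "inj_on \<sigma> (halfs (Kfam J Hf))"
    proof (rule inj_onI, clarsimp)
      fix j h j' h' assume a: "j \<in> J" "h \<in> halfs (Hf j)" "j' \<in> J" "h' \<in> halfs (Hf j')" "\<sigma> (j, h) = \<sigma> (j', h')"
      have "\<phi> (j, owner (Hf j) h) = \<phi> (j', owner (Hf j') h')" using fstsig[OF a(1,2)] fstsig[OF a(3,4)] a(5) by simp
      then have "j = j'" using disj[OF a(1,3)] phiC[OF a(1) wfD(3)[OF wfH[OF a(1)] a(2)]]
          phiC[OF a(3) wfD(3)[OF wfH[OF a(3)] a(4)]] by simp
      moreover have "inj_on (snd (E j)) (halfs (Hf j))" using emb_props2(5)[OF Ej(1)[OF a(1)]] by simp
      ultimately show "j = j' \<and> h = h'" using a sigv by (auto simp: inj_on_def)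
    qed
    fix x assume "x \<in> halfs (Kfam J Hf)"
    then obtain j h where x: "x = (j, h)" "j \<in> J" "h \<in> halfs (Hf j)" by auto
    show "fst (\<sigma> x) = \<phi> (owner (Kfam J Hf) x)" using fstsig[OF x(2,3)] x by simp
  qed
  have compat: "\<forall>h\<in>halfs (Kfam J Hf). m (\<sigma> h) = \<sigma> (mate (Kfam J Hf) h)"
  proof
    fix x assume "x \<in> halfs (Kfam J Hf)"
    then obtain j h where x: "x = (j, h)" "j \<in> J" "h \<in> halfs (Hf j)" by auto
    show "m (\<sigma> x) = \<sigma> (mate (Kfam J Hf) x)"
      using emb_props2(7)[OF Ej(1)[OF x(2)]] x sigv wfD(4)[OF wfH[OF x(2)] x(3)] by simp
  qed
  show ?thesis unfolding jE emb_def place_def using phiP sigP compat by simp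
qed

lemma emb_Kfam_eq: "emb (Kfam J Hf) d n m = (\<Union>Ct\<in>CTset J Hf d n m. Blk J Hf d n m Ct)"
proof
  show "(\<Union>Ct\<in>CTset J Hf d n m. Blk J Hf d n m Ct) \<subseteq> emb (Kfam J Hf) d n m"
    using joinE_emb by (auto simp: Blk_def)
  show "emb (Kfam J Hf) d n m \<subseteq> (\<Union>Ct\<in>CTset J Hf d n m. Blk J Hf d n m Ct)"
  proof
    fix e assume e0: "e \<in> emb (Kfam J Hf) d n m"
    obtain \<phi> \<sigma> where pe: "e = (\<phi>, \<sigma>)" by (cases e)
    have e: "(\<phi>, \<sigma>) \<in> emb (Kfam J Hf) d n m" using e0 pe by simp
    define E where "E = (\<lambda>j\<in>J. (restrict (\<lambda>u. \<phi> (j, u)) (verts (Hf j)), restrict (\<lambda>h. \<sigma> (j, h)) (halfs (Hf j))))"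
    define Ct where "Ct = (\<lambda>j\<in>J. fst (E j) ` verts (Hf j))"
    have Ej: "E j \<in> emb (Hf j) d n m" if "j \<in> J" for j
      using emb_Kfam_split[OF e that] that by (simp add: E_def)
    have EjC: "fst (E j) ` verts (Hf j) \<in> mg_components (Gstar d n m)"
      and EjI: "E j \<in> isoset (Hf j) (mg_restrict (Gstar d n m) (fst (E j) ` verts (Hf j)))" if j: "j \<in> J" for j
    proof -
      obtain a b where ab: "E j = (a, b)" by (cases "E j")
      have "(a, b) \<in> emb (Hf j) d n m" using Ej[OF j] ab by simp
      from emb_component[OF wfH[OF j] connH[OF j] m this]
      show "fst (E j) ` verts (Hf j) \<in> mg_components (Gstar d n m)"
        "E j \<in> isoset (Hf j) (mg_restrict (Gstar d n m) (fst (E j) ` verts (Hf j)))" using ab by auto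
    qed
    have CtCT: "Ct \<in> CTset J Hf d n m"
      unfolding CTset_def
    proof (intro CollectI conjI ballI)
      show "Ct \<in> J \<rightarrow>\<^sub>E mg_components (Gstar d n m)" using EjC by (auto simp: Ct_def)
      show "inj_on Ct J"
      proof (rule inj_onI)
        fix j j' assume jj: "j \<in> J" "j' \<in> J" and eq: "Ct j = Ct j'"
        obtain u where u: "u \<in> verts (Hf j)" using connH[OF jj(1)] by (auto simp: mg_connected_def)
        have "\<phi> (j, u) \<in> Ct j'" using eq u jj by (auto simp: Ct_def E_def)
        then obtain u' where u': "u' \<in> verts (Hf j')" "\<phi> (j, u) = \<phi> (j', u')" using jj by (auto simp: Ct_def E_def)
        have "(j, u) = (j', u')"
          using emb_props(2)[OF e] u u' jj by (auto simp: inj_on_def)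
        then show "j = j'" by simp
      qed
      fix j assume j: "j \<in> J"
      have "mg_iso (Hf j) (mg_restrict (Gstar d n m) (Ct j))"
        using EjI[OF j] j mg_iso_isoset[OF wfH[OF j]] by (auto simp: Ct_def)
      then show "mg_iso (mg_restrict (Gstar d n m) (Ct j)) (Hf j)"
        using mg_iso_sym wfH[OF j] wf_restrict_G[OF m] EjC[OF j] j by (auto simp: Ct_def)
    qed
    have EP: "E \<in> PiE J (\<lambda>j. isoset (Hf j) (mg_restrict (Gstar d n m) (Ct j)))"
      using EjI by (auto simp: Ct_def PiE_iff E_def)
    have jeq: "joinE J Hf E = (\<phi>, \<sigma>)"
    proof -
      have "restrict (\<lambda>(j, u). fst (E j) u) (SIGMA j:J. verts (Hf j)) = \<phi>"
      proof
        fix x show "restrict (\<lambda>(j, u). fst (E j) u) (SIGMA j:J. verts (Hf j)) x = \<phi> x"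
          using emb_props(1)[OF e] by (cases x) (auto simp: E_def PiE_iff extensional_def)
      qed
      moreover have "restrict (\<lambda>(j, h). snd (E j) h) (SIGMA j:J. halfs (Hf j)) = \<sigma>"
      proof
        fix x show "restrict (\<lambda>(j, h). snd (E j) h) (SIGMA j:J. halfs (Hf j)) x = \<sigma> x"
          using emb_props(4)[OF e] by (cases x) (auto simp: E_def PiE_iff extensional_def)
      qed
      ultimately show ?thesis by (simp add: joinE_def)
    qed
    have "e \<in> Blk J Hf d n m Ct" unfolding Blk_def
      by (rule image_eqI[of e "joinE J Hf" E]) (use EP pe jeq in auto)
    then show "e \<in> (\<Union>Ct\<in>CTset J Hf d n m. Blk J Hf d n m Ct)"
      using CtCT by (rule UN_I[rotated])
  qed
qed

lemma joinE_inj: "inj_on (joinE J Hf) (PiE J (\<lambda>j. isoset (Hf j) (mg_restrict (Gstar d n m) (Ct j))))"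
proof (rule inj_onI)
  fix E E' assume E: "E \<in> PiE J (\<lambda>j. isoset (Hf j) (mg_restrict (Gstar d n m) (Ct j)))"
    and E': "E' \<in> PiE J (\<lambda>j. isoset (Hf j) (mg_restrict (Gstar d n m) (Ct j)))"
    and eq: "joinE J Hf E = joinE J Hf E'"
  show "E = E'"
  proof
    fix j show "E j = E' j"
    proof (cases "j \<in> J")
      case False then show ?thesis using E E' by (auto simp: PiE_iff extensional_def)
    next
      case True
      have m1: "E j \<in> isoset (Hf j) (mg_restrict (Gstar d n m) (Ct j))" using PiE_mem[OF E True] .
      have m2: "E' j \<in> isoset (Hf j) (mg_restrict (Gstar d n m) (Ct j))" using PiE_mem[OF E' True] .
      have i1: "fst (E j) \<in> extensional (verts (Hf j))" "snd (E j) \<in> extensional (halfs (Hf j))"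
        using m1 by (cases "E j"; auto simp: isoset_def)+
      have i2: "fst (E' j) \<in> extensional (verts (Hf j))" "snd (E' j) \<in> extensional (halfs (Hf j))"
        using m2 by (cases "E' j"; auto simp: isoset_def)+
      have "fst (E j) = fst (E' j)"
      proof
        fix u show "fst (E j) u = fst (E' j) u"
        proof (cases "u \<in> verts (Hf j)")
          case True2: True
          then show ?thesis using fun_cong[OF arg_cong[OF eq, of fst], of "(j, u)"] True by (simp add: joinE_def)
        next
          case False then show ?thesis using i1 i2 by (auto simp: extensional_def)
        qed
      qed
      moreover have "snd (E j) = snd (E' j)"
      proof
        fix u show "snd (E j) u = snd (E' j) u"
        proof (cases "u \<in> halfs (Hf j)")
          case True2: True
          then show ?thesis using fun_cong[OF arg_cong[OF eq, of snd], of "(j, u)"] True by (simp add: joinE_def)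
        next
          case False then show ?thesis using i1 i2 by (auto simp: extensional_def)
        qed
      qed
      ultimately show ?thesis by (simp add: prod_eq_iff)
    qed
  qed
qed

lemma Blk_disjoint:
  assumes Ct: "Ct \<in> CTset J Hf d n m" and Ct': "Ct' \<in> CTset J Hf d n m" and ne: "Ct \<noteq> Ct'"
  shows "Blk J Hf d n m Ct \<inter> Blk J Hf d n m Ct' = {}"
proof (rule ccontr)
  assume "Blk J Hf d n m Ct \<inter> Blk J Hf d n m Ct' \<noteq> {}"
  then obtain E E' where E: "E \<in> PiE J (\<lambda>j. isoset (Hf j) (mg_restrict (Gstar d n m) (Ct j)))"
    and E': "E' \<in> PiE J (\<lambda>j. isoset (Hf j) (mg_restrict (Gstar d n m) (Ct' j)))"
    and eq: "joinE J Hf E = joinE J Hf E'" unfolding Blk_def by blast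
  have "Ct = Ct'"
  proof
    fix j show "Ct j = Ct' j"
    proof (cases "j \<in> J")
      case False then show ?thesis using Ct Ct' by (auto simp: CTset_def PiE_iff extensional_def)
    next
      case True
      have CtC: "Ct j \<in> mg_components (Gstar d n m)" "Ct' j \<in> mg_components (Gstar d n m)"
        using Ct Ct' True by (auto simp: CTset_def)
      have a: "fst (E j) ` verts (Hf j) = Ct j"
        using isoset_emb(2)[OF wfH[OF True] comp_sub[OF CtC(1)], of "fst (E j)" "snd (E j)"] PiE_mem[OF E True] by simp
      have b: "fst (E' j) ` verts (Hf j) = Ct' j"
        using isoset_emb(2)[OF wfH[OF True] comp_sub[OF CtC(2)], of "fst (E' j)" "snd (E' j)"] PiE_mem[OF E' True] by simp
      have "\<forall>u\<in>verts (Hf j). fst (E j) u = fst (E' j) u"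
      proof
        fix u assume u: "u \<in> verts (Hf j)"
        have "fst (joinE J Hf E) (j, u) = fst (joinE J Hf E') (j, u)" using eq by simp
        then show "fst (E j) u = fst (E' j) u" using u True by (simp add: joinE_def)
      qed
      then show ?thesis using a b by (auto simp: image_def)
    qed
  qed
  then show False using ne by simp
qed

lemma card_emb_Kfam: "card (emb (Kfam J Hf) d n m) = card (CTset J Hf d n m) * (\<Prod>j\<in>J. mg_aut (Hf j))"
proof -
  have finCT: "finite (CTset J Hf d n m)"
  proof (rule finite_subset)
    show "CTset J Hf d n m \<subseteq> J \<rightarrow>\<^sub>E mg_components (Gstar d n m)" by (auto simp: CTset_def)
    show "finite (J \<rightarrow>\<^sub>E mg_components (Gstar d n m))" using finJ finite_components by (intro finite_PiE) auto
  qed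
  have cardB: "card (Blk J Hf d n m Ct) = (\<Prod>j\<in>J. mg_aut (Hf j))" if Ct: "Ct \<in> CTset J Hf d n m" for Ct
  proof -
    have "card (Blk J Hf d n m Ct) = card (PiE J (\<lambda>j. isoset (Hf j) (mg_restrict (Gstar d n m) (Ct j))))"
      unfolding Blk_def by (rule card_image[OF joinE_inj])
    also have "\<dots> = (\<Prod>j\<in>J. card (isoset (Hf j) (mg_restrict (Gstar d n m) (Ct j))))"
      using finJ by (rule card_PiE)
    also have "\<dots> = (\<Prod>j\<in>J. mg_aut (Hf j))"
    proof (rule prod.cong[OF refl])
      fix j assume j: "j \<in> J"
      have CtC: "Ct j \<in> mg_components (Gstar d n m)" using Ct j by (auto simp: CTset_def)
      have "mg_iso (mg_restrict (Gstar d n m) (Ct j)) (Hf j)" using Ct j by (auto simp: CTset_def)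
      then have "mg_iso (Hf j) (mg_restrict (Gstar d n m) (Ct j))"
        using mg_iso_sym wfH[OF j] wf_restrict_G[OF m CtC] by blast
      then show "card (isoset (Hf j) (mg_restrict (Gstar d n m) (Ct j))) = mg_aut (Hf j)"
        using card_isoset_eq_aut wfH[OF j] wf_restrict_G[OF m CtC] by blast
    qed
    finally show ?thesis .
  qed
  have "card (emb (Kfam J Hf) d n m) = (\<Sum>Ct\<in>CTset J Hf d n m. card (Blk J Hf d n m Ct))"
    unfolding emb_Kfam_eq
  proof (rule card_UN_disjoint[OF finCT])
    show "\<forall>i\<in>CTset J Hf d n m. finite (Blk J Hf d n m i)"
    proof
      fix Ct assume "Ct \<in> CTset J Hf d n m"
      have "finite (emb (Kfam J Hf) d n m)"
        by (rule finite_subset[of _ "place (Kfam J Hf) d n"])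
           (auto simp: emb_def intro!: finite_place finJ wfD[OF wfH])
      then show "finite (Blk J Hf d n m Ct)" using emb_Kfam_eq \<open>Ct \<in> _\<close>
        by (metis UN_upper finite_subset)
    qed
    show "\<forall>i\<in>CTset J Hf d n m. \<forall>j\<in>CTset J Hf d n m. i \<noteq> j \<longrightarrow> Blk J Hf d n m i \<inter> Blk J Hf d n m j = {}"
      using Blk_disjoint by blast
  qed
  also have "\<dots> = card (CTset J Hf d n m) * (\<Prod>j\<in>J. mg_aut (Hf j))"
    using cardB by simp
  finally show ?thesis .
qed

end

lemma Exp_eq_sum:
  assumes ev: "even (\<Sum>i<n. d n i)"
  shows "Exp d n f = (\<Sum>m\<in>invs (half_edges d n). f m) / real (card (invs (half_edges d n)))"
proof -
  have ne: "invs (half_edges d n) \<noteq> {}"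
    using card_invs[of "half_edges d n"] FF_even_pos[OF ev] card_half_edges[of d n] by auto
  show ?thesis unfolding Exp_def CM_def matchings_invs
    by (rule integral_pmf_of_set[OF ne finite_invs[OF finite_half_edges]])
qed

lemma mg_aut_pos: "mg_wf A \<Longrightarrow> mg_aut A > 0"
proof -
  assume wf: "mg_wf A"
  have "(restrict id (verts A), restrict id (halfs A)) \<in> isoset A A"
    using wfD[OF wf] by (auto simp: isoset_def bij_betw_def inj_on_def)
  moreover have "finite (isoset A A)" using wfD[OF wf] by (intro isoset_finite) auto
  ultimately show ?thesis unfolding mg_aut_isoset by (auto simp: card_gt_0_iff)
qed

definition Jidx :: "nat list \<Rightarrow> (nat \<times> nat) set" where
  "Jidx rs = {(i, t). i < length rs \<and> t < rs ! i}"

lemma finite_Jidx[simp]: "finite (Jidx rs)"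
proof -
  have "Jidx rs \<subseteq> {..<length rs} \<times> {..<Max (insert 0 (set rs))}"
  proof
    fix x assume "x \<in> Jidx rs"
    then obtain i t where x: "x = (i, t)" "i < length rs" "t < rs ! i" by (auto simp: Jidx_def)
    have "rs ! i \<le> Max (insert 0 (set rs))" using x(2) by (intro Max_ge) auto
    then have "t < Max (insert 0 (set rs))" using x(3) by linarith
    then show "x \<in> {..<length rs} \<times> {..<Max (insert 0 (set rs))}" using x by auto
  qed
  then show ?thesis by (rule finite_subset) auto
qed

definition colC where
  "colC Hs d n m C = (if \<exists>i<length Hs. mg_iso (mg_restrict (Gstar d n m) C) (Hs ! i)
      then (SOME i. i < length Hs \<and> mg_iso (mg_restrict (Gstar d n m) C) (Hs ! i)) else length Hs)"

context
  fixes Hs :: "('v, 'h) mgraph list" and rs :: "nat list" and d n m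
  assumes len: "length rs = length Hs"
    and wfH: "\<And>H. H \<in> set Hs \<Longrightarrow> mg_wf H"
    and connH: "\<And>H. H \<in> set Hs \<Longrightarrow> mg_connected H"
    and noniso: "\<And>i j. i < length Hs \<Longrightarrow> j < length Hs \<Longrightarrow> i \<noteq> j \<Longrightarrow> \<not> mg_iso (Hs ! i) (Hs ! j)"
    and m: "m \<in> invs (half_edges d n)"
begin

lemma colC_some:
  assumes ex: "\<exists>i<length Hs. mg_iso (mg_restrict (Gstar d n m) C) (Hs ! i)"
  shows "colC Hs d n m C < length Hs \<and> mg_iso (mg_restrict (Gstar d n m) C) (Hs ! colC Hs d n m C)"
proof -
  have "colC Hs d n m C = (SOME i. i < length Hs \<and> mg_iso (mg_restrict (Gstar d n m) C) (Hs ! i))"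
    using ex by (simp add: colC_def)
  then show ?thesis using someI_ex[OF ex] by simp
qed

lemma colC_iff:
  assumes C: "C \<in> mg_components (Gstar d n m)" and i: "i < length Hs"
  shows "colC Hs d n m C = i \<longleftrightarrow> mg_iso (mg_restrict (Gstar d n m) C) (Hs ! i)"
proof -
  have wfC: "mg_wf (mg_restrict (Gstar d n m) C)" by (rule wf_restrict_G[OF m C])
  have uniq: "i1 = i2" if "i1 < length Hs" "i2 < length Hs" "mg_iso (mg_restrict (Gstar d n m) C) (Hs ! i1)"
    "mg_iso (mg_restrict (Gstar d n m) C) (Hs ! i2)" for i1 i2
  proof (rule ccontr)
    assume ne: "i1 \<noteq> i2"
    have w1: "mg_wf (Hs ! i1)" using wfH that(1) by auto
    have "mg_iso (Hs ! i1) (mg_restrict (Gstar d n m) C)" using mg_iso_sym[OF wfC w1 that(3)] .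
    then have "mg_iso (Hs ! i1) (Hs ! i2)" using mg_iso_trans[OF w1 _ that(4)] by blast
    then show False using noniso[OF that(1,2) ne] by simp
  qed
  show ?thesis
  proof
    assume a: "colC Hs d n m C = i"
    show "mg_iso (mg_restrict (Gstar d n m) C) (Hs ! i)"
    proof (cases "\<exists>i<length Hs. mg_iso (mg_restrict (Gstar d n m) C) (Hs ! i)")
      case True
      then have "colC Hs d n m C < length Hs \<and> mg_iso (mg_restrict (Gstar d n m) C) (Hs ! colC Hs d n m C)"
        by (rule colC_some)
      then show ?thesis using a by simp
    next
      case False
      have "colC Hs d n m C = length Hs" unfolding colC_def by (rule if_not_P[OF False])
      then show ?thesis using a i by simp
    qed
  next
    assume b: "mg_iso (mg_restrict (Gstar d n m) C) (Hs ! i)"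
    then have ex: "\<exists>i<length Hs. mg_iso (mg_restrict (Gstar d n m) C) (Hs ! i)" using i by blast
    then have "colC Hs d n m C < length Hs \<and> mg_iso (mg_restrict (Gstar d n m) C) (Hs ! colC Hs d n m C)"
      by (rule colC_some)
    then show "colC Hs d n m C = i" using uniq[OF _ i _ b] by blast
  qed
qed

lemma CTset_colinj:
  "CTset (Jidx rs) (\<lambda>(i, t). Hs ! i) d n m = colinj (Jidx rs) (mg_components (Gstar d n m)) (colC Hs d n m) fst"
proof -
  have "(\<forall>j\<in>Jidx rs. mg_iso (mg_restrict (Gstar d n m) (Ct j)) ((\<lambda>(i, t). Hs ! i) j)) \<longleftrightarrow>
        (\<forall>j\<in>Jidx rs. colC Hs d n m (Ct j) = fst j)"
    if Ct: "Ct \<in> Jidx rs \<rightarrow>\<^sub>E mg_components (Gstar d n m)" for Ct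
  proof -
    have "mg_iso (mg_restrict (Gstar d n m) (Ct j)) ((\<lambda>(i, t). Hs ! i) j) \<longleftrightarrow> colC Hs d n m (Ct j) = fst j"
      if j: "j \<in> Jidx rs" for j
    proof -
      obtain i t where jt: "j = (i, t)" "i < length Hs" using j len by (auto simp: Jidx_def)
      have "Ct j \<in> mg_components (Gstar d n m)" using Ct j by auto
      then show ?thesis using colC_iff[of "Ct j" i] jt by simp
    qed
    then show ?thesis by blast
  qed
  then show ?thesis unfolding CTset_def colinj_def by blast
qed

lemma card_CTset:
  "real (card (CTset (Jidx rs) (\<lambda>(i, t). Hs ! i) d n m)) = (\<Prod>i<length Hs. ffall (real (Ycount (Hs ! i) d n m)) (rs ! i))"
proof -
  have "real (card (CTset (Jidx rs) (\<lambda>(i, t). Hs ! i) d n m))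
      = (\<Prod>k\<in>fst ` Jidx rs. ffall (real (card {C \<in> mg_components (Gstar d n m). colC Hs d n m C = k}))
           (card {j\<in>Jidx rs. fst j = k}))"
    unfolding CTset_colinj by (rule card_colinj) (simp_all add: finite_components)
  also have "\<dots> = (\<Prod>k\<in>fst ` Jidx rs. ffall (real (Ycount (Hs ! k) d n m)) (rs ! k))"
  proof (rule prod.cong[OF refl])
    fix k assume "k \<in> fst ` Jidx rs"
    then have k: "k < length Hs" using len by (auto simp: Jidx_def)
    have "{C \<in> mg_components (Gstar d n m). colC Hs d n m C = k}
        = {C \<in> mg_components (Gstar d n m). mg_iso (mg_restrict (Gstar d n m) C) (Hs ! k)}"
      using colC_iff[OF _ k] by auto
    moreover have "{j\<in>Jidx rs. fst j = k} = {k} \<times> {..<rs ! k}" using k len by (auto simp: Jidx_def)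
    ultimately show "ffall (real (card {C \<in> mg_components (Gstar d n m). colC Hs d n m C = k})) (card {j\<in>Jidx rs. fst j = k})
        = ffall (real (Ycount (Hs ! k) d n m)) (rs ! k)"
      by (simp add: Ycount_def)
  qed
  also have "\<dots> = (\<Prod>k<length Hs. ffall (real (Ycount (Hs ! k) d n m)) (rs ! k))"
  proof (rule prod.mono_neutral_left)
    show "fst ` Jidx rs \<subseteq> {..<length Hs}" using len by (auto simp: Jidx_def)
    show "\<forall>i\<in>{..<length Hs} - fst ` Jidx rs. ffall (real (Ycount (Hs ! i) d n m)) (rs ! i) = 1"
    proof
      fix i assume i: "i \<in> {..<length Hs} - fst ` Jidx rs"
      have "rs ! i = 0"
      proof (rule ccontr)
        assume "rs ! i \<noteq> 0"
        then have "(i, 0) \<in> Jidx rs" using i len by (auto simp: Jidx_def)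
        then show False using i by force
      qed
      then show "ffall (real (Ycount (Hs ! i) d n m)) (rs ! i) = 1" by simp
    qed
  qed simp
  finally show ?thesis .
qed

lemma card_emb_list:
  "real (card (emb (Kfam (Jidx rs) (\<lambda>(i, t). Hs ! i)) d n m))
    = (\<Prod>i<length Hs. ffall (real (Ycount (Hs ! i) d n m)) (rs ! i)) * real (\<Prod>j\<in>Jidx rs. mg_aut (Hs ! fst j))"
proof -
  have wf': "\<And>j. j \<in> Jidx rs \<Longrightarrow> mg_wf ((\<lambda>(i, t). Hs ! i) j)"
    and conn': "\<And>j. j \<in> Jidx rs \<Longrightarrow> mg_connected ((\<lambda>(i, t). Hs ! i) j)"
    using wfH connH len by (auto simp: Jidx_def)
  have "card (emb (Kfam (Jidx rs) (\<lambda>(i, t). Hs ! i)) d n m)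
     = card (CTset (Jidx rs) (\<lambda>(i, t). Hs ! i) d n m) * (\<Prod>j\<in>Jidx rs. mg_aut ((\<lambda>(i, t). Hs ! i) j))"
    by (rule card_emb_Kfam[OF finite_Jidx wf' conn' m])
  moreover have "(\<Prod>j\<in>Jidx rs. mg_aut ((\<lambda>(i, t). Hs ! i) j)) = (\<Prod>j\<in>Jidx rs. mg_aut (Hs ! fst j))"
    by (rule prod.cong) auto
  ultimately show ?thesis using card_CTset by simp
qed

end

lemma Exp_ffall_list:
  fixes Hs :: "('v, 'h) mgraph list"
  assumes len: "length rs = length Hs"
    and wfH: "\<And>H. H \<in> set Hs \<Longrightarrow> mg_wf H"
    and connH: "\<And>H. H \<in> set Hs \<Longrightarrow> mg_connected H"
    and noniso: "\<And>i j. i < length Hs \<Longrightarrow> j < length Hs \<Longrightarrow> i \<noteq> j \<Longrightarrow> \<not> mg_iso (Hs ! i) (Hs ! j)"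
    and ev: "even (\<Sum>i<n. d n i)"
  shows "Exp d n (\<lambda>m. \<Prod>i<length Hs. ffall (real (Ycount (Hs ! i) d n m)) (rs ! i))
     = Exp d n (\<lambda>m. real (card (emb (Kfam (Jidx rs) (\<lambda>(i, t). Hs ! i)) d n m)))
       / real (\<Prod>j\<in>Jidx rs. mg_aut (Hs ! fst j))"
proof -
  let ?A = "real (\<Prod>j\<in>Jidx rs. mg_aut (Hs ! fst j))"
  have Apos: "?A > 0"
  proof -
    have "\<forall>j\<in>Jidx rs. mg_aut (Hs ! fst j) > 0"
    proof
      fix j assume "j \<in> Jidx rs"
      then have "fst j < length Hs" using len by (auto simp: Jidx_def)
      then have "Hs ! fst j \<in> set Hs" by (rule nth_mem)
      then show "mg_aut (Hs ! fst j) > 0" by (intro mg_aut_pos wfH)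
    qed
    then show ?thesis by (simp add: prod_pos)
  qed
  have pt: "(\<Prod>i<length Hs. ffall (real (Ycount (Hs ! i) d n m)) (rs ! i))
      = real (card (emb (Kfam (Jidx rs) (\<lambda>(i, t). Hs ! i)) d n m)) / ?A" if "m \<in> invs (half_edges d n)" for m
  proof -
    have e: "real (card (emb (Kfam (Jidx rs) (\<lambda>(i, t). Hs ! i)) d n m))
      = (\<Prod>i<length Hs. ffall (real (Ycount (Hs ! i) d n m)) (rs ! i)) * ?A"
      by (rule card_emb_list[OF len wfH connH noniso that])
    have A0: "?A \<noteq> 0" using Apos by linarith
    show ?thesis unfolding e by (rule nonzero_mult_div_cancel_right[OF A0, symmetric])
  qed
  show ?thesis unfolding Exp_eq_sum[where d=d and n=n, OF ev]
    by (simp add: pt sum_divide_distrib mult.commute)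
qed

lemma prod_lessThan_add: "(\<Prod>i<a + b. h i) = (\<Prod>i<a. h i) * (\<Prod>i<b. h (a + i))"
  for h :: "nat \<Rightarrow> 'a::comm_monoid_mult"
  by (induction b) (simp_all add: prod.lessThan_Suc mult_ac)

lemma sum_lessThan_add: "(\<Sum>i<a + b. h i) = (\<Sum>i<a. h i) + (\<Sum>i<b. h (a + i))"
  for h :: "nat \<Rightarrow> 'a::comm_monoid_add"
  by (induction b) (simp_all add: sum.lessThan_Suc add_ac)

lemma tele_prod:
  fixes f g :: "'i \<Rightarrow> nat \<Rightarrow> real"
  assumes "finite I"
    and "\<And>i. i \<in> I \<Longrightarrow> f i \<longlonglongrightarrow> L i" "\<And>i. i \<in> I \<Longrightarrow> g i \<longlonglongrightarrow> L i"
    and "\<And>i. i \<in> I \<Longrightarrow> (\<lambda>n. real n * (f i n - g i n)) \<longlonglongrightarrow> D i"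
  shows "(\<lambda>n. real n * ((\<Prod>i\<in>I. f i n) - (\<Prod>i\<in>I. g i n))) \<longlonglongrightarrow> (\<Sum>i\<in>I. D i * (\<Prod>j\<in>I - {i}. L j))"
  using assms
proof (induction I rule: finite_induct)
  case empty then show ?case by simp
next
  case (insert a I)
  have eq: "real n * ((\<Prod>i\<in>insert a I. f i n) - (\<Prod>i\<in>insert a I. g i n))
     = (real n * (f a n - g a n)) * (\<Prod>i\<in>I. f i n) + g a n * (real n * ((\<Prod>i\<in>I. f i n) - (\<Prod>i\<in>I. g i n)))" for n
    using insert.hyps by (simp add: algebra_simps)
  have lim: "(\<lambda>n. (real n * (f a n - g a n)) * (\<Prod>i\<in>I. f i n) + g a n * (real n * ((\<Prod>i\<in>I. f i n) - (\<Prod>i\<in>I. g i n))))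
      \<longlonglongrightarrow> D a * (\<Prod>i\<in>I. L i) + L a * (\<Sum>i\<in>I. D i * (\<Prod>j\<in>I - {i}. L j))"
    by (intro tendsto_intros insert.IH insert.prems) auto
  have "(\<Sum>i\<in>insert a I. D i * (\<Prod>j\<in>insert a I - {i}. L j))
      = D a * (\<Prod>i\<in>I. L i) + (\<Sum>i\<in>I. D i * (\<Prod>j\<in>insert a I - {i}. L j))"
    using insert.hyps by (simp add: sum.insert)
  also have "(\<Sum>i\<in>I. D i * (\<Prod>j\<in>insert a I - {i}. L j)) = L a * (\<Sum>i\<in>I. D i * (\<Prod>j\<in>I - {i}. L j))"
  proof -
    have "(\<Prod>j\<in>insert a I - {i}. L j) = L a * (\<Prod>j\<in>I - {i}. L j)" if "i \<in> I" for i
    proof -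
      have "insert a I - {i} = insert a (I - {i})" using that insert.hyps by auto
      then show ?thesis using insert.hyps by simp
    qed
    then show ?thesis by (simp add: sum_distrib_left mult_ac)
  qed
  finally show ?case unfolding eq using lim by simp
qed

definition Mn :: "(nat \<Rightarrow> nat \<Rightarrow> nat) \<Rightarrow> nat \<Rightarrow> nat" where
  "Mn d n = (\<Sum>i<n. d n i)"

definition Pabs :: "(nat \<Rightarrow> nat \<Rightarrow> nat) \<Rightarrow> nat \<Rightarrow> nat set \<Rightarrow> (nat \<Rightarrow> nat) \<Rightarrow> nat \<Rightarrow> real" where
  "Pabs d n S N e = (\<Prod>k\<in>S. ffall (real (nk d n k)) (N k)) * real (FF (Mn d n - 2 * e)) / real (FF (Mn d n))"

definition VF :: "(nat \<Rightarrow> nat \<Rightarrow> nat) \<Rightarrow> nat \<Rightarrow> nat set \<Rightarrow> (nat \<Rightarrow> nat) \<Rightarrow> real" where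
  "VF d n S N = (\<Prod>k\<in>S. \<Prod>i<N k. real (nk d n k) / real n - real i / real n)"

definition EF :: "(nat \<Rightarrow> nat \<Rightarrow> nat) \<Rightarrow> nat \<Rightarrow> nat \<Rightarrow> real" where
  "EF d n e = (\<Prod>i<e. 1 / (real (Mn d n) / real n - (1 + 2 * real i) / real n))"

lemma Pabs_support:
  assumes "finite S'" "S \<subseteq> S'" "\<And>k. k \<in> S' - S \<Longrightarrow> N k = 0"
  shows "Pabs d n S N e = Pabs d n S' N e"
proof -
  have "(\<Prod>k\<in>S. ffall (real (nk d n k)) (N k)) = (\<Prod>k\<in>S'. ffall (real (nk d n k)) (N k))"
    by (rule prod.mono_neutral_left) (use assms in auto)
  then show ?thesis by (simp add: Pabs_def)
qed

lemma Pabs_normalized: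
  assumes S: "finite S" and n: "n > 0" and ev: "even (Mn d n)" and Me: "2 * e < Mn d n"
  shows "Pabs d n S N e * real n ^ e / real n ^ (\<Sum>k\<in>S. N k) = VF d n S N * EF d n e"
proof -
  let ?M = "Mn d n"
  have FFpos: "real (FF (?M - 2 * e)) > 0" using FF_even_pos[of "?M - 2 * e"] ev Me by simp
  have st: "real (FF ?M) = real (FF (?M - 2 * e)) * (\<Prod>i<e. real ?M - 1 - 2 * real i)"
    using FF_step[OF ev] Me by simp
  have pos: "real ?M - 1 - 2 * real i > 0" if "i < e" for i using that Me by linarith
  have "real (FF (?M - 2 * e)) / real (FF ?M) * real n ^ e = (\<Prod>i<e. real n / (real ?M - 1 - 2 * real i))"
    using FFpos pos by (simp add: st prod_dividef)
  also have "\<dots> = EF d n e"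
    unfolding EF_def using n by (intro prod.cong refl) (simp add: field_simps)
  finally have E: "real (FF (?M - 2 * e)) / real (FF ?M) * real n ^ e = EF d n e" .
  have "(\<Prod>k\<in>S. ffall (real (nk d n k)) (N k)) / real n ^ (\<Sum>k\<in>S. N k)
      = (\<Prod>k\<in>S. ffall (real (nk d n k)) (N k) / real n ^ N k)"
    by (simp add: power_sum prod_dividef)
  also have "\<dots> = VF d n S N"
    unfolding VF_def ffall_def
  proof (intro prod.cong refl)
    fix k
    have "(\<Prod>i<N k. (real (nk d n k) - real i) / real n) = (\<Prod>i<N k. real (nk d n k) - real i) / real n ^ N k"
      by (simp add: prod_dividef)
    then show "(\<Prod>i<N k. real (nk d n k) - real i) / real n ^ N k =
        (\<Prod>i<N k. real (nk d n k) / real n - real i / real n)"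
      by (simp add: diff_divide_distrib)
  qed
  finally have V: "(\<Prod>k\<in>S. ffall (real (nk d n k)) (N k)) / real n ^ (\<Sum>k\<in>S. N k) = VF d n S N" .
  have "Pabs d n S N e * real n ^ e / real n ^ (\<Sum>k\<in>S. N k)
     = ((\<Prod>k\<in>S. ffall (real (nk d n k)) (N k)) / real n ^ (\<Sum>k\<in>S. N k)) *
       (real (FF (?M - 2 * e)) / real (FF ?M) * real n ^ e)"
    unfolding Pabs_def by (simp add: mult_ac divide_inverse)
  then show ?thesis unfolding V E by simp
qed

locale asym =
  fixes d :: "nat \<Rightarrow> nat \<Rightarrow> nat" and p :: "nat \<Rightarrow> real" and \<mu> :: real
  assumes even_sum: "\<And>n. n \<ge> 1 \<Longrightarrow> even (\<Sum>i<n. d n i)"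
    and A1_lim: "\<And>k. (\<lambda>n. real (nk d n k) / real n) \<longlonglongrightarrow> p k"
    and mu_pos: "\<mu> > 0"
    and A2: "(\<lambda>n. (\<Sum>i<n. real (d n i)) / real n) \<longlonglongrightarrow> \<mu>"
begin

lemma M_lim: "(\<lambda>n. real (Mn d n) / real n) \<longlonglongrightarrow> \<mu>"
  using A2 by (simp add: Mn_def)

lemma ev_M: "eventually (\<lambda>n. n > 0 \<and> even (Mn d n) \<and> 2 * e < Mn d n) sequentially"
proof -
  have "eventually (\<lambda>n. real (Mn d n) / real n > \<mu> / 2) sequentially"
    using M_lim mu_pos by (intro order_tendstoD(1)) auto
  moreover have "eventually (\<lambda>n. real n > 2 * (2 * real e + 1) / \<mu>) sequentially"
    by (rule filterlim_real_sequentially[THEN filterlim_at_top_dense[THEN iffD1], rule_format])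
  moreover have "eventually (\<lambda>n. n \<ge> 1) sequentially" by (rule eventually_ge_at_top)
  ultimately show ?thesis
  proof eventually_elim
    case (elim n)
    have n0: "real n > 0" using elim(3) by simp
    have "real (Mn d n) > \<mu> / 2 * real n" using elim(1) n0 by (simp add: field_simps)
    moreover have "\<mu> / 2 * real n > 2 * real e + 1"
      using elim(2) mu_pos by (simp add: field_simps)
    ultimately have "real (2 * e) < real (Mn d n)" by simp
    then have "2 * e < Mn d n" by (simp only: of_nat_less_iff)
    then show ?case using elim(3) even_sum[OF elim(3)] by (simp add: Mn_def)
  qed
qed

lemma inv_n_lim: "(\<lambda>n. c / real n) \<longlonglongrightarrow> 0"
  by (rule tendsto_divide_0[OF tendsto_const filterlim_real_sequentially[THEN filterlim_at_top_imp_at_infinity]])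

lemma VF_lim: "finite S \<Longrightarrow> (\<lambda>n. VF d n S N) \<longlonglongrightarrow> (\<Prod>k\<in>S. p k ^ N k)"
  unfolding VF_def
proof -
  assume "finite S"
  have "(\<lambda>n. \<Prod>k\<in>S. \<Prod>i<N k. real (nk d n k) / real n - real i / real n) \<longlonglongrightarrow> (\<Prod>k\<in>S. \<Prod>i<N k. p k - 0)"
    by (intro tendsto_prod tendsto_diff A1_lim inv_n_lim)
  then show "(\<lambda>n. \<Prod>k\<in>S. \<Prod>i<N k. real (nk d n k) / real n - real i / real n) \<longlonglongrightarrow> (\<Prod>k\<in>S. p k ^ N k)"
    by simp
qed

lemma EF_factor_lim: "(\<lambda>n. 1 / (real (Mn d n) / real n - c / real n)) \<longlonglongrightarrow> 1 / \<mu>"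
proof -
  have "(\<lambda>n. 1 / (real (Mn d n) / real n - c / real n)) \<longlonglongrightarrow> 1 / (\<mu> - 0)"
    using mu_pos by (intro tendsto_intros M_lim inv_n_lim) auto
  then show ?thesis by simp
qed

lemma EF_lim: "(\<lambda>n. EF d n e) \<longlonglongrightarrow> (1 / \<mu>) ^ e"
proof -
  have "(\<lambda>n. EF d n e) \<longlonglongrightarrow> (\<Prod>i<e. 1 / \<mu>)"
    unfolding EF_def by (intro tendsto_prod EF_factor_lim)
  then show ?thesis by simp
qed

lemma Pabs_lim:
  assumes S: "finite S"
  shows "(\<lambda>n. Pabs d n S N e * real n ^ e / real n ^ (\<Sum>k\<in>S. N k)) \<longlonglongrightarrow> (\<Prod>k\<in>S. p k ^ N k) * (1 / \<mu>) ^ e"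
proof -
  have "(\<lambda>n. VF d n S N * EF d n e) \<longlonglongrightarrow> (\<Prod>k\<in>S. p k ^ N k) * (1 / \<mu>) ^ e"
    by (intro tendsto_mult VF_lim EF_lim S)
  moreover have "eventually (\<lambda>n. VF d n S N * EF d n e = Pabs d n S N e * real n ^ e / real n ^ (\<Sum>k\<in>S. N k)) sequentially"
    using ev_M[of e] by eventually_elim (use Pabs_normalized[OF S] in auto)
  ultimately show ?thesis by (rule Lim_transform_eventually)
qed

end

context asym
begin

lemma vertex_part:
  fixes N1 N2 :: "nat \<Rightarrow> nat"
  assumes S: "finite S"
  defines "I \<equiv> SIGMA k:S. {..<N1 k + N2 k}"
  shows "(\<lambda>n. real n * (VF d n S (\<lambda>k. N1 k + N2 k) - VF d n S N1 * VF d n S N2))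
     \<longlonglongrightarrow> - (\<Prod>k\<in>S. p k ^ (N1 k + N2 k)) * (\<Sum>k\<in>S. real (N1 k) * real (N2 k) / p k)"
proof -
  define t where "t = (\<lambda>(k, i). if i < N1 k then i else i - N1 k)"
  define f where "f = (\<lambda>(k, i) n. real (nk d n k) / real n - real i / real n)"
  define g where "g = (\<lambda>(k::nat, i::nat) n. real (nk d n k) / real n - real (t (k, i)) / real n)"
  define L where "L = (\<lambda>(k::nat, i::nat). p k)"
  define D where "D = (\<lambda>(k::nat, i::nat). real (t (k, i)) - real i)"
  have fI: "finite I" unfolding I_def using S by auto
  have a1: "VF d n S (\<lambda>k. N1 k + N2 k) = (\<Prod>x\<in>I. f x n)" for n
  proof -
    have "(\<Prod>x\<in>I. f x n) = (\<Prod>(k, i)\<in>I. real (nk d n k) / real n - real i / real n)"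
      by (rule prod.cong) (auto simp: f_def)
    also have "\<dots> = VF d n S (\<lambda>k. N1 k + N2 k)"
      unfolding VF_def I_def by (rule prod.Sigma[symmetric]) (use S in auto)
    finally show ?thesis by simp
  qed
  have b1: "VF d n S N1 * VF d n S N2 = (\<Prod>x\<in>I. g x n)" for n
  proof -
    have "(\<Prod>x\<in>I. g x n) = (\<Prod>(k, i)\<in>I. g (k, i) n)"
      by (rule prod.cong) auto
    also have "\<dots> = (\<Prod>k\<in>S. \<Prod>i<N1 k + N2 k. g (k, i) n)"
      unfolding I_def by (rule prod.Sigma[symmetric]) (use S in auto)
    also have "\<dots> = (\<Prod>k\<in>S. (\<Prod>i<N1 k. real (nk d n k) / real n - real i / real n) *
                              (\<Prod>i<N2 k. real (nk d n k) / real n - real i / real n))"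
      by (intro prod.cong refl) (simp add: prod_lessThan_add g_def t_def)
    also have "\<dots> = VF d n S N1 * VF d n S N2"
      unfolding VF_def by (simp add: prod.distrib)
    finally show ?thesis by simp
  qed
  have limf: "f x \<longlonglongrightarrow> L x" for x
  proof -
    obtain k i where x: "x = (k, i)" by (cases x)
    have "(\<lambda>n. real (nk d n k) / real n - real i / real n) \<longlonglongrightarrow> p k - 0"
      by (intro tendsto_diff A1_lim inv_n_lim)
    then show ?thesis by (simp add: x f_def L_def)
  qed
  have limg: "g x \<longlonglongrightarrow> L x" for x
  proof -
    obtain k i where x: "x = (k, i)" by (cases x)
    have "(\<lambda>n. real (nk d n k) / real n - real (t (k, i)) / real n) \<longlonglongrightarrow> p k - 0"
      by (intro tendsto_diff A1_lim inv_n_lim)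
    then show ?thesis by (simp add: x g_def L_def)
  qed
  have limD: "(\<lambda>n. real n * (f x n - g x n)) \<longlonglongrightarrow> D x" for x
  proof -
    obtain k i where x: "x = (k, i)" by (cases x)
    have "eventually (\<lambda>n. D x = real n * (f x n - g x n)) sequentially"
      using eventually_gt_at_top[of 0]
      by eventually_elim (simp add: x f_def g_def D_def field_simps)
    then show ?thesis by (rule Lim_transform_eventually[OF tendsto_const])
  qed
  have T: "(\<lambda>n. real n * ((\<Prod>x\<in>I. f x n) - (\<Prod>x\<in>I. g x n))) \<longlonglongrightarrow> (\<Sum>x\<in>I. D x * (\<Prod>y\<in>I - {x}. L y))"
    by (rule tele_prod[OF fI limf limg limD])
  have PI: "(\<Prod>y\<in>I. L y) = (\<Prod>k\<in>S. p k ^ (N1 k + N2 k))"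
  proof -
    have "(\<Prod>y\<in>I. L y) = (\<Prod>(k, i)\<in>I. p k)" by (rule prod.cong) (auto simp: L_def)
    also have "\<dots> = (\<Prod>k\<in>S. \<Prod>i<N1 k + N2 k. p k)"
      unfolding I_def by (rule prod.Sigma[symmetric]) (use S in auto)
    finally show ?thesis by simp
  qed
  have inner: "(\<Sum>i<N1 k + N2 k. D (k, i) * (\<Prod>y\<in>I - {(k, i)}. L y))
      = - (real (N1 k) * real (N2 k)) * (\<Prod>y\<in>I. L y) / p k" if k: "k \<in> S" for k
  proof -
    have sumD: "(\<Sum>i<N1 k + N2 k. D (k, i)) = - (real (N1 k) * real (N2 k))"
      by (simp add: sum_lessThan_add D_def t_def)
    show ?thesis
    proof (cases "p k = 0")
      case False
      have W: "(\<Prod>y\<in>I - {(k, i)}. L y) = (\<Prod>y\<in>I. L y) / p k" if i: "i < N1 k + N2 k" for i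
      proof -
        have "(k, i) \<in> I" using k i by (simp add: I_def)
        then have "(\<Prod>y\<in>I. L y) = L (k, i) * (\<Prod>y\<in>I - {(k, i)}. L y)" by (rule prod.remove[OF fI])
        then show ?thesis using False by (simp add: L_def)
      qed
      have "(\<Sum>i<N1 k + N2 k. D (k, i) * (\<Prod>y\<in>I - {(k, i)}. L y))
          = (\<Sum>i<N1 k + N2 k. D (k, i)) * ((\<Prod>y\<in>I. L y) / p k)"
        by (simp add: W sum_distrib_right sum_divide_distrib)
      then show ?thesis using sumD by simp
    next
      case True
      have "D (k, i) * (\<Prod>y\<in>I - {(k, i)}. L y) = 0" if i: "i < N1 k + N2 k" for i
      proof (cases "N1 k = 0 \<or> N2 k = 0")
        case True
        then have "D (k, i) = 0" using i by (auto simp: D_def t_def)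
        then show ?thesis by simp
      next
        case False
        then obtain i' where i': "i' < N1 k + N2 k" "i' \<noteq> i"
          by (metis add_gr_0 bot_nat_0.not_eq_extremum less_add_same_cancel1 less_numeral_extra(1) not_less_iff_gr_or_eq)
        have "(k, i') \<in> I - {(k, i)}" using i' k by (simp add: I_def)
        moreover have "L (k, i') = 0" using \<open>p k = 0\<close> by (simp add: L_def)
        ultimately have "(\<Prod>y\<in>I - {(k, i)}. L y) = 0" using fI by (intro prod_zero) auto
        then show ?thesis by simp
      qed
      then have "(\<Sum>i<N1 k + N2 k. D (k, i) * (\<Prod>y\<in>I - {(k, i)}. L y)) = 0"
        by (intro sum.neutral) auto
      then show ?thesis using True by simp
    qed
  qed
  have "(\<Sum>x\<in>I. D x * (\<Prod>y\<in>I - {x}. L y)) = (\<Sum>(k, i)\<in>I. D (k, i) * (\<Prod>y\<in>I - {(k, i)}. L y))"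
    by (rule sum.cong) auto
  also have "\<dots> = (\<Sum>k\<in>S. \<Sum>i<N1 k + N2 k. D (k, i) * (\<Prod>y\<in>I - {(k, i)}. L y))"
    unfolding I_def by (rule sum.Sigma[symmetric]) (use S in auto)
  also have "\<dots> = (\<Sum>k\<in>S. - (real (N1 k) * real (N2 k)) * (\<Prod>y\<in>I. L y) / p k)"
    by (intro sum.cong refl inner)
  also have "\<dots> = - (\<Prod>k\<in>S. p k ^ (N1 k + N2 k)) * (\<Sum>k\<in>S. real (N1 k) * real (N2 k) / p k)"
    unfolding PI by (simp add: sum_distrib_left sum_negf field_simps)
  finally have lim_eq: "(\<Sum>x\<in>I. D x * (\<Prod>y\<in>I - {x}. L y)) = - (\<Prod>k\<in>S. p k ^ (N1 k + N2 k)) * (\<Sum>k\<in>S. real (N1 k) * real (N2 k) / p k)" .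
  show ?thesis using T unfolding a1 b1 lim_eq .
qed

lemma edge_part:
  shows "(\<lambda>n. real n * (EF d n (e1 + e2) - EF d n e1 * EF d n e2))
     \<longlonglongrightarrow> 2 * real e1 * real e2 / \<mu> * (1 / \<mu>) ^ (e1 + e2)"
proof -
  define t where "t = (\<lambda>i. if i < e1 then i else i - e1)"
  define r where "r = (\<lambda>c n. 1 / (real (Mn d n) / real n - c / real n))"
  define f where "f = (\<lambda>i. r (1 + 2 * real i))"
  define g where "g = (\<lambda>i. r (1 + 2 * real (t i)))"
  define D where "D = (\<lambda>i. 2 * (real i - real (t i)) / \<mu>\<^sup>2)"
  have a2: "EF d n (e1 + e2) = (\<Prod>i<e1 + e2. f i n)" for n
    unfolding EF_def f_def r_def by simp
  have b2: "EF d n e1 * EF d n e2 = (\<Prod>i<e1 + e2. g i n)" for n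
    unfolding EF_def g_def r_def t_def by (simp add: prod_lessThan_add)
  have limf: "f i \<longlonglongrightarrow> 1 / \<mu>" for i unfolding f_def r_def by (rule EF_factor_lim)
  have limg: "g i \<longlonglongrightarrow> 1 / \<mu>" for i unfolding g_def r_def by (rule EF_factor_lim)
  have limD: "(\<lambda>n. real n * (f i n - g i n)) \<longlonglongrightarrow> D i" for i
  proof -
    define c1 where "c1 = 1 + 2 * real i"
    define c2 where "c2 = 1 + 2 * real (t i)"
    have lim: "(\<lambda>n. (c1 - c2) / ((real (Mn d n) / real n - c1 / real n) * (real (Mn d n) / real n - c2 / real n)))
        \<longlonglongrightarrow> (c1 - c2) / ((\<mu> - 0) * (\<mu> - 0))"
      using mu_pos by (intro tendsto_intros M_lim inv_n_lim) auto
    have ev: "eventually (\<lambda>n. real (Mn d n) / real n - c1 / real n \<noteq> 0 \<and> real (Mn d n) / real n - c2 / real n \<noteq> 0 \<and> n > 0) sequentially"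
    proof -
      have "eventually (\<lambda>n. real (Mn d n) / real n - c1 / real n > 0) sequentially"
        using mu_pos by (intro order_tendstoD(1)[of _ "\<mu> - 0"] tendsto_intros M_lim inv_n_lim) auto
      moreover have "eventually (\<lambda>n. real (Mn d n) / real n - c2 / real n > 0) sequentially"
        using mu_pos by (intro order_tendstoD(1)[of _ "\<mu> - 0"] tendsto_intros M_lim inv_n_lim) auto
      ultimately show ?thesis using eventually_gt_at_top[of 0] by eventually_elim auto
    qed
    have "eventually (\<lambda>n. (c1 - c2) / ((real (Mn d n) / real n - c1 / real n) * (real (Mn d n) / real n - c2 / real n))
        = real n * (f i n - g i n)) sequentially"
      using ev by eventually_elim (simp add: f_def g_def r_def c1_def c2_def field_simps)
    from Lim_transform_eventually[OF lim this]
    show ?thesis by (simp add: D_def c1_def c2_def power2_eq_square)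
  qed
  have T: "(\<lambda>n. real n * ((\<Prod>i<e1 + e2. f i n) - (\<Prod>i<e1 + e2. g i n))) \<longlonglongrightarrow> (\<Sum>i<e1 + e2. D i * (\<Prod>j\<in>{..<e1 + e2} - {i}. 1 / \<mu>))"
    by (rule tele_prod) (auto intro: limf limg limD)
  have "(\<Sum>i<e1 + e2. D i * (\<Prod>j\<in>{..<e1 + e2} - {i}. 1 / \<mu>)) = 2 * real e1 * real e2 / \<mu> * (1 / \<mu>) ^ (e1 + e2)"
  proof (cases "e1 + e2 = 0")
    case True then show ?thesis by simp
  next
    case False
    have "(\<Prod>j\<in>{..<e1 + e2} - {i}. 1 / \<mu>) = (1 / \<mu>) ^ (e1 + e2 - 1)" if "i < e1 + e2" for i
      using that by simp
    then have "(\<Sum>i<e1 + e2. D i * (\<Prod>j\<in>{..<e1 + e2} - {i}. 1 / \<mu>)) = (\<Sum>i<e1 + e2. D i) * (1 / \<mu>) ^ (e1 + e2 - 1)"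
      by (simp add: sum_distrib_right)
    also have "(\<Sum>i<e1 + e2. D i) = 2 * real e1 * real e2 / \<mu>\<^sup>2"
      by (simp add: sum_lessThan_add D_def t_def sum_divide_distrib[symmetric])
    also have "2 * real e1 * real e2 / \<mu>\<^sup>2 * (1 / \<mu>) ^ (e1 + e2 - 1) = 2 * real e1 * real e2 / \<mu> * (1 / \<mu>) ^ (e1 + e2)"
    proof -
      have "(1 / \<mu>) ^ (e1 + e2) = (1 / \<mu>) * (1 / \<mu>) ^ (e1 + e2 - 1)"
        using False by (metis power_eq_if)
      then show ?thesis by (simp add: power2_eq_square)
    qed
    finally show ?thesis .
  qed
  then show ?thesis using T unfolding a2 b2 by simp
qed

lemma Pabs_diff:
  assumes S: "finite S"
  shows "(\<lambda>n. real n * (Pabs d n S (\<lambda>k. N1 k + N2 k) (e1 + e2) - Pabs d n S N1 e1 * Pabs d n S N2 e2)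
            * real n ^ (e1 + e2) / real n ^ ((\<Sum>k\<in>S. N1 k) + (\<Sum>k\<in>S. N2 k)))
     \<longlonglongrightarrow> (\<Prod>k\<in>S. p k ^ (N1 k + N2 k)) * (1 / \<mu>) ^ (e1 + e2) *
         (2 * real e1 * real e2 / \<mu> - (\<Sum>k\<in>S. real (N1 k) * real (N2 k) / p k))"
proof -
  let ?a1 = "\<lambda>n. VF d n S (\<lambda>k. N1 k + N2 k)" and ?b1 = "\<lambda>n. VF d n S N1 * VF d n S N2"
  let ?a2 = "\<lambda>n. EF d n (e1 + e2)" and ?b2 = "\<lambda>n. EF d n e1 * EF d n e2"
  have lim: "(\<lambda>n. (real n * (?a1 n - ?b1 n)) * ?a2 n + ?b1 n * (real n * (?a2 n - ?b2 n)))
     \<longlonglongrightarrow> (- (\<Prod>k\<in>S. p k ^ (N1 k + N2 k)) * (\<Sum>k\<in>S. real (N1 k) * real (N2 k) / p k)) * (1 / \<mu>) ^ (e1 + e2)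
        + ((\<Prod>k\<in>S. p k ^ N1 k) * (\<Prod>k\<in>S. p k ^ N2 k)) * (2 * real e1 * real e2 / \<mu> * (1 / \<mu>) ^ (e1 + e2))"
    by (intro tendsto_intros vertex_part edge_part EF_lim VF_lim S)
  have ev: "eventually (\<lambda>n. (real n * (?a1 n - ?b1 n)) * ?a2 n + ?b1 n * (real n * (?a2 n - ?b2 n))
     = real n * (Pabs d n S (\<lambda>k. N1 k + N2 k) (e1 + e2) - Pabs d n S N1 e1 * Pabs d n S N2 e2)
            * real n ^ (e1 + e2) / real n ^ ((\<Sum>k\<in>S. N1 k) + (\<Sum>k\<in>S. N2 k))) sequentially"
    using ev_M[of "e1 + e2"]
  proof eventually_elim
    case (elim n)
    have n0: "real n \<noteq> 0" using elim by simp
    have h1: "Pabs d n S (\<lambda>k. N1 k + N2 k) (e1 + e2) * real n ^ (e1 + e2) / real n ^ ((\<Sum>k\<in>S. N1 k) + (\<Sum>k\<in>S. N2 k))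
        = ?a1 n * ?a2 n"
      using Pabs_normalized[OF S, of n d "e1 + e2" "\<lambda>k. N1 k + N2 k"] elim by (simp add: sum.distrib)
    have h2: "Pabs d n S N1 e1 * real n ^ e1 / real n ^ (\<Sum>k\<in>S. N1 k) = VF d n S N1 * EF d n e1"
      using Pabs_normalized[OF S, of n d e1 N1] elim by simp
    have h3: "Pabs d n S N2 e2 * real n ^ e2 / real n ^ (\<Sum>k\<in>S. N2 k) = VF d n S N2 * EF d n e2"
      using Pabs_normalized[OF S, of n d e2 N2] elim by simp
    have "real n * (Pabs d n S (\<lambda>k. N1 k + N2 k) (e1 + e2) - Pabs d n S N1 e1 * Pabs d n S N2 e2)
            * real n ^ (e1 + e2) / real n ^ ((\<Sum>k\<in>S. N1 k) + (\<Sum>k\<in>S. N2 k))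
       = real n * (Pabs d n S (\<lambda>k. N1 k + N2 k) (e1 + e2) * real n ^ (e1 + e2) / real n ^ ((\<Sum>k\<in>S. N1 k) + (\<Sum>k\<in>S. N2 k))
           - (Pabs d n S N1 e1 * real n ^ e1 / real n ^ (\<Sum>k\<in>S. N1 k)) * (Pabs d n S N2 e2 * real n ^ e2 / real n ^ (\<Sum>k\<in>S. N2 k)))"
      using n0 by (simp add: field_simps power_add)
    also have "\<dots> = real n * (?a1 n * ?a2 n - (VF d n S N1 * EF d n e1) * (VF d n S N2 * EF d n e2))"
      unfolding h1 h2 h3 ..
    finally show ?case by (simp add: algebra_simps)
  qed
  have "(- (\<Prod>k\<in>S. p k ^ (N1 k + N2 k)) * (\<Sum>k\<in>S. real (N1 k) * real (N2 k) / p k)) * (1 / \<mu>) ^ (e1 + e2)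
        + ((\<Prod>k\<in>S. p k ^ N1 k) * (\<Prod>k\<in>S. p k ^ N2 k)) * (2 * real e1 * real e2 / \<mu> * (1 / \<mu>) ^ (e1 + e2))
      = (\<Prod>k\<in>S. p k ^ (N1 k + N2 k)) * (1 / \<mu>) ^ (e1 + e2) *
         (2 * real e1 * real e2 / \<mu> - (\<Sum>k\<in>S. real (N1 k) * real (N2 k) / p k))"
    by (simp add: power_add prod.distrib algebra_simps)
  then show ?thesis using Lim_transform_eventually[OF lim ev] by simp
qed

end

definition Fct :: "('v, 'h) mgraph \<Rightarrow> real" where
  "Fct K = (\<Prod>x\<in>verts K. fact (mg_deg K x))"

definition PP :: "(nat \<Rightarrow> real) \<Rightarrow> ('v, 'h) mgraph \<Rightarrow> real" where
  "PP p K = (\<Prod>x\<in>verts K. p (mg_deg K x))"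

lemma Exp_emb_Pabs:
  assumes wf: "mg_wf K" and ev: "even (\<Sum>i<n. d n i)"
  shows "Exp d n (\<lambda>m. real (card (emb K d n m))) = Fct K * Pabs d n (mg_deg K ` verts K) (mg_nk K) (mg_e K)"
  unfolding Exp_emb[where d=d and n=n, OF wf ev] card_place[OF wf, of d n] Pabs_def Fct_def Mn_def by (simp add: field_simps)

lemma mg_nk_zero: "k \<notin> mg_deg K ` verts K \<Longrightarrow> mg_nk K k = 0"
proof -
  assume "k \<notin> mg_deg K ` verts K"
  then have "{u \<in> verts K. mg_deg K u = k} = {}" by blast
  then show ?thesis unfolding mg_nk_def by (metis card.empty)
qed

lemma sum_nk: "finite (verts K) \<Longrightarrow> (\<Sum>k\<in>mg_deg K ` verts K. mg_nk K k) = mg_v K"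
  unfolding mg_nk_def mg_v_def
  using sum.image_gen[of "verts K" "\<lambda>_. 1::nat" "mg_deg K"] by simp

lemma prod_nk: "finite (verts K) \<Longrightarrow> (\<Prod>k\<in>mg_deg K ` verts K. p k ^ mg_nk K k) = PP p K"
  unfolding mg_nk_def PP_def
  using prod.image_gen[of "verts K" "\<lambda>x. p (mg_deg K x)" "mg_deg K"] by simp

lemma sum_nk_sup:
  assumes "finite S" "mg_deg K ` verts K \<subseteq> S" "finite (verts K)"
  shows "(\<Sum>k\<in>S. mg_nk K k) = mg_v K"
proof -
  have "(\<Sum>k\<in>mg_deg K ` verts K. mg_nk K k) = (\<Sum>k\<in>S. mg_nk K k)"
    by (rule sum.mono_neutral_left) (use assms mg_nk_zero in auto)
  then show ?thesis using sum_nk[OF assms(3)] by simp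
qed

lemma prod_nk_sup:
  assumes "finite S" "mg_deg K ` verts K \<subseteq> S" "finite (verts K)"
  shows "(\<Prod>k\<in>S. p k ^ mg_nk K k) = PP p K"
proof -
  have z: "\<forall>i\<in>S - mg_deg K ` verts K. p i ^ mg_nk K i = 1" using mg_nk_zero by (metis DiffD2 power_0)
  have "(\<Prod>k\<in>mg_deg K ` verts K. p k ^ mg_nk K k) = (\<Prod>k\<in>S. p k ^ mg_nk K k)"
    by (rule prod.mono_neutral_left[OF assms(1) assms(2) z])
  then show ?thesis using prod_nk[OF assms(3)] by simp
qed

lemma Pabs_sup:
  assumes "finite S" "mg_deg K ` verts K \<subseteq> S"
  shows "Pabs d n (mg_deg K ` verts K) (mg_nk K) e = Pabs d n S (mg_nk K) e"
  by (rule Pabs_support) (use assms mg_nk_zero in auto)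

section \<open>Invariants of the family graph\<close>

lemma Kfam_nk:
  assumes "finite J" "\<And>j. j \<in> J \<Longrightarrow> finite (verts (Hf j))"
  shows "mg_nk (Kfam J Hf) k = (\<Sum>j\<in>J. mg_nk (Hf j) k)"
proof -
  have "{x \<in> verts (Kfam J Hf). mg_deg (Kfam J Hf) x = k} = (SIGMA j:J. {u \<in> verts (Hf j). mg_deg (Hf j) u = k})"
    using Kfam_deg[of _ J Hf] by auto
  then show ?thesis unfolding mg_nk_def using assms by (simp add: card_SigmaI)
qed

lemma Kfam_v:
  assumes "finite J" "\<And>j. j \<in> J \<Longrightarrow> finite (verts (Hf j))"
  shows "mg_v (Kfam J Hf) = (\<Sum>j\<in>J. mg_v (Hf j))"
  unfolding mg_v_def using assms by (simp add: card_SigmaI)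

lemma Kfam_e:
  assumes "finite J" "\<And>j. j \<in> J \<Longrightarrow> mg_wf (Hf j)"
  shows "mg_e (Kfam J Hf) = (\<Sum>j\<in>J. mg_e (Hf j))"
proof -
  have "card (halfs (Kfam J Hf)) = (\<Sum>j\<in>J. card (halfs (Hf j)))"
    unfolding Kfam_simps by (rule card_SigmaI) (use assms(1) wfD(2)[OF assms(2)] in auto)
  also have "\<dots> = 2 * (\<Sum>j\<in>J. mg_e (Hf j))"
    by (simp add: sum_distrib_left wf_card_halfs[OF assms(2)])
  finally show ?thesis by (simp add: mg_e_def)
qed

lemma Kfam_prod:
  assumes "finite J" "\<And>j. j \<in> J \<Longrightarrow> finite (verts (Hf j))"
  shows "(\<Prod>x\<in>verts (Kfam J Hf). g (mg_deg (Kfam J Hf) x)) = (\<Prod>j\<in>J. \<Prod>u\<in>verts (Hf j). g (mg_deg (Hf j) u))"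
proof -
  have "(\<Prod>x\<in>verts (Kfam J Hf). g (mg_deg (Kfam J Hf) x)) = (\<Prod>(j, u)\<in>(SIGMA j:J. verts (Hf j)). g (mg_deg (Hf j) u))"
    by (rule prod.cong) (auto simp: Kfam_deg)
  also have "\<dots> = (\<Prod>j\<in>J. \<Prod>u\<in>verts (Hf j). g (mg_deg (Hf j) u))"
    by (rule prod.Sigma[symmetric]) (use assms in auto)
  finally show ?thesis .
qed

lemma Kfam_degs: "mg_deg (Kfam J Hf) ` verts (Kfam J Hf) = (\<Union>j\<in>J. mg_deg (Hf j) ` verts (Hf j))"
  by (force simp: Kfam_deg)

context asym
begin

lemma Exp_emb_lim:
  assumes wf: "mg_wf K"
  shows "(\<lambda>n. Exp d n (\<lambda>m. real (card (emb K d n m))) * real n ^ mg_e K / real n ^ mg_v K)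
     \<longlonglongrightarrow> Fct K * PP p K * (1 / \<mu>) ^ mg_e K"
proof -
  let ?S = "mg_deg K ` verts K"
  have fV: "finite (verts K)" using wfD[OF wf] by simp
  have lim: "(\<lambda>n. Fct K * (Pabs d n ?S (mg_nk K) (mg_e K) * real n ^ mg_e K / real n ^ (\<Sum>k\<in>?S. mg_nk K k)))
      \<longlonglongrightarrow> Fct K * ((\<Prod>k\<in>?S. p k ^ mg_nk K k) * (1 / \<mu>) ^ mg_e K)"
    using fV by (intro tendsto_mult tendsto_const Pabs_lim) auto
  have ev: "eventually (\<lambda>n. Fct K * (Pabs d n ?S (mg_nk K) (mg_e K) * real n ^ mg_e K / real n ^ (\<Sum>k\<in>?S. mg_nk K k))
      = Exp d n (\<lambda>m. real (card (emb K d n m))) * real n ^ mg_e K / real n ^ mg_v K) sequentially"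
    using eventually_ge_at_top[of 1]
    by eventually_elim (simp add: Exp_emb_Pabs[OF wf even_sum] sum_nk[OF fV])
  show ?thesis using Lim_transform_eventually[OF lim ev] prod_nk[OF fV] by (simp add: mult_ac)
qed

lemma lam_alt: "lam p \<mu> H = Fct H * PP p H * (1 / \<mu>) ^ mg_e H / real (mg_aut H)"
  unfolding lam_def Fct_def PP_def
  by (simp add: power_int_minus power_one_over prod.distrib field_simps)

lemma list_lim:
  fixes Hs :: "('v, 'h) mgraph list"
  assumes len: "length rs = length Hs"
    and wfH: "\<And>H. H \<in> set Hs \<Longrightarrow> mg_wf H"
    and connH: "\<And>H. H \<in> set Hs \<Longrightarrow> mg_connected H"
    and noniso: "\<And>i j. i < length Hs \<Longrightarrow> j < length Hs \<Longrightarrow> i \<noteq> j \<Longrightarrow> \<not> mg_iso (Hs ! i) (Hs ! j)"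
  defines "eK \<equiv> (\<Sum>j\<in>Jidx rs. mg_e (Hs ! fst j))" and "vK \<equiv> (\<Sum>j\<in>Jidx rs. mg_v (Hs ! fst j))"
  shows "(\<lambda>n. Exp d n (\<lambda>m. \<Prod>i<length Hs. ffall (real (Ycount (Hs ! i) d n m)) (rs ! i)) * real n ^ eK / real n ^ vK)
     \<longlonglongrightarrow> (\<Prod>i<length Hs. lam p \<mu> (Hs ! i) ^ (rs ! i))"
proof -
  let ?Hf = "\<lambda>(i, t). Hs ! i"
  let ?K = "Kfam (Jidx rs) ?Hf"
  let ?A = "real (\<Prod>j\<in>Jidx rs. mg_aut (Hs ! fst j))"
  have wfj: "mg_wf (?Hf j)" if j: "j \<in> Jidx rs" for j
  proof -
    obtain i t where it: "j = (i, t)" "i < length Hs" using j len by (auto simp: Jidx_def)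
    show ?thesis using wfH[OF nth_mem[OF it(2)]] it(1) by simp
  qed
  have wfab: "mg_wf (Hs ! a)" if "(a, b) \<in> Jidx rs" for a b using wfj[OF that] by simp
  have wfj': "mg_wf (Hs ! fst j)" if "j \<in> Jidx rs" for j using wfj[OF that] by (auto split: prod.splits)
  have wfK: "mg_wf ?K" by (rule Kfam_wf) (use wfj in auto)
  have eK: "mg_e ?K = eK"
  proof -
    have "mg_e ?K = (\<Sum>j\<in>Jidx rs. mg_e (?Hf j))" by (rule Kfam_e) (auto intro: wfab)
    also have "\<dots> = eK" unfolding eK_def by (intro sum.cong) auto
    finally show ?thesis .
  qed
  have vK: "mg_v ?K = vK"
  proof -
    have "mg_v ?K = (\<Sum>j\<in>Jidx rs. mg_v (?Hf j))" by (rule Kfam_v) (auto intro: wfD(1)[OF wfab])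
    also have "\<dots> = vK" unfolding vK_def by (intro sum.cong) auto
    finally show ?thesis .
  qed
  have lim0: "(\<lambda>n. Exp d n (\<lambda>m. real (card (emb ?K d n m))) * real n ^ eK / real n ^ vK / ?A)
     \<longlonglongrightarrow> Fct ?K * PP p ?K * (1 / \<mu>) ^ eK / ?A"
    using Exp_emb_lim[OF wfK] unfolding eK vK by (intro tendsto_divide tendsto_const) (auto intro!: mg_aut_pos wfab)
  have ev: "eventually (\<lambda>n. Exp d n (\<lambda>m. real (card (emb ?K d n m))) * real n ^ eK / real n ^ vK / ?A
      = Exp d n (\<lambda>m. \<Prod>i<length Hs. ffall (real (Ycount (Hs ! i) d n m)) (rs ! i)) * real n ^ eK / real n ^ vK) sequentially"
    using eventually_ge_at_top[of 1]
    by eventually_elim (simp add: Exp_ffall_list[OF len wfH connH noniso even_sum])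
  have "Fct ?K * PP p ?K * (1 / \<mu>) ^ eK / ?A = (\<Prod>j\<in>Jidx rs. lam p \<mu> (Hs ! fst j))"
  proof -
    have "Fct ?K = (\<Prod>j\<in>Jidx rs. \<Prod>u\<in>verts (?Hf j). fact (mg_deg (?Hf j) u))"
      unfolding Fct_def by (rule Kfam_prod) (auto intro: wfD(1)[OF wfab])
    also have "\<dots> = (\<Prod>j\<in>Jidx rs. Fct (Hs ! fst j))"
      unfolding Fct_def by (intro prod.cong) auto
    finally have F: "Fct ?K = (\<Prod>j\<in>Jidx rs. Fct (Hs ! fst j))" .
    have "PP p ?K = (\<Prod>j\<in>Jidx rs. \<Prod>u\<in>verts (?Hf j). p (mg_deg (?Hf j) u))"
      unfolding PP_def by (rule Kfam_prod) (auto intro: wfD(1)[OF wfab])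
    also have "\<dots> = (\<Prod>j\<in>Jidx rs. PP p (Hs ! fst j))"
      unfolding PP_def by (intro prod.cong) auto
    finally have P: "PP p ?K = (\<Prod>j\<in>Jidx rs. PP p (Hs ! fst j))" .
    note F P
    moreover have "(1 / \<mu>) ^ eK = (\<Prod>j\<in>Jidx rs. (1 / \<mu>) ^ mg_e (Hs ! fst j))"
      unfolding eK_def by (simp add: power_sum)
    ultimately show ?thesis
      by (simp add: lam_alt prod.distrib prod_dividef)
  qed
  also have "\<dots> = (\<Prod>i<length Hs. lam p \<mu> (Hs ! i) ^ (rs ! i))"
  proof -
    have "(\<Prod>j\<in>Jidx rs. lam p \<mu> (Hs ! fst j)) = (\<Prod>(i, t)\<in>(SIGMA i:{..<length Hs}. {..<rs ! i}). lam p \<mu> (Hs ! i))"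
      unfolding Jidx_def using len by (intro prod.cong) auto
    also have "\<dots> = (\<Prod>i<length Hs. \<Prod>t<rs ! i. lam p \<mu> (Hs ! i))"
      by (rule prod.Sigma[symmetric]) auto
    finally show ?thesis by simp
  qed
  finally show ?thesis using Lim_transform_eventually[OF lim0 ev] by simp
qed

end

section \<open>Isomorphism invariance\<close>

context
  fixes A :: "('v, 'h) mgraph" and B :: "('w, 'g) mgraph" and \<psi> \<tau>
  assumes wfA: "mg_wf A" and wfB: "mg_wf B" and iso: "(\<psi>, \<tau>) \<in> isoset A B"
begin

lemma iso_bv: "bij_betw \<psi> (verts A) (verts B)" and iso_bh: "bij_betw \<tau> (halfs A) (halfs B)"
  and iso_c: "\<And>h. h \<in> halfs A \<Longrightarrow> owner B (\<tau> h) = \<psi> (owner A h) \<and> mate B (\<tau> h) = \<tau> (mate A h)"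
  using iso by (auto simp: isoset_def)

lemma iso_deg: "u \<in> verts A \<Longrightarrow> mg_deg B (\<psi> u) = mg_deg A u"
proof -
  assume u: "u \<in> verts A"
  have eq: "\<tau> ` {h \<in> halfs A. owner A h = u} = {g \<in> halfs B. owner B g = \<psi> u}"
  proof
    show "\<tau> ` {h \<in> halfs A. owner A h = u} \<subseteq> {g \<in> halfs B. owner B g = \<psi> u}"
      using iso_bh iso_c by (auto simp: bij_betw_def)
    show "{g \<in> halfs B. owner B g = \<psi> u} \<subseteq> \<tau> ` {h \<in> halfs A. owner A h = u}"
    proof
      fix g assume g: "g \<in> {g \<in> halfs B. owner B g = \<psi> u}"
      then obtain h where h: "h \<in> halfs A" "g = \<tau> h" using iso_bh by (auto simp: bij_betw_def)
      then have "\<psi> (owner A h) = \<psi> u" using iso_c g by auto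
      then have "owner A h = u" using iso_bv wfD(3)[OF wfA h(1)] u by (auto simp: bij_betw_def inj_on_def)
      then show "g \<in> \<tau> ` {h \<in> halfs A. owner A h = u}" using h by auto
    qed
  qed
  have inj: "inj_on \<tau> {h \<in> halfs A. owner A h = u}"
    using iso_bh by (auto simp: bij_betw_def intro: inj_on_subset)
  have "card (\<tau> ` {h \<in> halfs A. owner A h = u}) = card {h \<in> halfs A. owner A h = u}"
    by (rule card_image[OF inj])
  then show ?thesis unfolding mg_deg_def eq .
qed

lemma iso_prod: "(\<Prod>x\<in>verts B. f (mg_deg B x)) = (\<Prod>u\<in>verts A. f (mg_deg A u))"
proof -
  have "(\<Prod>u\<in>verts A. f (mg_deg B (\<psi> u))) = (\<Prod>x\<in>verts B. f (mg_deg B x))"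
    by (rule prod.reindex_bij_betw[OF iso_bv])
  then show ?thesis using iso_deg by simp
qed

lemma iso_nk: "mg_nk B k = mg_nk A k"
proof -
  have "{x \<in> verts B. mg_deg B x = k} = \<psi> ` {u \<in> verts A. mg_deg A u = k}"
  proof
    show "{x \<in> verts B. mg_deg B x = k} \<subseteq> \<psi> ` {u \<in> verts A. mg_deg A u = k}"
    proof
      fix x assume x: "x \<in> {x \<in> verts B. mg_deg B x = k}"
      then obtain u where u: "u \<in> verts A" "x = \<psi> u" using iso_bv by (auto simp: bij_betw_def)
      then show "x \<in> \<psi> ` {u \<in> verts A. mg_deg A u = k}" using iso_deg[OF u(1)] x by auto
    qed
    show "\<psi> ` {u \<in> verts A. mg_deg A u = k} \<subseteq> {x \<in> verts B. mg_deg B x = k}"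
      using iso_bv iso_deg by (auto simp: bij_betw_def)
  qed
  moreover have "inj_on \<psi> {u \<in> verts A. mg_deg A u = k}"
    using iso_bv by (auto simp: bij_betw_def intro: inj_on_subset)
  ultimately show ?thesis unfolding mg_nk_def by (simp add: card_image)
qed

lemma iso_degs: "mg_deg B ` verts B = mg_deg A ` verts A"
  using iso_bv iso_deg by (force simp: bij_betw_def)

lemma iso_e: "mg_e B = mg_e A"
  using bij_betw_same_card[OF iso_bh] by (simp add: mg_e_def)

lemma iso_v: "mg_v B = mg_v A"
  using bij_betw_same_card[OF iso_bv] by (simp add: mg_v_def)

lemma iso_connected: "mg_connected A \<Longrightarrow> mg_connected B"
proof -
  assume c: "mg_connected A"
  have adj: "(\<psi> u, \<psi> w) \<in> mg_adj B" if uw: "(u, w) \<in> mg_adj A" for u w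
  proof -
    obtain h where h: "h \<in> halfs A" "u = owner A h" "w = owner A (mate A h)"
      using uw unfolding mg_adj_def by blast
    have "\<tau> h \<in> halfs B" using h iso_bh by (auto simp: bij_betw_def)
    moreover have "owner B (\<tau> h) = \<psi> u" using iso_c h by auto
    moreover have "owner B (mate B (\<tau> h)) = \<psi> w" using iso_c[OF h(1)] iso_c[OF wfD(4)[OF wfA h(1)]] h by auto
    ultimately show ?thesis unfolding mg_adj_def by (intro CollectI exI[of _ "\<tau> h"]) auto
  qed
  have rt: "(\<psi> u, \<psi> w) \<in> (mg_adj B)\<^sup>*" if "(u, w) \<in> (mg_adj A)\<^sup>*" for u w
    using that
  proof (induction rule: rtrancl_induct)
    case base then show ?case by simp
  next
    case (step y z) then show ?case using adj by (meson rtrancl.rtrancl_into_rtrancl)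
  qed
  show "mg_connected B" unfolding mg_connected_def
  proof (intro conjI ballI)
    show "verts B \<noteq> {}" using c iso_bv by (auto simp: mg_connected_def bij_betw_def)
    fix x y assume xy: "x \<in> verts B" "y \<in> verts B"
    have im: "\<psi> ` verts A = verts B" using iso_bv by (simp add: bij_betw_def)
    obtain u where "u \<in> verts A" "x = \<psi> u" using xy(1) im by blast
    moreover obtain w where "w \<in> verts A" "y = \<psi> w" using xy(2) im by blast
    ultimately
    show "(x, y) \<in> (mg_adj B)\<^sup>*" using c rt by (auto simp: mg_connected_def)
  qed
qed

lemma iso_lam: "lam p \<mu> B = lam p \<mu> A"
proof -
  have "mg_iso A B" using iso mg_iso_isoset[OF wfA] by blast
  then have "mg_aut A = mg_aut B" by (rule mg_aut_iso[OF wfA wfB])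
  moreover have "(\<Prod>x\<in>verts B. p (mg_deg B x) * fact (mg_deg B x)) = (\<Prod>u\<in>verts A. p (mg_deg A u) * fact (mg_deg A u))"
    by (rule iso_prod)
  ultimately show ?thesis unfolding lam_def using iso_e by simp
qed

end

lemma iso_Ycount:
  assumes wfA: "mg_wf A" and wfB: "mg_wf B" and iso: "mg_iso A B" and m: "m \<in> invs (half_edges d n)"
  shows "Ycount A d n m = Ycount B d n m"
proof -
  have "mg_iso (mg_restrict (Gstar d n m) C) A \<longleftrightarrow> mg_iso (mg_restrict (Gstar d n m) C) B"
    if C: "C \<in> mg_components (Gstar d n m)" for C
  proof -
    have wfC: "mg_wf (mg_restrict (Gstar d n m) C)" by (rule wf_restrict_G[OF m C])
    have iso': "mg_iso B A" by (rule mg_iso_sym[OF wfA wfB iso])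
    show ?thesis using mg_iso_trans[OF wfC _ iso] mg_iso_trans[OF wfC _ iso'] by blast
  qed
  then have "{C \<in> mg_components (Gstar d n m). mg_iso (mg_restrict (Gstar d n m) C) A}
       = {C \<in> mg_components (Gstar d n m). mg_iso (mg_restrict (Gstar d n m) C) B}" by blast
  then show ?thesis by (simp add: Ycount_def)
qed

lemma iso_isoset_ex:
  assumes "mg_wf A" "mg_iso A B"
  obtains \<psi> \<tau> where "(\<psi>, \<tau>) \<in> isoset A B"
proof -
  have "isoset A B \<noteq> {}" using assms mg_iso_isoset[of A B] by blast
  then obtain q where "q \<in> isoset A B" by blast
  then show ?thesis using that by (cases q) auto
qed

definition relab :: "('v \<Rightarrow> 'w) \<Rightarrow> ('h \<Rightarrow> 'g) \<Rightarrow> ('g \<Rightarrow> 'h) \<Rightarrow> ('v, 'h) mgraph \<Rightarrow> ('w, 'g) mgraph" where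
  "relab f g gi H = \<lparr>verts = f ` verts H, halfs = g ` halfs H,
     owner = (\<lambda>x. f (owner H (gi x))), mate = (\<lambda>x. g (mate H (gi x)))\<rparr>"

lemma relab_props:
  assumes wf: "mg_wf H" and f: "inj f" and gi: "\<And>h. gi (g h) = h"
  shows "mg_wf (relab f g gi H)" "(restrict f (verts H), restrict g (halfs H)) \<in> isoset H (relab f g gi H)"
proof -
  have ginj: "inj g" using gi by (metis injI)
  show "mg_wf (relab f g gi H)"
    unfolding mg_wf_def relab_def using wfD[OF wf] gi ginj by (auto simp: inj_eq)
  have "bij_betw f (verts H) (f ` verts H)" by (rule bij_betw_imageI[OF inj_on_subset[OF f subset_UNIV] refl])
  then have b1: "bij_betw (restrict f (verts H)) (verts H) (f ` verts H)"
    by (rule bij_betw_cong[THEN iffD1, rotated]) simp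
  have "bij_betw g (halfs H) (g ` halfs H)" by (rule bij_betw_imageI[OF inj_on_subset[OF ginj subset_UNIV] refl])
  then have b2: "bij_betw (restrict g (halfs H)) (halfs H) (g ` halfs H)"
    by (rule bij_betw_cong[THEN iffD1, rotated]) simp
  show "(restrict f (verts H), restrict g (halfs H)) \<in> isoset H (relab f g gi H)"
    unfolding isoset_def
  proof (intro CollectI case_prodI conjI ballI)
    show "restrict f (verts H) \<in> extensional (verts H)" by simp
    show "restrict g (halfs H) \<in> extensional (halfs H)" by simp
    show "bij_betw (restrict f (verts H)) (verts H) (verts (relab f g gi H))" using b1 by (simp add: relab_def)
    show "bij_betw (restrict g (halfs H)) (halfs H) (halfs (relab f g gi H))" using b2 by (simp add: relab_def)
    fix h assume h: "h \<in> halfs H"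
    show "owner (relab f g gi H) (restrict g (halfs H) h) = restrict f (verts H) (owner H h)"
      using h wfD(3)[OF wf h] gi by (simp add: relab_def)
    show "mate (relab f g gi H) (restrict g (halfs H) h) = restrict g (halfs H) (mate H h)"
      using h wfD(4)[OF wf h] gi by (simp add: relab_def)
  qed
qed

lemma list_exact:
  fixes Hs :: "('v, 'h) mgraph list"
  assumes len: "length rs = length Hs"
    and wfH: "\<And>H. H \<in> set Hs \<Longrightarrow> mg_wf H"
    and connH: "\<And>H. H \<in> set Hs \<Longrightarrow> mg_connected H"
    and noniso: "\<And>i j. i < length Hs \<Longrightarrow> j < length Hs \<Longrightarrow> i \<noteq> j \<Longrightarrow> \<not> mg_iso (Hs ! i) (Hs ! j)"
    and ev: "even (\<Sum>i<n. d n i)"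
    and S: "finite S" and Ssup: "\<And>H. H \<in> set Hs \<Longrightarrow> mg_deg H ` verts H \<subseteq> S"
  shows "Exp d n (\<lambda>m. \<Prod>i<length Hs. ffall (real (Ycount (Hs ! i) d n m)) (rs ! i))
    = (\<Prod>j\<in>Jidx rs. Fct (Hs ! fst j)) *
      Pabs d n S (\<lambda>k. \<Sum>j\<in>Jidx rs. mg_nk (Hs ! fst j) k) (\<Sum>j\<in>Jidx rs. mg_e (Hs ! fst j))
      / real (\<Prod>j\<in>Jidx rs. mg_aut (Hs ! fst j))"
proof -
  let ?Hf = "\<lambda>(i, t). Hs ! i"
  let ?K = "Kfam (Jidx rs) ?Hf"
  have wfj: "mg_wf (?Hf j)" if j: "j \<in> Jidx rs" for j
  proof -
    obtain i t where it: "j = (i, t)" "i < length Hs" using j len by (auto simp: Jidx_def)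
    show ?thesis using wfH[OF nth_mem[OF it(2)]] it(1) by simp
  qed
  have wfab: "mg_wf (Hs ! a)" if "(a, b) \<in> Jidx rs" for a b using wfj[OF that] by simp
  have supab: "mg_deg (Hs ! a) ` verts (Hs ! a) \<subseteq> S" if "(a, b) \<in> Jidx rs" for a b
    using that len Ssup nth_mem by (auto simp: Jidx_def)
  have wfK: "mg_wf ?K" by (rule Kfam_wf) (use wfj in auto)
  have degK: "mg_deg ?K ` verts ?K \<subseteq> S"
    unfolding Kfam_degs using supab by force
  have nkK: "mg_nk ?K = (\<lambda>k. \<Sum>j\<in>Jidx rs. mg_nk (Hs ! fst j) k)"
  proof
    fix k
    have "mg_nk ?K k = (\<Sum>j\<in>Jidx rs. mg_nk (?Hf j) k)" by (rule Kfam_nk) (auto intro: wfD(1)[OF wfab])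
    also have "\<dots> = (\<Sum>j\<in>Jidx rs. mg_nk (Hs ! fst j) k)" by (intro sum.cong) auto
    finally show "mg_nk ?K k = (\<Sum>j\<in>Jidx rs. mg_nk (Hs ! fst j) k)" .
  qed
  have eK: "mg_e ?K = (\<Sum>j\<in>Jidx rs. mg_e (Hs ! fst j))"
  proof -
    have "mg_e ?K = (\<Sum>j\<in>Jidx rs. mg_e (?Hf j))" by (rule Kfam_e) (auto intro: wfab)
    also have "\<dots> = (\<Sum>j\<in>Jidx rs. mg_e (Hs ! fst j))" by (intro sum.cong) auto
    finally show ?thesis .
  qed
  have FK: "Fct ?K = (\<Prod>j\<in>Jidx rs. Fct (Hs ! fst j))"
  proof -
    have "Fct ?K = (\<Prod>j\<in>Jidx rs. \<Prod>u\<in>verts (?Hf j). fact (mg_deg (?Hf j) u))"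
      unfolding Fct_def by (rule Kfam_prod) (auto intro: wfD(1)[OF wfab])
    also have "\<dots> = (\<Prod>j\<in>Jidx rs. Fct (Hs ! fst j))"
      unfolding Fct_def by (intro prod.cong) auto
    finally show ?thesis .
  qed
  have "Exp d n (\<lambda>m. \<Prod>i<length Hs. ffall (real (Ycount (Hs ! i) d n m)) (rs ! i))
     = Exp d n (\<lambda>m. real (card (emb ?K d n m))) / real (\<Prod>j\<in>Jidx rs. mg_aut (Hs ! fst j))"
    by (rule Exp_ffall_list[where d = d and n = n, OF len wfH connH noniso ev])
  also have "Exp d n (\<lambda>m. real (card (emb ?K d n m))) = Fct ?K * Pabs d n (mg_deg ?K ` verts ?K) (mg_nk ?K) (mg_e ?K)"
    by (rule Exp_emb_Pabs[where d = d and n = n, OF wfK ev])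
  also have "Pabs d n (mg_deg ?K ` verts ?K) (mg_nk ?K) (mg_e ?K) = Pabs d n S (mg_nk ?K) (mg_e ?K)"
    by (rule Pabs_sup[OF S degK])
  finally show ?thesis unfolding nkK eK FK .
qed

lemma Jidx_1: "Jidx [Suc 0] = {(0, 0)}" by (auto simp: Jidx_def)
lemma Jidx_11: "Jidx [Suc 0, Suc 0] = {(0, 0), (Suc 0, 0)}" by (auto simp: Jidx_def less_Suc_eq nth_Cons')
lemma Jidx_2: "Jidx [2] = {(0, 0), (0, Suc 0)}" by (auto simp: Jidx_def less_Suc_eq numeral_2_eq_2)

lemma ffall_1[simp]: "ffall x (Suc 0) = x" by (simp add: ffall_def)
lemma ffall_2: "ffall x 2 = x * x - x" by (simp add: ffall_def numeral_2_eq_2 algebra_simps)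

lemma single_exact:
  assumes wf: "mg_wf H" and conn: "mg_connected H" and ev: "even (\<Sum>i<n. d n i)"
    and S: "finite S" and Ssup: "mg_deg H ` verts H \<subseteq> S"
  shows "Exp d n (\<lambda>m. real (Ycount H d n m)) = Fct H * Pabs d n S (mg_nk H) (mg_e H) / real (mg_aut H)"
proof -
  have "Exp d n (\<lambda>m. \<Prod>i<length [H]. ffall (real (Ycount ([H] ! i) d n m)) ([1] ! i))
    = (\<Prod>j\<in>Jidx [1]. Fct ([H] ! fst j)) *
      Pabs d n S (\<lambda>k. \<Sum>j\<in>Jidx [1]. mg_nk ([H] ! fst j) k) (\<Sum>j\<in>Jidx [1]. mg_e ([H] ! fst j))
      / real (\<Prod>j\<in>Jidx [1]. mg_aut ([H] ! fst j))"
    by (rule list_exact[where d = d and n = n, OF _ _ _ _ ev S]) (use wf conn Ssup in auto)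
  then show ?thesis by (simp add: Jidx_1)
qed

lemma pair_exact:
  fixes H1 H2 :: "('v, 'h) mgraph"
  assumes wf1: "mg_wf H1" and conn1: "mg_connected H1" and wf2: "mg_wf H2" and conn2: "mg_connected H2"
    and ni: "\<not> mg_iso H1 H2" "\<not> mg_iso H2 H1" and ev: "even (\<Sum>i<n. d n i)"
    and S: "finite S" and Ssup: "mg_deg H1 ` verts H1 \<subseteq> S" "mg_deg H2 ` verts H2 \<subseteq> S"
  shows "Exp d n (\<lambda>m. real (Ycount H1 d n m) * real (Ycount H2 d n m))
     = Fct H1 * Fct H2 * Pabs d n S (\<lambda>k. mg_nk H1 k + mg_nk H2 k) (mg_e H1 + mg_e H2) / real (mg_aut H1 * mg_aut H2)"
proof -
  have ni': "\<And>i j. i < length [H1, H2] \<Longrightarrow> j < length [H1, H2] \<Longrightarrow> i \<noteq> j \<Longrightarrow> \<not> mg_iso ([H1, H2] ! i) ([H1, H2] ! j)"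
    using ni by (auto simp: less_Suc_eq)
  have "Exp d n (\<lambda>m. \<Prod>i<length [H1, H2]. ffall (real (Ycount ([H1, H2] ! i) d n m)) ([1, 1] ! i))
    = (\<Prod>j\<in>Jidx [1, 1]. Fct ([H1, H2] ! fst j)) *
      Pabs d n S (\<lambda>k. \<Sum>j\<in>Jidx [1, 1]. mg_nk ([H1, H2] ! fst j) k) (\<Sum>j\<in>Jidx [1, 1]. mg_e ([H1, H2] ! fst j))
      / real (\<Prod>j\<in>Jidx [1, 1]. mg_aut ([H1, H2] ! fst j))"
    by (rule list_exact[where d = d and n = n, OF _ _ _ ni' ev S]) (use wf1 wf2 conn1 conn2 Ssup in auto)
  then show ?thesis by (simp add: Jidx_11 numeral_2_eq_2 mult_ac)
qed

lemma sq_exact: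
  assumes wf: "mg_wf H" and conn: "mg_connected H" and ev: "even (\<Sum>i<n. d n i)"
    and S: "finite S" and Ssup: "mg_deg H ` verts H \<subseteq> S"
  shows "Exp d n (\<lambda>m. ffall (real (Ycount H d n m)) 2)
     = Fct H * Fct H * Pabs d n S (\<lambda>k. mg_nk H k + mg_nk H k) (mg_e H + mg_e H) / real (mg_aut H * mg_aut H)"
proof -
  have "Exp d n (\<lambda>m. \<Prod>i<length [H]. ffall (real (Ycount ([H] ! i) d n m)) ([2] ! i))
    = (\<Prod>j\<in>Jidx [2]. Fct ([H] ! fst j)) *
      Pabs d n S (\<lambda>k. \<Sum>j\<in>Jidx [2]. mg_nk ([H] ! fst j) k) (\<Sum>j\<in>Jidx [2]. mg_e ([H] ! fst j))
      / real (\<Prod>j\<in>Jidx [2]. mg_aut ([H] ! fst j))"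
    by (rule list_exact[where d = d and n = n, OF _ _ _ _ ev S]) (use wf conn Ssup in auto)
  then show ?thesis by (simp add: Jidx_2)
qed

lemma Exp_cong_inv:
  assumes ev: "even (\<Sum>i<n. d n i)" and eq: "\<And>m. m \<in> invs (half_edges d n) \<Longrightarrow> f m = g m"
  shows "Exp d n f = Exp d n g"
  unfolding Exp_eq_sum[where d = d and n = n, OF ev] using eq by simp

lemma Exp_add:
  assumes ev: "even (\<Sum>i<n. d n i)"
  shows "Exp d n (\<lambda>m. f m + g m) = Exp d n f + Exp d n g"
  unfolding Exp_eq_sum[where d = d and n = n, OF ev] by (simp add: sum.distrib add_divide_distrib)

context asym
begin

lemma single_lim:
  assumes wf: "mg_wf H" and conn: "mg_connected H"
  shows "(\<lambda>n. Exp d n (\<lambda>m. real (Ycount H d n m)) * real n ^ mg_e H / real n ^ mg_v H) \<longlonglongrightarrow> lam p \<mu> H"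
  using list_lim[of "[1]" "[H]"] wf conn by (simp add: Jidx_1)

lemma tree_lim:
  assumes tr: "mg_tree H"
  shows "(\<lambda>n. Exp d n (\<lambda>m. real (Ycount H d n m)) / real n) \<longlonglongrightarrow> lam p \<mu> H"
proof -
  have wf: "mg_wf H" and conn: "mg_connected H" and ev: "mg_v H = mg_e H + 1"
    using tr by (auto simp: mg_tree_def)
  have "eventually (\<lambda>n. Exp d n (\<lambda>m. real (Ycount H d n m)) * real n ^ mg_e H / real n ^ mg_v H
      = Exp d n (\<lambda>m. real (Ycount H d n m)) / real n) sequentially"
    using eventually_gt_at_top[of 0] by eventually_elim (simp add: ev)
  from Lim_transform_eventually[OF single_lim[OF wf conn] this] show ?thesis .
qed

lemma part_i:
  assumes tr: "mg_tree H"
  shows "(\<lambda>n. Exp d n (\<lambda>m. real (Ycount H d n m)) - real n * lam p \<mu> H) \<in> o(\<lambda>n. real n)"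
proof (rule smalloI_tendsto)
  have "(\<lambda>n. Exp d n (\<lambda>m. real (Ycount H d n m)) / real n - lam p \<mu> H) \<longlonglongrightarrow> lam p \<mu> H - lam p \<mu> H"
    by (intro tendsto_diff tree_lim[OF tr] tendsto_const)
  moreover have "eventually (\<lambda>n. Exp d n (\<lambda>m. real (Ycount H d n m)) / real n - lam p \<mu> H
      = (Exp d n (\<lambda>m. real (Ycount H d n m)) - real n * lam p \<mu> H) / real n) sequentially"
    using eventually_gt_at_top[of 0] by eventually_elim (simp add: field_simps)
  ultimately show "(\<lambda>n. (Exp d n (\<lambda>m. real (Ycount H d n m)) - real n * lam p \<mu> H) / real n) \<longlonglongrightarrow> 0"
    by (simp add: Lim_transform_eventually)
  show "eventually (\<lambda>n. real n \<noteq> 0) sequentially"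
    using eventually_gt_at_top[of 0] by eventually_elim simp
qed

lemma part_iii_a:
  assumes u: "mg_unicyclic H"
  shows "(\<lambda>n. Exp d n (\<lambda>m. real (Ycount H d n m))) \<longlonglongrightarrow> lam p \<mu> H"
proof -
  have wf: "mg_wf H" and conn: "mg_connected H" and ev: "mg_e H = mg_v H"
    using u by (auto simp: mg_unicyclic_def)
  have "eventually (\<lambda>n. Exp d n (\<lambda>m. real (Ycount H d n m)) * real n ^ mg_e H / real n ^ mg_v H
      = Exp d n (\<lambda>m. real (Ycount H d n m))) sequentially"
    using eventually_gt_at_top[of 0] by eventually_elim (simp add: ev)
  from Lim_transform_eventually[OF single_lim[OF wf conn] this] show ?thesis .
qed

lemma part_iii_b:
  fixes Hs :: "('v, 'h) mgraph list"
  assumes len: "length rs = length Hs" and u: "\<forall>H\<in>set Hs. mg_unicyclic H"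
    and ni: "\<forall>i<length Hs. \<forall>j<length Hs. i \<noteq> j \<longrightarrow> \<not> mg_iso (Hs ! i) (Hs ! j)"
  shows "(\<lambda>n. Exp d n (\<lambda>m. \<Prod>i<length Hs. ffall (real (Ycount (Hs ! i) d n m)) (rs ! i)))
         \<longlonglongrightarrow> (\<Prod>i<length Hs. lam p \<mu> (Hs ! i) ^ (rs ! i))"
proof -
  have wfH: "\<And>H. H \<in> set Hs \<Longrightarrow> mg_wf H" and connH: "\<And>H. H \<in> set Hs \<Longrightarrow> mg_connected H"
    using u by (auto simp: mg_unicyclic_def)
  have eq: "(\<Sum>j\<in>Jidx rs. mg_e (Hs ! fst j)) = (\<Sum>j\<in>Jidx rs. mg_v (Hs ! fst j))"
  proof (rule sum.cong[OF refl])
    fix j assume "j \<in> Jidx rs"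
    then have "fst j < length Hs" using len by (auto simp: Jidx_def)
    then have "Hs ! fst j \<in> set Hs" by (rule nth_mem)
    then show "mg_e (Hs ! fst j) = mg_v (Hs ! fst j)" using u by (auto simp: mg_unicyclic_def)
  qed
  have L: "(\<lambda>n. Exp d n (\<lambda>m. \<Prod>i<length Hs. ffall (real (Ycount (Hs ! i) d n m)) (rs ! i))
      * real n ^ (\<Sum>j\<in>Jidx rs. mg_e (Hs ! fst j)) / real n ^ (\<Sum>j\<in>Jidx rs. mg_v (Hs ! fst j)))
      \<longlonglongrightarrow> (\<Prod>i<length Hs. lam p \<mu> (Hs ! i) ^ (rs ! i))"
    by (rule list_lim[OF len wfH connH]) (use ni in auto)
  have "eventually (\<lambda>n. Exp d n (\<lambda>m. \<Prod>i<length Hs. ffall (real (Ycount (Hs ! i) d n m)) (rs ! i))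
      * real n ^ (\<Sum>j\<in>Jidx rs. mg_e (Hs ! fst j)) / real n ^ (\<Sum>j\<in>Jidx rs. mg_v (Hs ! fst j))
      = Exp d n (\<lambda>m. \<Prod>i<length Hs. ffall (real (Ycount (Hs ! i) d n m)) (rs ! i))) sequentially"
    using eventually_gt_at_top[of 0] by eventually_elim (simp add: eq)
  from Lim_transform_eventually[OF L this] show ?thesis .
qed

lemma part_iv:
  assumes wf: "mg_wf H" and conn: "mg_connected H" and gt: "mg_e H > mg_v H"
  shows "(\<lambda>n. Exp d n (\<lambda>m. real (Ycount H d n m))) \<longlonglongrightarrow> 0"
proof -
  have "(\<lambda>n. (Exp d n (\<lambda>m. real (Ycount H d n m)) * real n ^ mg_e H / real n ^ mg_v H) * (1 / real n) ^ (mg_e H - mg_v H))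
      \<longlonglongrightarrow> lam p \<mu> H * 0 ^ (mg_e H - mg_v H)"
    by (intro tendsto_mult single_lim[OF wf conn] tendsto_power inv_n_lim)
  moreover have "lam p \<mu> H * 0 ^ (mg_e H - mg_v H) = 0" using gt by simp
  moreover have "eventually (\<lambda>n. (Exp d n (\<lambda>m. real (Ycount H d n m)) * real n ^ mg_e H / real n ^ mg_v H) * (1 / real n) ^ (mg_e H - mg_v H)
      = Exp d n (\<lambda>m. real (Ycount H d n m))) sequentially"
    using eventually_gt_at_top[of 0]
  proof eventually_elim
    case (elim n)
    have "real n ^ mg_e H = real n ^ mg_v H * real n ^ (mg_e H - mg_v H)"
      using gt by (simp flip: power_add)
    then show ?case using elim by (simp add: power_one_over field_simps)
  qed
  ultimately show ?thesis using Lim_transform_eventually by fastforce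
qed

end

context asym
begin

lemma cov_core:
  fixes H1 :: "('c, 'e) mgraph" and H2 :: "('f, 'g) mgraph"
  assumes t1: "mg_tree H1" and t2: "mg_tree H2"
    and S: "finite S" and S1: "mg_deg H1 ` verts H1 \<subseteq> S" and S2: "mg_deg H2 ` verts H2 \<subseteq> S"
  defines "X \<equiv> \<lambda>n. Pabs d n S (\<lambda>k. mg_nk H1 k + mg_nk H2 k) (mg_e H1 + mg_e H2)
                  - Pabs d n S (mg_nk H1) (mg_e H1) * Pabs d n S (mg_nk H2) (mg_e H2)"
  shows "(\<lambda>n. Fct H1 * Fct H2 / real (mg_aut H1 * mg_aut H2) * X n / real n)
     \<longlonglongrightarrow> lam p \<mu> H1 * lam p \<mu> H2 * (2 * real (mg_e H1) * real (mg_e H2) / \<mu>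
          - (\<Sum>k\<in>mg_deg H1 ` verts H1. real (mg_nk H1 k) * real (mg_nk H2 k) / p k))"
proof -
  have wf1: "mg_wf H1" and v1: "mg_v H1 = mg_e H1 + 1" using t1 by (auto simp: mg_tree_def)
  have wf2: "mg_wf H2" and v2: "mg_v H2 = mg_e H2 + 1" using t2 by (auto simp: mg_tree_def)
  have fV1: "finite (verts H1)" and fV2: "finite (verts H2)" using wfD(1)[OF wf1] wfD(1)[OF wf2] .
  have V1: "(\<Sum>k\<in>S. mg_nk H1 k) = mg_e H1 + 1" using sum_nk_sup[OF S S1 fV1] v1 by simp
  have V2: "(\<Sum>k\<in>S. mg_nk H2 k) = mg_e H2 + 1" using sum_nk_sup[OF S S2 fV2] v2 by simp
  define Lim where "Lim = (\<Prod>k\<in>S. p k ^ (mg_nk H1 k + mg_nk H2 k)) * (1 / \<mu>) ^ (mg_e H1 + mg_e H2) *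
         (2 * real (mg_e H1) * real (mg_e H2) / \<mu> - (\<Sum>k\<in>S. real (mg_nk H1 k) * real (mg_nk H2 k) / p k))"
  have D: "(\<lambda>n. real n * X n * real n ^ (mg_e H1 + mg_e H2) / real n ^ ((\<Sum>k\<in>S. mg_nk H1 k) + (\<Sum>k\<in>S. mg_nk H2 k))) \<longlonglongrightarrow> Lim"
    unfolding X_def Lim_def by (rule Pabs_diff[OF S])
  have "eventually (\<lambda>n. real n * X n * real n ^ (mg_e H1 + mg_e H2) / real n ^ ((\<Sum>k\<in>S. mg_nk H1 k) + (\<Sum>k\<in>S. mg_nk H2 k))
       = X n / real n) sequentially"
    using eventually_gt_at_top[of 0]
  proof eventually_elim
    case (elim n)
    have "real n ^ ((\<Sum>k\<in>S. mg_nk H1 k) + (\<Sum>k\<in>S. mg_nk H2 k)) = real n ^ (mg_e H1 + mg_e H2) * (real n * real n)"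
      unfolding V1 V2 by (simp add: power_add)
    then show ?case using elim by (simp add: field_simps)
  qed
  from Lim_transform_eventually[OF D this]
  have XL: "(\<lambda>n. X n / real n) \<longlonglongrightarrow> Lim" .
  have L: "(\<lambda>n. Fct H1 * Fct H2 / real (mg_aut H1 * mg_aut H2) * X n / real n)
      \<longlonglongrightarrow> Fct H1 * Fct H2 / real (mg_aut H1 * mg_aut H2) * Lim"
    using tendsto_mult[OF tendsto_const XL, of "Fct H1 * Fct H2 / real (mg_aut H1 * mg_aut H2)"] by simp
  have PP1: "PP p H1 = (\<Prod>k\<in>S. p k ^ mg_nk H1 k)" using prod_nk_sup[OF S S1 fV1] by simp
  have PP2: "PP p H2 = (\<Prod>k\<in>S. p k ^ mg_nk H2 k)" using prod_nk_sup[OF S S2 fV2] by simp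
  have sumeq: "(\<Sum>k\<in>mg_deg H1 ` verts H1. real (mg_nk H1 k) * real (mg_nk H2 k) / p k)
      = (\<Sum>k\<in>S. real (mg_nk H1 k) * real (mg_nk H2 k) / p k)"
  proof (rule sum.mono_neutral_left[OF S S1])
    show "\<forall>i\<in>S - mg_deg H1 ` verts H1. real (mg_nk H1 i) * real (mg_nk H2 i) / p i = 0"
      using mg_nk_zero[of _ H1] by auto
  qed
  have "Fct H1 * Fct H2 / real (mg_aut H1 * mg_aut H2) * Lim
      = lam p \<mu> H1 * lam p \<mu> H2 * (2 * real (mg_e H1) * real (mg_e H2) / \<mu>
          - (\<Sum>k\<in>mg_deg H1 ` verts H1. real (mg_nk H1 k) * real (mg_nk H2 k) / p k))"
    unfolding lam_alt Lim_def sumeq PP1 PP2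
    by (simp add: power_add prod.distrib field_simps)
  then show ?thesis using L by simp
qed

lemma cov_noniso:
  fixes H1 :: "('c, 'e) mgraph" and H2 :: "('f, 'g) mgraph"
  assumes t1: "mg_tree H1" and t2: "mg_tree H2" and ni: "\<not> mg_iso H1 H2"
  shows "(\<lambda>n. Cov d n (\<lambda>m. real (Ycount H1 d n m)) (\<lambda>m. real (Ycount H2 d n m)) - real n * sigma p \<mu> H1 H2)
     \<in> o(\<lambda>n. real n)"
proof -
  have wf1: "mg_wf H1" and c1: "mg_connected H1" using t1 by (auto simp: mg_tree_def)
  have wf2: "mg_wf H2" and c2: "mg_connected H2" using t2 by (auto simp: mg_tree_def)
  define H1' :: "('c + 'f, 'e + 'g) mgraph" where "H1' = relab Inl Inl projl H1"
  define H2' :: "('c + 'f, 'e + 'g) mgraph" where "H2' = relab Inr Inr projr H2"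
  have wf1': "mg_wf H1'" and i1: "(restrict Inl (verts H1), restrict Inl (halfs H1)) \<in> isoset H1 H1'"
    unfolding H1'_def by (rule relab_props[OF wf1]; simp)+
  have wf2': "mg_wf H2'" and i2: "(restrict Inr (verts H2), restrict Inr (halfs H2)) \<in> isoset H2 H2'"
    unfolding H2'_def by (rule relab_props[OF wf2]; simp)+
  have iso1: "mg_iso H1 H1'" using i1 mg_iso_isoset[OF wf1] by blast
  have iso2: "mg_iso H2 H2'" using i2 mg_iso_isoset[OF wf2] by blast
  have c1': "mg_connected H1'" by (rule iso_connected[OF wf1 wf1' i1 c1])
  have c2': "mg_connected H2'" by (rule iso_connected[OF wf2 wf2' i2 c2])
  have ni1: "\<not> mg_iso H1' H2'"
  proof
    assume a: "mg_iso H1' H2'"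
    have "mg_iso H2' H2" by (rule mg_iso_sym[OF wf2 wf2' iso2])
    then have "mg_iso H1' H2" using mg_iso_trans[OF wf1' a] by blast
    then have "mg_iso H1 H2" using mg_iso_trans[OF wf1 iso1] by blast
    then show False using ni by simp
  qed
  have ni2: "\<not> mg_iso H2' H1'" using ni1 mg_iso_sym[OF wf2' wf1'] by blast
  define S where "S = mg_deg H1 ` verts H1 \<union> mg_deg H2 ` verts H2"
  have S: "finite S" using wfD(1)[OF wf1] wfD(1)[OF wf2] by (simp add: S_def)
  have S1: "mg_deg H1 ` verts H1 \<subseteq> S" and S2: "mg_deg H2 ` verts H2 \<subseteq> S" by (auto simp: S_def)
  have S1': "mg_deg H1' ` verts H1' \<subseteq> S" using S1 iso_degs[OF wf1 wf1' i1] by simp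
  have S2': "mg_deg H2' ` verts H2' \<subseteq> S" using S2 iso_degs[OF wf2 wf2' i2] by simp
  define X where "X \<equiv> \<lambda>n. Pabs d n S (\<lambda>k. mg_nk H1 k + mg_nk H2 k) (mg_e H1 + mg_e H2)
                  - Pabs d n S (mg_nk H1) (mg_e H1) * Pabs d n S (mg_nk H2) (mg_e H2)"
  have CovX: "Cov d n (\<lambda>m. real (Ycount H1 d n m)) (\<lambda>m. real (Ycount H2 d n m))
      = Fct H1 * Fct H2 / real (mg_aut H1 * mg_aut H2) * X n" if n: "n \<ge> 1" for n
  proof -
    have ev: "even (\<Sum>i<n. d n i)" by (rule even_sum[OF n])
    have E1: "Exp d n (\<lambda>m. real (Ycount H1 d n m)) = Fct H1 * Pabs d n S (mg_nk H1) (mg_e H1) / real (mg_aut H1)"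
      by (rule single_exact[where d = d and n = n, OF wf1 c1 ev S S1])
    have E2: "Exp d n (\<lambda>m. real (Ycount H2 d n m)) = Fct H2 * Pabs d n S (mg_nk H2) (mg_e H2) / real (mg_aut H2)"
      by (rule single_exact[where d = d and n = n, OF wf2 c2 ev S S2])
    have "Exp d n (\<lambda>m. real (Ycount H1 d n m) * real (Ycount H2 d n m))
        = Exp d n (\<lambda>m. real (Ycount H1' d n m) * real (Ycount H2' d n m))"
      by (rule Exp_cong_inv[where d = d and n = n, OF ev]) (simp add: iso_Ycount[OF wf1 wf1' iso1] iso_Ycount[OF wf2 wf2' iso2])
    also have "\<dots> = Fct H1' * Fct H2' * Pabs d n S (\<lambda>k. mg_nk H1' k + mg_nk H2' k) (mg_e H1' + mg_e H2')
        / real (mg_aut H1' * mg_aut H2')"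
      by (rule pair_exact[where d = d and n = n, OF wf1' c1' wf2' c2' ni1 ni2 ev S S1' S2'])
    also have "\<dots> = Fct H1 * Fct H2 * Pabs d n S (\<lambda>k. mg_nk H1 k + mg_nk H2 k) (mg_e H1 + mg_e H2)
        / real (mg_aut H1 * mg_aut H2)"
    proof -
      have F1: "Fct H1' = Fct H1" unfolding Fct_def by (rule iso_prod[OF wf1 wf1' i1])
      have F2: "Fct H2' = Fct H2" unfolding Fct_def by (rule iso_prod[OF wf2 wf2' i2])
      have N1: "mg_nk H1' = mg_nk H1" by (rule ext) (rule iso_nk[OF wf1 wf1' i1])
      have N2: "mg_nk H2' = mg_nk H2" by (rule ext) (rule iso_nk[OF wf2 wf2' i2])
      have A1: "mg_aut H1' = mg_aut H1" using mg_aut_iso[OF wf1 wf1' iso1] by simp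
      have A2: "mg_aut H2' = mg_aut H2" using mg_aut_iso[OF wf2 wf2' iso2] by simp
      show ?thesis by (simp only: F1 F2 N1 N2 A1 A2 iso_e[OF wf1 wf1' i1] iso_e[OF wf2 wf2' i2])
    qed
    finally have E12: "Exp d n (\<lambda>m. real (Ycount H1 d n m) * real (Ycount H2 d n m))
        = Fct H1 * Fct H2 * Pabs d n S (\<lambda>k. mg_nk H1 k + mg_nk H2 k) (mg_e H1 + mg_e H2)
        / real (mg_aut H1 * mg_aut H2)" .
    have ap: "real (mg_aut H1) > 0" "real (mg_aut H2) > 0" using mg_aut_pos[OF wf1] mg_aut_pos[OF wf2] by simp_all
    show ?thesis unfolding Cov_def E1 E2 E12 X_def using ap by (simp add: field_simps)
  qed
  have core: "(\<lambda>n. Fct H1 * Fct H2 / real (mg_aut H1 * mg_aut H2) * X n / real n)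
     \<longlonglongrightarrow> lam p \<mu> H1 * lam p \<mu> H2 * (2 * real (mg_e H1) * real (mg_e H2) / \<mu>
          - (\<Sum>k\<in>mg_deg H1 ` verts H1. real (mg_nk H1 k) * real (mg_nk H2 k) / p k))"
    unfolding X_def by (rule cov_core[OF t1 t2 S S1 S2])
  have sig: "sigma p \<mu> H1 H2 = lam p \<mu> H1 * lam p \<mu> H2 * (2 * real (mg_e H1) * real (mg_e H2) / \<mu>
          - (\<Sum>k\<in>mg_deg H1 ` verts H1. real (mg_nk H1 k) * real (mg_nk H2 k) / p k))"
    using ni by (simp add: sigma_def)
  show ?thesis
  proof (rule smalloI_tendsto)
    have "(\<lambda>n. Fct H1 * Fct H2 / real (mg_aut H1 * mg_aut H2) * X n / real n - sigma p \<mu> H1 H2) \<longlonglongrightarrow> 0"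
      using tendsto_diff[OF core tendsto_const[of "sigma p \<mu> H1 H2"]] unfolding sig by simp
    moreover have "eventually (\<lambda>n. Fct H1 * Fct H2 / real (mg_aut H1 * mg_aut H2) * X n / real n - sigma p \<mu> H1 H2
        = (Cov d n (\<lambda>m. real (Ycount H1 d n m)) (\<lambda>m. real (Ycount H2 d n m)) - real n * sigma p \<mu> H1 H2) / real n) sequentially"
      using eventually_ge_at_top[of 1] by eventually_elim (simp add: CovX field_simps)
    ultimately show "(\<lambda>n. (Cov d n (\<lambda>m. real (Ycount H1 d n m)) (\<lambda>m. real (Ycount H2 d n m)) - real n * sigma p \<mu> H1 H2) / real n) \<longlonglongrightarrow> 0"
      by (rule Lim_transform_eventually)
    show "eventually (\<lambda>n. real n \<noteq> 0) sequentially"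
      using eventually_gt_at_top[of 0] by eventually_elim simp
  qed
qed

lemma cov_iso:
  fixes H1 :: "('c, 'e) mgraph" and H2 :: "('f, 'g) mgraph"
  assumes t1: "mg_tree H1" and t2: "mg_tree H2" and iso12: "mg_iso H1 H2"
  shows "(\<lambda>n. Cov d n (\<lambda>m. real (Ycount H1 d n m)) (\<lambda>m. real (Ycount H2 d n m)) - real n * sigma p \<mu> H1 H2)
     \<in> o(\<lambda>n. real n)"
proof -
  have wf1: "mg_wf H1" and c1: "mg_connected H1" using t1 by (auto simp: mg_tree_def)
  have wf2: "mg_wf H2" and c2: "mg_connected H2" using t2 by (auto simp: mg_tree_def)
  obtain \<psi> \<tau> where i: "(\<psi>, \<tau>) \<in> isoset H1 H2" using iso_isoset_ex[OF wf1 iso12] by blast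
  have e2: "mg_e H2 = mg_e H1" by (rule iso_e[OF wf1 wf2 i])
  have nk2: "mg_nk H2 = mg_nk H1" using iso_nk[OF wf1 wf2 i] by (simp add: fun_eq_iff)
  have lam2: "lam p \<mu> H2 = lam p \<mu> H1" by (rule iso_lam[OF wf1 wf2 i])
  define S where "S = mg_deg H1 ` verts H1"
  have S: "finite S" using wfD(1)[OF wf1] by (simp add: S_def)
  have S1: "mg_deg H1 ` verts H1 \<subseteq> S" by (simp add: S_def)
  define X where "X \<equiv> \<lambda>n. Pabs d n S (\<lambda>k. mg_nk H1 k + mg_nk H1 k) (mg_e H1 + mg_e H1)
                  - Pabs d n S (mg_nk H1) (mg_e H1) * Pabs d n S (mg_nk H1) (mg_e H1)"
  have CovX: "Cov d n (\<lambda>m. real (Ycount H1 d n m)) (\<lambda>m. real (Ycount H2 d n m))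
      = Fct H1 * Fct H1 / real (mg_aut H1 * mg_aut H1) * X n + Exp d n (\<lambda>m. real (Ycount H1 d n m))" if n: "n \<ge> 1" for n
  proof -
    have ev: "even (\<Sum>i<n. d n i)" by (rule even_sum[OF n])
    have E1: "Exp d n (\<lambda>m. real (Ycount H1 d n m)) = Fct H1 * Pabs d n S (mg_nk H1) (mg_e H1) / real (mg_aut H1)"
      by (rule single_exact[where d = d and n = n, OF wf1 c1 ev S S1])
    have E2: "Exp d n (\<lambda>m. real (Ycount H2 d n m)) = Exp d n (\<lambda>m. real (Ycount H1 d n m))"
      by (rule Exp_cong_inv[where d = d and n = n, OF ev]) (simp add: iso_Ycount[OF wf1 wf2 iso12])
    have "Exp d n (\<lambda>m. real (Ycount H1 d n m) * real (Ycount H2 d n m))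
        = Exp d n (\<lambda>m. ffall (real (Ycount H1 d n m)) 2 + real (Ycount H1 d n m))"
      by (rule Exp_cong_inv[where d = d and n = n, OF ev]) (simp add: iso_Ycount[OF wf1 wf2 iso12] ffall_2)
    also have "\<dots> = Exp d n (\<lambda>m. ffall (real (Ycount H1 d n m)) 2) + Exp d n (\<lambda>m. real (Ycount H1 d n m))"
      by (rule Exp_add[where d = d and n = n, OF ev])
    also have "Exp d n (\<lambda>m. ffall (real (Ycount H1 d n m)) 2) =
        Fct H1 * Fct H1 * Pabs d n S (\<lambda>k. mg_nk H1 k + mg_nk H1 k) (mg_e H1 + mg_e H1) / real (mg_aut H1 * mg_aut H1)"
      by (rule sq_exact[where d = d and n = n, OF wf1 c1 ev S S1])
    finally have E12: "Exp d n (\<lambda>m. real (Ycount H1 d n m) * real (Ycount H2 d n m))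
        = Fct H1 * Fct H1 * Pabs d n S (\<lambda>k. mg_nk H1 k + mg_nk H1 k) (mg_e H1 + mg_e H1) / real (mg_aut H1 * mg_aut H1)
          + Exp d n (\<lambda>m. real (Ycount H1 d n m))" .
    have ap: "real (mg_aut H1) > 0" using mg_aut_pos[OF wf1] by simp
    show ?thesis unfolding Cov_def E12 E2 X_def using ap by (simp add: E1 field_simps)
  qed
  have core: "(\<lambda>n. Fct H1 * Fct H1 / real (mg_aut H1 * mg_aut H1) * X n / real n)
     \<longlonglongrightarrow> lam p \<mu> H1 * lam p \<mu> H1 * (2 * real (mg_e H1) * real (mg_e H1) / \<mu>
          - (\<Sum>k\<in>mg_deg H1 ` verts H1. real (mg_nk H1 k) * real (mg_nk H1 k) / p k))"
    unfolding X_def by (rule cov_core[OF t1 t1 S S1 S1])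
  have sig: "sigma p \<mu> H1 H2 = lam p \<mu> H1 + lam p \<mu> H1 * lam p \<mu> H1 * (2 * real (mg_e H1) * real (mg_e H1) / \<mu>
          - (\<Sum>k\<in>mg_deg H1 ` verts H1. real (mg_nk H1 k) * real (mg_nk H1 k) / p k))"
    using iso12 by (simp add: sigma_def lam2 e2 nk2)
  show ?thesis
  proof (rule smalloI_tendsto)
    have "(\<lambda>n. Fct H1 * Fct H1 / real (mg_aut H1 * mg_aut H1) * X n / real n
        + Exp d n (\<lambda>m. real (Ycount H1 d n m)) / real n - sigma p \<mu> H1 H2) \<longlonglongrightarrow> 0"
      using tendsto_diff[OF tendsto_add[OF core tree_lim[OF t1]] tendsto_const[of "sigma p \<mu> H1 H2"]]
      unfolding sig by (simp add: algebra_simps)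
    moreover have "eventually (\<lambda>n. Fct H1 * Fct H1 / real (mg_aut H1 * mg_aut H1) * X n / real n
        + Exp d n (\<lambda>m. real (Ycount H1 d n m)) / real n - sigma p \<mu> H1 H2
        = (Cov d n (\<lambda>m. real (Ycount H1 d n m)) (\<lambda>m. real (Ycount H2 d n m)) - real n * sigma p \<mu> H1 H2) / real n) sequentially"
      using eventually_ge_at_top[of 1] by eventually_elim (simp add: CovX field_simps)
    ultimately show "(\<lambda>n. (Cov d n (\<lambda>m. real (Ycount H1 d n m)) (\<lambda>m. real (Ycount H2 d n m)) - real n * sigma p \<mu> H1 H2) / real n) \<longlonglongrightarrow> 0"
      by (rule Lim_transform_eventually)
    show "eventually (\<lambda>n. real n \<noteq> 0) sequentially"
      using eventually_gt_at_top[of 0] by eventually_elim simp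
  qed
qed

end

theorem lemma7p1:
  fixes d :: "nat \<Rightarrow> nat \<Rightarrow> nat" and p :: "nat \<Rightarrow> real" and \<mu> :: real
  assumes even_sum: "\<And>n. n \<ge> 1 \<Longrightarrow> even (\<Sum>i<n. d n i)"
    and p_nonneg: "\<And>k. p k \<ge> 0"
    and p_sum: "p sums 1"
    and A1_lim: "\<And>k. (\<lambda>n. real (nk d n k) / real n) \<longlonglongrightarrow> p k"
    and mu_summable: "summable (\<lambda>k. real k * p k)"
    and mu_def: "\<mu> = (\<Sum>k. real k * p k)"
    and mu_pos: "\<mu> > 0"
    and A2: "(\<lambda>n. (\<Sum>i<n. real (d n i)) / real n) \<longlonglongrightarrow> \<mu>"
  shows
   "(\<forall>H :: ('a, 'b) mgraph. mg_tree H \<longrightarrow>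
       (\<lambda>n. Exp d n (\<lambda>m. real (Ycount H d n m)) - real n * lam p \<mu> H) \<in> o(\<lambda>n. real n))
  \<and> (\<forall>(H1 :: ('c, 'e) mgraph) (H2 :: ('f, 'g) mgraph). mg_tree H1 \<and> mg_tree H2 \<longrightarrow>
       (\<lambda>n. Cov d n (\<lambda>m. real (Ycount H1 d n m)) (\<lambda>m. real (Ycount H2 d n m))
             - real n * sigma p \<mu> H1 H2) \<in> o(\<lambda>n. real n))
  \<and> (\<forall>H :: ('i, 'j) mgraph. mg_unicyclic H \<longrightarrow>
       (\<lambda>n. Exp d n (\<lambda>m. real (Ycount H d n m))) \<longlonglongrightarrow> lam p \<mu> H)
  \<and> (\<forall>(Hs :: ('k, 'l) mgraph list) (rs :: nat list).
       length rs = length Hs \<and> (\<forall>H\<in>set Hs. mg_unicyclic H) \<and>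
       (\<forall>i<length Hs. \<forall>j<length Hs. i \<noteq> j \<longrightarrow> \<not> mg_iso (Hs ! i) (Hs ! j)) \<longrightarrow>
       (\<lambda>n. Exp d n (\<lambda>m. \<Prod>i<length Hs. ffall (real (Ycount (Hs ! i) d n m)) (rs ! i)))
         \<longlonglongrightarrow> (\<Prod>i<length Hs. lam p \<mu> (Hs ! i) ^ (rs ! i)))
  \<and> (\<forall>H :: ('q, 'r) mgraph. mg_wf H \<and> mg_connected H \<and> mg_e H > mg_v H \<longrightarrow>
       (\<lambda>n. Exp d n (\<lambda>m. real (Ycount H d n m))) \<longlonglongrightarrow> 0)"
  proof -
  interpret A: asym d p \<mu>
    by unfold_locales (use even_sum A1_lim mu_pos A2 in auto)
  have c1: "\<forall>H :: ('a, 'b) mgraph. mg_tree H \<longrightarrow>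
       (\<lambda>n. Exp d n (\<lambda>m. real (Ycount H d n m)) - real n * lam p \<mu> H) \<in> o(\<lambda>n. real n)"
    using A.part_i by blast
  have c2: "\<forall>(H1 :: ('c, 'e) mgraph) (H2 :: ('f, 'g) mgraph). mg_tree H1 \<and> mg_tree H2 \<longrightarrow>
       (\<lambda>n. Cov d n (\<lambda>m. real (Ycount H1 d n m)) (\<lambda>m. real (Ycount H2 d n m))
             - real n * sigma p \<mu> H1 H2) \<in> o(\<lambda>n. real n)"
  proof (intro allI impI)
    fix H1 :: "('c, 'e) mgraph" and H2 :: "('f, 'g) mgraph"
    assume t: "mg_tree H1 \<and> mg_tree H2"
    show "(\<lambda>n. Cov d n (\<lambda>m. real (Ycount H1 d n m)) (\<lambda>m. real (Ycount H2 d n m))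
             - real n * sigma p \<mu> H1 H2) \<in> o(\<lambda>n. real n)"
    proof (cases "mg_iso H1 H2")
      case True then show ?thesis using A.cov_iso t by blast
    next
      case False then show ?thesis using A.cov_noniso t by blast
    qed
  qed
  have c3: "\<forall>H :: ('i, 'j) mgraph. mg_unicyclic H \<longrightarrow>
       (\<lambda>n. Exp d n (\<lambda>m. real (Ycount H d n m))) \<longlonglongrightarrow> lam p \<mu> H"
    using A.part_iii_a by blast
  have c4: "\<forall>(Hs :: ('k, 'l) mgraph list) (rs :: nat list).
       length rs = length Hs \<and> (\<forall>H\<in>set Hs. mg_unicyclic H) \<and>
       (\<forall>i<length Hs. \<forall>j<length Hs. i \<noteq> j \<longrightarrow> \<not> mg_iso (Hs ! i) (Hs ! j)) \<longrightarrow>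
       (\<lambda>n. Exp d n (\<lambda>m. \<Prod>i<length Hs. ffall (real (Ycount (Hs ! i) d n m)) (rs ! i)))
         \<longlonglongrightarrow> (\<Prod>i<length Hs. lam p \<mu> (Hs ! i) ^ (rs ! i))"
    using A.part_iii_b by blast
  have c5: "\<forall>H :: ('q, 'r) mgraph. mg_wf H \<and> mg_connected H \<and> mg_e H > mg_v H \<longrightarrow>
       (\<lambda>n. Exp d n (\<lambda>m. real (Ycount H d n m))) \<longlonglongrightarrow> 0"
    using A.part_iv by blast
  show ?thesis using c1 c2 c3 c4 c5 by (intro conjI)
qed

end
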